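(* Let $G=r_{\max}+2R$. The iterates $\theta_1,\dots,\theta_T$ of the MLMC-AdaGrad projected TD algorithm satisfy \[ \mathbb{E}\big[\|V_{\theta^*}-V_{\bar\theta_T}\|_M^2\big]\le\tilde{\mathcal{O}}\Big(\frac{GR\sqrt{\tau_{\mathrm{mix}}}}{(1-\gamma)\sqrt T}\Big),\qquad \bar\theta_T=\frac1T\sum_{t=1}^T\theta_t. \]
   Context: Consider a Markov reward process on a finite state space $\mathcal{S}$ with transition kernel $\mathcal{P}^\pi$, reward function $\mathcal{R}^\pi(s,s')\in[-r_{\max},r_{\max}]$ and discount $\gamma\in[0,1)$; its state chain is ergodic with unique stationary distribution $\mu$. Observed samples are triplets $z=(s,r,s')$ with $r=\mathcal{R}^\pi(s,s')$, $s'\sim\mathcal{P}^\pi(\cdot\mid s)$, forming a Markov chain $(z_k)_{k\ge1}$; $\tau_{\mathrm{mix}}$ is its mixing time: with $\|P-Q\|_{TV}=\sup_A|P(A)-Q(A)|$, $P^s(z,\cdot)$ the law of $z_{s+1}$ given $z_1=z$ and $d_{\mathrm{mix}}(s)=\sup_z\|P^s(z,\cdot)-\nu\|_{TV}$ ($\nu$ the stationary law), $\tau_{\mathrm{mix}}=\inf\{s:d_{\mathrm{mix}}(s)\le1/4\}$. Features $\phi:\mathcal{S}\to\mathbb{R}^d$ satisfy $\|\phi(s)\|\le1$; $V_\theta(s)=\phi(s)^\top\theta$; $M=\mathrm{diag}(\mu(s))_{s\in\mathcal{S}}$ and $\|V\|_M^2=\sum_s\mu(s)V(s)^2$. Semi-gradient: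 $g(\theta;z)=(r+\gamma\phi(s')^\top\theta-\phi(s)^\top\theta)\phi(s)$, and $\bar g(\theta)=\mathbb{E}_{s\sim\mu,\,s'\sim\mathcal{P}^\pi(\cdot|s)}[(\mathcal{R}^\pi(s,s')+\gamma\phi(s')^\top\theta-\phi(s)^\top\theta)\phi(s)]$. $\theta^*$ satisfies $\bar g(\theta^* )=0$, and $R>0$ satisfies $\|\theta^*\|\le R$; $\mathcal{K}=\{\theta:\|\theta\|\le R\}$. Algorithm (inputs $T$, $\theta_1\in\mathcal{K}$): for $t=1,\dots,T$: draw $J_t$ with $\mathbb{P}(J_t=j)=2^{-j}$, $j\ge1$, independently of the chain and previous draws; $N_t=2^{J_t}$; iteration $t$ uses the next $N_t$ samples $z_t^{(i)}=z_{S_{t-1}+i}$, $S_{t-1}=N_1+\dots+N_{t-1}$; $g_t^j=2^{-j}\sum_{i=1}^{2^j}g(\theta_t;z_t^{(i)})$ for $j\ge0$; $g_t=g_t^0+2^{J_t}(g_t^{J_t}-g_t^{J_t-1})$ if $2^{J_t}\le T$, else $g_t=g_t^0$; $\eta_t=\sqrt2R/\sqrt{\sum_{k=1}^t\|g_k\|^2}$; $\theta_{t+1}=\Pi_{\mathcal{K}}(\theta_t+\eta_tg_t)$ (Euclidean projection). The notation $\tilde{\mathcal{O}}(X)$ means a quantity bounded by $c\cdot X$ times a factor polylogarithmic in $T$ and $\tau_{\mathrm{mix}}$, with $c$ an absolute constant. *)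

theory Defs
  imports "HOL-Probability.Probability"
begin

type_synonym sample = "nat \<times> real \<times> nat"  (* triplet z = (s, r, s') *)

primrec stepn :: "(nat \<Rightarrow> nat pmf) \<Rightarrow> nat \<Rightarrow> nat \<Rightarrow> nat pmf" where
  "stepn P 0 s = return_pmf s"
| "stepn P (Suc n) s = bind_pmf (stepn P n s) P"

definition irreducible_on :: "nat set \<Rightarrow> (nat \<Rightarrow> nat pmf) \<Rightarrow> bool" where
  "irreducible_on S P \<longleftrightarrow> (\<forall>s\<in>S. \<forall>t\<in>S. \<exists>n. t \<in> set_pmf (stepn P n s))"

definition aperiodic_on :: "nat set \<Rightarrow> (nat \<Rightarrow> nat pmf) \<Rightarrow> bool" where
  "aperiodic_on S P \<longleftrightarrow> (\<forall>s\<in>S. Gcd {n. 0 < n \<and> s \<in> set_pmf (stepn P n s)} = 1)"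

definition ergodic_on :: "nat set \<Rightarrow> (nat \<Rightarrow> nat pmf) \<Rightarrow> bool" where
  "ergodic_on S P \<longleftrightarrow> irreducible_on S P \<and> aperiodic_on S P"

definition stationary_on :: "nat set \<Rightarrow> (nat \<Rightarrow> nat pmf) \<Rightarrow> nat pmf \<Rightarrow> bool" where
  "stationary_on S P \<mu> \<longleftrightarrow> set_pmf \<mu> \<subseteq> S \<and> bind_pmf \<mu> P = \<mu>"

definition zstep :: "(nat \<Rightarrow> nat pmf) \<Rightarrow> (nat \<Rightarrow> nat \<Rightarrow> real) \<Rightarrow> sample \<Rightarrow> sample pmf" where
  "zstep P Rw z = (case z of (s, r, s') \<Rightarrow> map_pmf (\<lambda>s''. (s', Rw s' s'', s'')) (P s'))"

primrec zstepn :: "(nat \<Rightarrow> nat pmf) \<Rightarrow> (nat \<Rightarrow> nat \<Rightarrow> real) \<Rightarrow> nat \<Rightarrow> sample \<Rightarrow> sample pmf" where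
  "zstepn P Rw 0 z = return_pmf z"
| "zstepn P Rw (Suc n) z = bind_pmf (zstepn P Rw n z) (zstep P Rw)"

definition zstat :: "(nat \<Rightarrow> nat pmf) \<Rightarrow> (nat \<Rightarrow> nat \<Rightarrow> real) \<Rightarrow> nat pmf \<Rightarrow> sample pmf" where
  "zstat P Rw \<mu> = bind_pmf \<mu> (\<lambda>s. map_pmf (\<lambda>s'. (s, Rw s s', s')) (P s))"

definition tv_dist :: "'b pmf \<Rightarrow> 'b pmf \<Rightarrow> real" where
  "tv_dist p q = (SUP A. \<bar>measure_pmf.prob p A - measure_pmf.prob q A\<bar>)"

definition dmix :: "nat set \<Rightarrow> (nat \<Rightarrow> nat pmf) \<Rightarrow> (nat \<Rightarrow> nat \<Rightarrow> real) \<Rightarrow> nat pmf \<Rightarrow> nat \<Rightarrow> real" where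
  "dmix S P Rw \<mu> n = (SUP z \<in> S \<times> UNIV \<times> S. tv_dist (zstepn P Rw n z) (zstat P Rw \<mu>))"

definition tau_mix :: "nat set \<Rightarrow> (nat \<Rightarrow> nat pmf) \<Rightarrow> (nat \<Rightarrow> nat \<Rightarrow> real) \<Rightarrow> nat pmf \<Rightarrow> nat" where
  "tau_mix S P Rw \<mu> = Inf {n. dmix S P Rw \<mu> n \<le> 1/4}"

section \<open>Vectors of R^d, represented as nat \<Rightarrow> real vanishing from index d on\<close>

definition vinner :: "nat \<Rightarrow> (nat \<Rightarrow> real) \<Rightarrow> (nat \<Rightarrow> real) \<Rightarrow> real" where
  "vinner d x y = (\<Sum>i<d. x i * y i)"

definition vnorm :: "nat \<Rightarrow> (nat \<Rightarrow> real) \<Rightarrow> real" where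
  "vnorm d x = sqrt (vinner d x x)"

definition inRd :: "nat \<Rightarrow> (nat \<Rightarrow> real) \<Rightarrow> bool" where
  "inRd d x \<longleftrightarrow> (\<forall>i\<ge>d. x i = 0)"

definition Kball :: "nat \<Rightarrow> real \<Rightarrow> (nat \<Rightarrow> real) set" where
  "Kball d R = {x. inRd d x \<and> vnorm d x \<le> R}"

definition proj :: "nat \<Rightarrow> real \<Rightarrow> (nat \<Rightarrow> real) \<Rightarrow> (nat \<Rightarrow> real)" where
  "proj d R x = (THE y. y \<in> Kball d R \<and>
      (\<forall>y' \<in> Kball d R. vnorm d (\<lambda>i. y i - x i) \<le> vnorm d (\<lambda>i. y' i - x i)))"

definition Vf :: "nat \<Rightarrow> (nat \<Rightarrow> nat \<Rightarrow> real) \<Rightarrow> (nat \<Rightarrow> real) \<Rightarrow> nat \<Rightarrow> real" where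
  "Vf d \<phi> \<theta> s = vinner d (\<phi> s) \<theta>"

definition sgrad :: "nat \<Rightarrow> (nat \<Rightarrow> nat \<Rightarrow> real) \<Rightarrow> real \<Rightarrow> (nat \<Rightarrow> real) \<Rightarrow> sample \<Rightarrow> (nat \<Rightarrow> real)" where
  "sgrad d \<phi> \<gamma> \<theta> z = (case z of (s, r, s') \<Rightarrow>
      (\<lambda>i. (r + \<gamma> * Vf d \<phi> \<theta> s' - Vf d \<phi> \<theta> s) * \<phi> s i))"

definition gbar :: "nat set \<Rightarrow> (nat \<Rightarrow> nat pmf) \<Rightarrow> (nat \<Rightarrow> nat \<Rightarrow> real) \<Rightarrow> nat pmf \<Rightarrow> nat \<Rightarrow>
    (nat \<Rightarrow> nat \<Rightarrow> real) \<Rightarrow> real \<Rightarrow> (nat \<Rightarrow> real) \<Rightarrow> (nat \<Rightarrow> real)" where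
  "gbar S P Rw \<mu> d \<phi> \<gamma> \<theta> = (\<lambda>i. \<Sum>s\<in>S. \<Sum>s'\<in>S. pmf \<mu> s * pmf (P s) s' *
      ((Rw s s' + \<gamma> * Vf d \<phi> \<theta> s' - Vf d \<phi> \<theta> s) * \<phi> s i))"

definition errM :: "nat set \<Rightarrow> nat pmf \<Rightarrow> nat \<Rightarrow> (nat \<Rightarrow> nat \<Rightarrow> real) \<Rightarrow> (nat \<Rightarrow> real) \<Rightarrow> (nat \<Rightarrow> real) \<Rightarrow> real" where
  "errM S \<mu> d \<phi> \<theta>1 \<theta>2 = (\<Sum>s\<in>S. pmf \<mu> s * (Vf d \<phi> \<theta>1 s - Vf d \<phi> \<theta>2 s)^2)"

primrec samples :: "(nat \<Rightarrow> nat pmf) \<Rightarrow> (nat \<Rightarrow> nat \<Rightarrow> real) \<Rightarrow> nat \<Rightarrow> nat \<Rightarrow> (sample list \<times> nat) pmf" where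
  "samples P Rw 0 s = return_pmf ([], s)"
| "samples P Rw (Suc n) s = bind_pmf (P s) (\<lambda>s'.
      map_pmf (\<lambda>(zs, e). ((s, Rw s s', s') # zs, e)) (samples P Rw n s'))"

definition gavg :: "nat \<Rightarrow> (nat \<Rightarrow> nat \<Rightarrow> real) \<Rightarrow> real \<Rightarrow> (nat \<Rightarrow> real) \<Rightarrow> sample list \<Rightarrow> nat \<Rightarrow> (nat \<Rightarrow> real)" where
  "gavg d \<phi> \<gamma> \<theta> zs j = (\<lambda>i. (1 / 2^j) * (\<Sum>k<2^j. sgrad d \<phi> \<gamma> \<theta> (zs ! k) i))"

definition mlmc_grad :: "nat \<Rightarrow> nat \<Rightarrow> (nat \<Rightarrow> nat \<Rightarrow> real) \<Rightarrow> real \<Rightarrow> (nat \<Rightarrow> real) \<Rightarrow> sample list \<Rightarrow> nat \<Rightarrow> (nat \<Rightarrow> real)" where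
  "mlmc_grad T d \<phi> \<gamma> \<theta> zs J =
     (if 2^J \<le> T
      then (\<lambda>i. gavg d \<phi> \<gamma> \<theta> zs 0 i + 2^J * (gavg d \<phi> \<gamma> \<theta> zs J i - gavg d \<phi> \<gamma> \<theta> zs (J - 1) i))
      else gavg d \<phi> \<gamma> \<theta> zs 0)"

text \<open>algorithm state at the start of iteration t:
  (next chain state, theta_t, sum_{k<t} norm g_k ^2, sum_{k<t} theta_k)\<close>
type_synonym alg_state = "nat \<times> (nat \<Rightarrow> real) \<times> real \<times> (nat \<Rightarrow> real)"

definition alg_step :: "(nat \<Rightarrow> nat pmf) \<Rightarrow> (nat \<Rightarrow> nat \<Rightarrow> real) \<Rightarrow> nat \<Rightarrow> (nat \<Rightarrow> nat \<Rightarrow> real) \<Rightarrow> real \<Rightarrow>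
    real \<Rightarrow> nat \<Rightarrow> alg_state \<Rightarrow> alg_state pmf" where
  "alg_step P Rw d \<phi> \<gamma> R T st = (case st of (s, \<theta>, Q, acc) \<Rightarrow>
     bind_pmf (map_pmf Suc (geometric_pmf (1/2))) (\<lambda>J.
     map_pmf (\<lambda>(zs, s_next).
        let g = mlmc_grad T d \<phi> \<gamma> \<theta> zs J;
            Q' = Q + (vnorm d g)^2;
            \<eta> = sqrt 2 * R / sqrt Q'
        in (s_next, proj d R (\<lambda>i. \<theta> i + \<eta> * g i), Q', (\<lambda>i. acc i + \<theta> i)))
       (samples P Rw (2^J) s)))"

primrec alg_run :: "(nat \<Rightarrow> nat pmf) \<Rightarrow> (nat \<Rightarrow> nat \<Rightarrow> real) \<Rightarrow> nat \<Rightarrow> (nat \<Rightarrow> nat \<Rightarrow> real) \<Rightarrow> real \<Rightarrow>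
    real \<Rightarrow> nat \<Rightarrow> nat pmf \<Rightarrow> (nat \<Rightarrow> real) \<Rightarrow> nat \<Rightarrow> alg_state pmf" where
  "alg_run P Rw d \<phi> \<gamma> R T \<xi> \<theta>1 0 = map_pmf (\<lambda>s. (s, \<theta>1, 0, (\<lambda>i. 0))) \<xi>"
| "alg_run P Rw d \<phi> \<gamma> R T \<xi> \<theta>1 (Suc n) =
     bind_pmf (alg_run P Rw d \<phi> \<gamma> R T \<xi> \<theta>1 n) (alg_step P Rw d \<phi> \<gamma> R T)"

definition avg_iterate :: "(nat \<Rightarrow> nat pmf) \<Rightarrow> (nat \<Rightarrow> nat \<Rightarrow> real) \<Rightarrow> nat \<Rightarrow> (nat \<Rightarrow> nat \<Rightarrow> real) \<Rightarrow> real \<Rightarrow>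
    real \<Rightarrow> nat \<Rightarrow> nat pmf \<Rightarrow> (nat \<Rightarrow> real) \<Rightarrow> (nat \<Rightarrow> real) pmf" where
  "avg_iterate P Rw d \<phi> \<gamma> R T \<xi> \<theta>1 =
     map_pmf (\<lambda>(s, \<theta>, Q, acc). (\<lambda>i. acc i / real T)) (alg_run P Rw d \<phi> \<gamma> R T \<xi> \<theta>1 T)"

definition td_setting :: "nat set \<Rightarrow> (nat \<Rightarrow> nat pmf) \<Rightarrow> (nat \<Rightarrow> nat \<Rightarrow> real) \<Rightarrow> real \<Rightarrow> real \<Rightarrow>
    nat pmf \<Rightarrow> nat \<Rightarrow> (nat \<Rightarrow> nat \<Rightarrow> real) \<Rightarrow> real \<Rightarrow> (nat \<Rightarrow> real) \<Rightarrow> bool" where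
  "td_setting S P Rw rmax \<gamma> \<mu> d \<phi> R \<theta>s \<longleftrightarrow>
     finite S \<and> S \<noteq> {} \<and> (\<forall>s\<in>S. set_pmf (P s) \<subseteq> S)
   \<and> (\<forall>s\<in>S. \<forall>s'\<in>S. \<bar>Rw s s'\<bar> \<le> rmax)
   \<and> 0 \<le> \<gamma> \<and> \<gamma> < 1
   \<and> ergodic_on S P
   \<and> stationary_on S P \<mu> \<and> (\<forall>\<mu>'. stationary_on S P \<mu>' \<longrightarrow> \<mu>' = \<mu>)
   \<and> (\<forall>s\<in>S. inRd d (\<phi> s) \<and> vnorm d (\<phi> s) \<le> 1)
   \<and> inRd d \<theta>s \<and> gbar S P Rw \<mu> d \<phi> \<gamma> \<theta>s = (\<lambda>i. 0)
   \<and> 0 < R \<and> vnorm d \<theta>s \<le> R"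

end

theory Submission
  imports Defs
begin

lemma vinner_comm: "vinner d x y = vinner d y x"
  unfolding vinner_def by (simp add: mult.commute)

lemma vinner_add_left: "vinner d (\<lambda>i. x i + y i) z = vinner d x z + vinner d y z"
  unfolding vinner_def by (simp add: distrib_right sum.distrib)

lemma vinner_add_right: "vinner d z (\<lambda>i. x i + y i) = vinner d z x + vinner d z y"
  unfolding vinner_def by (simp add: distrib_left sum.distrib)

lemma vinner_diff_left: "vinner d (\<lambda>i. x i - y i) z = vinner d x z - vinner d y z"
  unfolding vinner_def by (simp add: left_diff_distrib sum_subtractf)

lemma vinner_diff_right: "vinner d z (\<lambda>i. x i - y i) = vinner d z x - vinner d z y"
  unfolding vinner_def by (simp add: right_diff_distrib sum_subtractf)

lemma vinner_scale_left: "vinner d (\<lambda>i. c * x i) z = c * vinner d x z"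
  unfolding vinner_def by (simp add: sum_distrib_left mult.assoc)

lemma vinner_scale_right: "vinner d z (\<lambda>i. c * x i) = c * vinner d z x"
  unfolding vinner_def by (simp add: sum_distrib_left mult.left_commute)

lemma vinner_zero_left[simp]: "vinner d (\<lambda>i. 0) z = 0"
  unfolding vinner_def by simp

lemma vinner_zero_right[simp]: "vinner d z (\<lambda>i. 0) = 0"
  unfolding vinner_def by simp

lemma vinner_sum_left: "vinner d (\<lambda>i. \<Sum>k\<in>A. f k i) y = (\<Sum>k\<in>A. vinner d (f k) y)"
  unfolding vinner_def by (simp add: sum_distrib_right sum.swap[of _ A])

lemma vinner_sum_right: "vinner d y (\<lambda>i. \<Sum>k\<in>A. f k i) = (\<Sum>k\<in>A. vinner d y (f k))"
  using vinner_sum_left[of d f A y] by (simp add: vinner_comm)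

lemma vinner_self_nonneg: "0 \<le> vinner d x x"
  unfolding vinner_def by (simp add: sum_nonneg)

lemma vnorm_nonneg: "0 \<le> vnorm d x"
  unfolding vnorm_def using vinner_self_nonneg by simp

lemma vnorm_sq: "(vnorm d x)^2 = vinner d x x"
  unfolding vnorm_def using vinner_self_nonneg by simp

lemma vnorm_L2: "vnorm d x = L2_set x {..<d}"
  unfolding vnorm_def vinner_def L2_set_def by (simp add: power2_eq_square)

lemma vinner_cs: "\<bar>vinner d x y\<bar> \<le> vnorm d x * vnorm d y"
proof -
  have "\<bar>vinner d x y\<bar> \<le> (\<Sum>i<d. \<bar>x i\<bar> * \<bar>y i\<bar>)"
    unfolding vinner_def by (rule order_trans[OF sum_abs]) (simp add: abs_mult)
  also have "\<dots> \<le> L2_set x {..<d} * L2_set y {..<d}" by (rule L2_set_mult_ineq)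
  finally show ?thesis by (simp add: vnorm_L2)
qed

lemma vinner_le: "vinner d x y \<le> vnorm d x * vnorm d y"
  using vinner_cs[of d x y] by linarith

lemma vnorm_triangle: "vnorm d (\<lambda>i. x i + y i) \<le> vnorm d x + vnorm d y"
  unfolding vnorm_L2 by (rule L2_set_triangle_ineq)

lemma vnorm_scale: "vnorm d (\<lambda>i. c * x i) = \<bar>c\<bar> * vnorm d x"
proof -
  have "vinner d (\<lambda>i. c * x i) (\<lambda>i. c * x i) = c^2 * vinner d x x"
    by (simp add: vinner_scale_left vinner_scale_right power2_eq_square)
  then show ?thesis unfolding vnorm_def by (simp add: real_sqrt_mult)
qed

lemma vnorm_commute: "vnorm d (\<lambda>i. x i - y i) = vnorm d (\<lambda>i. y i - x i)"
  unfolding vnorm_def vinner_def by (simp add: algebra_simps)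

lemma vnorm_diff_triangle: "vnorm d (\<lambda>i. x i - y i) \<le> vnorm d x + vnorm d y"
proof -
  have "vnorm d (\<lambda>i. x i + (-1) * y i) \<le> vnorm d x + vnorm d (\<lambda>i. (-1) * y i)"
    by (rule vnorm_triangle)
  then show ?thesis by (simp add: vnorm_scale[of d "-1" y, simplified])
qed

lemma vnorm_zero_iff: "vnorm d x = 0 \<longleftrightarrow> (\<forall>i<d. x i = 0)"
proof -
  have "vnorm d x = 0 \<longleftrightarrow> (\<Sum>i<d. x i * x i) = 0" unfolding vnorm_def vinner_def by simp
  also have "\<dots> \<longleftrightarrow> (\<forall>i<d. x i * x i = 0)"
    by (subst sum_nonneg_eq_0_iff) auto
  finally show ?thesis by simp
qed

lemma vinner_cong: "(\<And>i. i < d \<Longrightarrow> x i = x' i) \<Longrightarrow> (\<And>i. i < d \<Longrightarrow> y i = y' i) \<Longrightarrow>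
   vinner d x y = vinner d x' y'"
  unfolding vinner_def by (rule sum.cong) auto

lemma vnorm_cong: "(\<And>i. i < d \<Longrightarrow> x i = x' i) \<Longrightarrow> vnorm d x = vnorm d x'"
  unfolding vnorm_def by (metis vinner_cong)

lemma vnorm_sq_add: "(vnorm d (\<lambda>i. x i + y i))^2 = (vnorm d x)^2 + 2 * vinner d x y + (vnorm d y)^2"
  unfolding vnorm_sq by (simp add: vinner_add_left vinner_add_right vinner_comm[of d y x])

lemma vnorm_sq_diff: "(vnorm d (\<lambda>i. x i - y i))^2 = (vnorm d x)^2 - 2 * vinner d x y + (vnorm d y)^2"
  unfolding vnorm_sq by (simp add: vinner_diff_left vinner_diff_right vinner_comm[of d y x])

lemma vnorm_sq_add_le: "(vnorm d (\<lambda>i. x i + y i))^2 \<le> 2 * (vnorm d x)^2 + 2 * (vnorm d y)^2"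
proof -
  have "(vnorm d (\<lambda>i. x i - y i))^2 \<ge> 0" by simp
  then show ?thesis using vnorm_sq_add[of d x y] vnorm_sq_diff[of d x y] by linarith
qed

lemma vnorm_bound_by_inner:
  assumes "\<And>b. vinner d b x \<le> vnorm d b * B" "0 \<le> B"
  shows "vnorm d x \<le> B"
proof (cases "vnorm d x = 0")
  case True then show ?thesis using assms(2) by simp
next
  case False
  then have pos: "vnorm d x > 0" using vnorm_nonneg[of d x] by linarith
  have "vnorm d x * vnorm d x \<le> vnorm d x * B" using assms(1)[of x] by (simp add: vnorm_sq[symmetric] power2_eq_square)
  then show ?thesis using pos by simp
qed


lemma integrable_pmf_bounded:
  fixes f :: "'a \<Rightarrow> real"
  assumes "\<And>x. x \<in> set_pmf M \<Longrightarrow> \<bar>f x\<bar> \<le> B"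
  shows "integrable (measure_pmf M) f"
  by (rule measure_pmf.integrable_const_bound[where B=B]) (auto intro!: AE_pmfI assms)

lemma integral_mono_pmf:
  fixes f g :: "'a \<Rightarrow> real"
  assumes "integrable (measure_pmf M) f" "integrable (measure_pmf M) g"
    "\<And>x. x \<in> set_pmf M \<Longrightarrow> f x \<le> g x"
  shows "measure_pmf.expectation M f \<le> measure_pmf.expectation M g"
  by (rule integral_mono_AE) (auto intro!: AE_pmfI assms)

lemma integral_cong_pmf:
  fixes f g :: "'a \<Rightarrow> real"
  assumes "\<And>x. x \<in> set_pmf M \<Longrightarrow> f x = g x"
  shows "measure_pmf.expectation M f = measure_pmf.expectation M g"
  by (rule integral_cong_AE) (auto intro!: AE_pmfI assms)

lemma integral_bind_pmf_bounded:
  fixes f :: "'b \<Rightarrow> real"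
  assumes bnd: "\<And>x. x \<in> set_pmf (bind_pmf M N) \<Longrightarrow> \<bar>f x\<bar> \<le> B"
  shows "measure_pmf.expectation (bind_pmf M N) f =
         measure_pmf.expectation M (\<lambda>x. measure_pmf.expectation (N x) f)"
proof -
  obtain y where "y \<in> set_pmf (bind_pmf M N)" using set_pmf_not_empty[of "bind_pmf M N"] by blast
  then have B0: "0 \<le> B" using bnd[of y] by linarith
  define f' where "f' = (\<lambda>x. max (-B) (min B (f x)))"
  have eq1: "measure_pmf.expectation (bind_pmf M N) f = measure_pmf.expectation (bind_pmf M N) f'"
    by (rule integral_cong_pmf) (use bnd in \<open>fastforce simp: f'_def abs_le_iff\<close>)
  have eq2: "measure_pmf.expectation M (\<lambda>x. measure_pmf.expectation (N x) f) =
             measure_pmf.expectation M (\<lambda>x. measure_pmf.expectation (N x) f')"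
    by (rule integral_cong_pmf, rule integral_cong_pmf) (use bnd in \<open>fastforce simp: f'_def abs_le_iff\<close>)
  have "measure_pmf.expectation (bind_pmf M N) f' =
        measure_pmf.expectation M (\<lambda>x. measure_pmf.expectation (N x) f')"
    unfolding measure_pmf_bind
    by (rule integral_bind[where K="count_space UNIV" and B=B and B'=1])
       (use B0 in \<open>auto simp: f'_def measure_pmf.finite_measure measure_pmf_in_subprob_algebra
             intro!: AE_pmfI measure_pmf.emeasure_le_1\<close>)
  then show ?thesis using eq1 eq2 by simp
qed

lemma integral_finite_support:
  fixes f :: "'a \<Rightarrow> real"
  assumes "finite A" "set_pmf M \<subseteq> A"
  shows "measure_pmf.expectation M f = (\<Sum>a\<in>A. pmf M a * f a)"
  using assms by (subst integral_measure_pmf_real[of A]) (auto simp: mult.commute)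

definition zfirst :: "(nat \<Rightarrow> nat pmf) \<Rightarrow> (nat \<Rightarrow> nat \<Rightarrow> real) \<Rightarrow> nat \<Rightarrow> sample pmf" where
  "zfirst P Rw s = map_pmf (\<lambda>s'. (s, Rw s s', s')) (P s)"

definition zset :: "nat set \<Rightarrow> (nat \<Rightarrow> nat \<Rightarrow> real) \<Rightarrow> sample set" where
  "zset S Rw = (\<lambda>(s,s'). (s, Rw s s', s')) ` (S \<times> S)"

lemma finite_zset: "finite S \<Longrightarrow> finite (zset S Rw)"
  unfolding zset_def by simp

lemma zset_mem: "z \<in> zset S Rw \<longleftrightarrow> (fst z \<in> S \<and> snd (snd z) \<in> S \<and> fst (snd z) = Rw (fst z) (snd (snd z)))"
  unfolding zset_def by (cases z) auto

lemma stepn_add: "stepn P (m + n) x = bind_pmf (stepn P m x) (stepn P n)"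
  by (induction n) (simp_all add: bind_return_pmf' bind_assoc_pmf)

lemma set_stepn:
  assumes "\<forall>s\<in>S. set_pmf (P s) \<subseteq> S" "x \<in> S"
  shows "set_pmf (stepn P n x) \<subseteq> S"
  using assms by (induction n) auto

lemma zstep_eq: "zstep P Rw z = zfirst P Rw (snd (snd z))"
  unfolding zstep_def zfirst_def by (cases z) auto

lemma zstep_fun: "zstep P Rw = (\<lambda>w. zfirst P Rw (snd (snd w)))"
  by (rule ext) (rule zstep_eq)

lemma zstepn_Suc_fun: "zstepn P Rw (Suc n) = (\<lambda>x. bind_pmf (zstepn P Rw n x) (zstep P Rw))"
  by (rule ext) simp

lemma zstepn_Suc_front: "zstepn P Rw (Suc n) z = bind_pmf (zstep P Rw z) (zstepn P Rw n)"
proof (induction n arbitrary: z)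
  case 0 then show ?case by (simp add: bind_return_pmf bind_return_pmf')
next
  case (Suc n)
  have "zstepn P Rw (Suc (Suc n)) z = bind_pmf (zstepn P Rw (Suc n) z) (zstep P Rw)" by simp
  also have "\<dots> = bind_pmf (zstep P Rw z) (\<lambda>w. bind_pmf (zstepn P Rw n w) (zstep P Rw))"
    using Suc by (simp add: bind_assoc_pmf)
  finally show ?case by simp
qed

lemma zstepn_0_fun[simp]: "zstepn P Rw 0 = return_pmf"
  by (rule ext) simp

lemma zstepn_Suc_front_fun: "zstepn P Rw (Suc n) = (\<lambda>z. bind_pmf (zstep P Rw z) (zstepn P Rw n))"
  by (rule ext) (rule zstepn_Suc_front)

lemma zstepn_add: "zstepn P Rw (m + n) z = bind_pmf (zstepn P Rw m z) (zstepn P Rw n)"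
  by (induction n) (simp_all add: bind_return_pmf' bind_assoc_pmf)

lemma map_thd_zstepn: "map_pmf (\<lambda>z. snd (snd z)) (zstepn P Rw n z) = stepn P n (snd (snd z))"
proof (induction n)
  case 0 then show ?case by simp
next
  case (Suc n)
  have "map_pmf (\<lambda>z. snd (snd z)) (zstepn P Rw (Suc n) z) =
        bind_pmf (zstepn P Rw n z) (\<lambda>w. map_pmf (\<lambda>z. snd (snd z)) (zstep P Rw w))"
    by (simp add: map_bind_pmf)
  also have "\<dots> = bind_pmf (zstepn P Rw n z) (\<lambda>w. P (snd (snd w)))"
    by (simp add: zstep_eq zfirst_def map_pmf_comp)
  also have "\<dots> = bind_pmf (map_pmf (\<lambda>z. snd (snd z)) (zstepn P Rw n z)) P"
    by (simp add: bind_map_pmf)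
  finally show ?case using Suc by simp
qed

lemma zstepn_Suc_stepn: "zstepn P Rw (Suc n) z = bind_pmf (stepn P n (snd (snd z))) (zfirst P Rw)"
proof -
  have "zstepn P Rw (Suc n) z = bind_pmf (zstepn P Rw n z) (\<lambda>w. zfirst P Rw (snd (snd w)))"
    by (simp add: zstep_fun)
  also have "\<dots> = bind_pmf (map_pmf (\<lambda>z. snd (snd z)) (zstepn P Rw n z)) (zfirst P Rw)"
    by (simp add: bind_map_pmf)
  finally show ?thesis by (simp add: map_thd_zstepn)
qed

lemma zstat_eq: "zstat P Rw \<mu> = bind_pmf \<mu> (zfirst P Rw)"
  unfolding zstat_def zfirst_def by simp

lemma zstat_stationary:
  assumes "bind_pmf \<mu> P = \<mu>"
  shows "bind_pmf (zstat P Rw \<mu>) (zstep P Rw) = zstat P Rw \<mu>"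
proof -
  have "bind_pmf (zfirst P Rw s) (zstep P Rw) = bind_pmf (P s) (zfirst P Rw)" for s
    by (simp only: zfirst_def[of P Rw s] bind_map_pmf zstep_eq snd_conv)
  then have "bind_pmf (zstat P Rw \<mu>) (zstep P Rw) =
        bind_pmf \<mu> (\<lambda>s. bind_pmf (P s) (zfirst P Rw))"
    by (simp add: zstat_eq bind_assoc_pmf)
  also have "\<dots> = bind_pmf (bind_pmf \<mu> P) (zfirst P Rw)" by (simp add: bind_assoc_pmf)
  finally show ?thesis using assms by (simp add: zstat_eq)
qed

lemma zstat_stationary_n:
  assumes "bind_pmf \<mu> P = \<mu>"
  shows "bind_pmf (zstat P Rw \<mu>) (zstepn P Rw n) = zstat P Rw \<mu>"
proof (induction n)
  case 0 then show ?case by (simp add: bind_return_pmf')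
next
  case (Suc n)
  have "bind_pmf (zstat P Rw \<mu>) (zstepn P Rw (Suc n)) =
        bind_pmf (bind_pmf (zstat P Rw \<mu>) (zstepn P Rw n)) (zstep P Rw)"
    by (simp only: zstepn_Suc_fun bind_assoc_pmf)
  also have "\<dots> = bind_pmf (zstat P Rw \<mu>) (zstep P Rw)" using Suc by simp
  also have "\<dots> = zstat P Rw \<mu>" by (rule zstat_stationary[OF assms])
  finally show ?case .
qed

lemma set_zfirst:
  assumes "\<forall>s\<in>S. set_pmf (P s) \<subseteq> S" "s \<in> S"
  shows "set_pmf (zfirst P Rw s) \<subseteq> zset S Rw"
  using assms unfolding zfirst_def by (fastforce simp: zset_mem)

lemma set_zstepn_Suc:
  assumes "\<forall>s\<in>S. set_pmf (P s) \<subseteq> S" "snd (snd z) \<in> S"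
  shows "set_pmf (zstepn P Rw (Suc n) z) \<subseteq> zset S Rw"
  unfolding zstepn_Suc_stepn using set_stepn[OF assms(1,2), of n] set_zfirst[OF assms(1)]
  by fastforce

lemma set_zstepn:
  assumes "\<forall>s\<in>S. set_pmf (P s) \<subseteq> S" "snd (snd z) \<in> S"
  shows "set_pmf (zstepn P Rw n z) \<subseteq> insert z (zset S Rw)"
  using set_zstepn_Suc[OF assms, where Rw=Rw] by (cases n) auto

lemma set_zstepn_zset:
  assumes "\<forall>s\<in>S. set_pmf (P s) \<subseteq> S" "z \<in> zset S Rw"
  shows "set_pmf (zstepn P Rw n z) \<subseteq> zset S Rw"
  using set_zstepn[OF assms(1), where z=z and n=n and Rw=Rw] assms(2) by (auto simp: zset_mem)

lemma set_zstat:
  assumes "\<forall>s\<in>S. set_pmf (P s) \<subseteq> S" "set_pmf \<mu> \<subseteq> S"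
  shows "set_pmf (zstat P Rw \<mu>) \<subseteq> zset S Rw"
  using assms set_zfirst[OF assms(1)] by (fastforce simp: zstat_eq)

lemma set_samples:
  assumes "\<forall>s\<in>S. set_pmf (P s) \<subseteq> S" "s \<in> S" "p \<in> set_pmf (samples P Rw n s)"
  shows "length (fst p) = n \<and> set (fst p) \<subseteq> zset S Rw \<and> snd p \<in> S"
  using assms(2,3)
proof (induction n arbitrary: s p)
  case 0 then show ?case by simp
next
  case (Suc n)
  then obtain s' q where s': "s' \<in> set_pmf (P s)" and q: "q \<in> set_pmf (samples P Rw n s')"
    and p: "p = ((s, Rw s s', s') # fst q, snd q)"
    by (auto split: prod.splits)
  have "s' \<in> S" using s' assms(1) Suc.prems(1) by auto
  then have "length (fst q) = n \<and> set (fst q) \<subseteq> zset S Rw \<and> snd q \<in> S" using Suc.IH q by blast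
  then show ?case using p \<open>s' \<in> S\<close> Suc.prems(1) by (auto simp: zset_def)
qed

lemma samples_take:
  assumes "m \<le> n"
  shows "map_pmf (\<lambda>p. take m (fst p)) (samples P Rw n s) = map_pmf fst (samples P Rw m s)"
  using assms
proof (induction m arbitrary: n s)
  case 0
  have "map_pmf (\<lambda>p. take 0 (fst p)) (samples P Rw n s) = return_pmf []"
    by (simp add: map_pmf_def bind_return_pmf' bind_pmf_const)
  then show ?case by simp
next
  case (Suc m)
  then obtain n' where n: "n = Suc n'" "m \<le> n'" by (cases n) auto
  have "map_pmf (\<lambda>p. take (Suc m) (fst p)) (samples P Rw n s) =
        bind_pmf (P s) (\<lambda>s'. map_pmf (\<lambda>l. (s, Rw s s', s') # l) (map_pmf (\<lambda>p. take m (fst p)) (samples P Rw n' s')))"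
    by (simp add: n map_bind_pmf map_pmf_comp split_beta)
  also have "\<dots> = bind_pmf (P s) (\<lambda>s'. map_pmf (\<lambda>l. (s, Rw s s', s') # l) (map_pmf fst (samples P Rw m s')))"
    using Suc.IH n by simp
  also have "\<dots> = map_pmf fst (samples P Rw (Suc m) s)"
    by (simp add: map_bind_pmf map_pmf_comp split_beta)
  finally show ?case .
qed

lemma samples_nth:
  assumes "k < n"
  shows "map_pmf (\<lambda>p. fst p ! k) (samples P Rw n s) = bind_pmf (zfirst P Rw s) (zstepn P Rw k)"
  using assms
proof (induction k arbitrary: n s)
  case 0
  then obtain n' where n: "n = Suc n'" by (cases n) auto
  have "map_pmf (\<lambda>p. fst p ! 0) (samples P Rw n s) = bind_pmf (P s) (\<lambda>s'. map_pmf (\<lambda>_. (s, Rw s s', s')) (samples P Rw n' s'))"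
    by (simp add: n map_bind_pmf map_pmf_comp split_beta)
  also have "\<dots> = zfirst P Rw s"
    by (simp add: map_pmf_const zfirst_def map_pmf_def)
  finally show ?case by (simp add: bind_return_pmf')
next
  case (Suc k)
  then obtain n' where n: "n = Suc n'" "k < n'" by (cases n) auto
  have "map_pmf (\<lambda>p. fst p ! Suc k) (samples P Rw n s) =
        bind_pmf (P s) (\<lambda>s'. map_pmf (\<lambda>p. fst p ! k) (samples P Rw n' s'))"
    by (simp add: n map_bind_pmf map_pmf_comp split_beta)
  also have "\<dots> = bind_pmf (P s) (\<lambda>s'. bind_pmf (zfirst P Rw s') (zstepn P Rw k))"
    using Suc.IH n by simp
  also have "\<dots> = bind_pmf (zfirst P Rw s) (zstepn P Rw (Suc k))"
    by (simp only: zstepn_Suc_front_fun zfirst_def[of P Rw s] bind_map_pmf zstep_eq snd_conv)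
  finally show ?case .
qed

lemma samples_pair:
  assumes "i < j" "j < n"
  shows "map_pmf (\<lambda>p. (fst p ! i, fst p ! j)) (samples P Rw n s) =
         bind_pmf (map_pmf (\<lambda>p. fst p ! i) (samples P Rw n s)) (\<lambda>z. map_pmf (Pair z) (zstepn P Rw (j - i) z))"
  using assms
proof (induction i arbitrary: j n s)
  case 0
  then obtain n' j' where n: "n = Suc n'" "j = Suc j'" "j' < n'" by (cases n; cases j) auto
  have "map_pmf (\<lambda>p. (fst p ! 0, fst p ! j)) (samples P Rw n s) =
        bind_pmf (P s) (\<lambda>s'. map_pmf (Pair (s, Rw s s', s')) (map_pmf (\<lambda>p. fst p ! j') (samples P Rw n' s')))"
    by (simp add: n map_bind_pmf map_pmf_comp split_beta)
  also have "\<dots> = bind_pmf (P s) (\<lambda>s'. map_pmf (Pair (s, Rw s s', s')) (bind_pmf (zfirst P Rw s') (zstepn P Rw j')))"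
    using samples_nth[OF n(3)] by simp
  also have "\<dots> = bind_pmf (P s) (\<lambda>s'. map_pmf (Pair (s, Rw s s', s')) (zstepn P Rw j (s, Rw s s', s')))"
    by (simp only: n zstepn_Suc_front zstep_eq snd_conv)
  also have "\<dots> = bind_pmf (zfirst P Rw s) (\<lambda>z. map_pmf (Pair z) (zstepn P Rw j z))"
    by (simp add: zfirst_def bind_map_pmf)
  also have "\<dots> = bind_pmf (map_pmf (\<lambda>p. fst p ! 0) (samples P Rw n s)) (\<lambda>z. map_pmf (Pair z) (zstepn P Rw (j - 0) z))"
    using samples_nth[of 0 n P Rw s] n by (simp add: bind_return_pmf')
  finally show ?case .
next
  case (Suc i)
  then obtain n' j' where n: "n = Suc n'" "j = Suc j'" "i < j'" "j' < n'" by (cases n; cases j) auto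
  have "map_pmf (\<lambda>p. (fst p ! Suc i, fst p ! j)) (samples P Rw n s) =
        bind_pmf (P s) (\<lambda>s'. map_pmf (\<lambda>p. (fst p ! i, fst p ! j')) (samples P Rw n' s'))"
    by (simp add: n map_bind_pmf map_pmf_comp split_beta)
  also have "\<dots> = bind_pmf (P s) (\<lambda>s'. bind_pmf (map_pmf (\<lambda>p. fst p ! i) (samples P Rw n' s'))
                      (\<lambda>z. map_pmf (Pair z) (zstepn P Rw (j' - i) z)))"
    using Suc.IH n by simp
  also have "\<dots> = bind_pmf (map_pmf (\<lambda>p. fst p ! Suc i) (samples P Rw n s)) (\<lambda>z. map_pmf (Pair z) (zstepn P Rw (j - Suc i) z))"
    by (simp add: n map_bind_pmf map_pmf_comp split_beta bind_assoc_pmf)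
  finally show ?case .
qed


section \<open>Total variation\<close>

lemma tv_bdd: "bdd_above (range (\<lambda>A. \<bar>measure_pmf.prob p A - measure_pmf.prob q A\<bar>))"
proof (rule bdd_aboveI[where M=1], clarify)
  fix A
  have "0 \<le> measure_pmf.prob p A" "measure_pmf.prob p A \<le> 1"
       "0 \<le> measure_pmf.prob q A" "measure_pmf.prob q A \<le> 1" by auto
  then show "\<bar>measure_pmf.prob p A - measure_pmf.prob q A\<bar> \<le> 1" by linarith
qed

lemma tv_ge: "\<bar>measure_pmf.prob p A - measure_pmf.prob q A\<bar> \<le> tv_dist p q"
  unfolding tv_dist_def by (rule cSUP_upper[OF _ tv_bdd]) simp

lemma tv_le: "(\<And>A. \<bar>measure_pmf.prob p A - measure_pmf.prob q A\<bar> \<le> c) \<Longrightarrow> tv_dist p q \<le> c"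
  unfolding tv_dist_def by (rule cSUP_least) auto

lemma tv_le_1: "tv_dist p q \<le> 1"
proof (rule tv_le)
  fix A
  have "0 \<le> measure_pmf.prob p A" "measure_pmf.prob p A \<le> 1"
       "0 \<le> measure_pmf.prob q A" "measure_pmf.prob q A \<le> 1" by auto
  then show "\<bar>measure_pmf.prob p A - measure_pmf.prob q A\<bar> \<le> 1" by linarith
qed

lemma tv_nonneg: "0 \<le> tv_dist p q"
  using tv_ge[of p "{}" q] by simp

lemma tv_sym: "tv_dist p q = tv_dist q p"
  unfolding tv_dist_def by (simp add: abs_minus_commute)

lemma tv_triangle: "tv_dist p r \<le> tv_dist p q + tv_dist q r"
proof (rule tv_le)
  fix A
  have "\<bar>measure_pmf.prob p A - measure_pmf.prob r A\<bar> \<le>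
        \<bar>measure_pmf.prob p A - measure_pmf.prob q A\<bar> + \<bar>measure_pmf.prob q A - measure_pmf.prob r A\<bar>"
    by linarith
  then show "\<bar>measure_pmf.prob p A - measure_pmf.prob r A\<bar> \<le> tv_dist p q + tv_dist q r"
    using tv_ge[of p A q] tv_ge[of q A r] by linarith
qed

lemma tv_posdiff:
  assumes "finite W" "set_pmf p \<subseteq> W" "set_pmf q \<subseteq> W"
  shows "(\<Sum>x\<in>W. max (pmf p x - pmf q x) 0) \<le> tv_dist p q"
proof -
  define Ap where "Ap = {x\<in>W. pmf p x > pmf q x}"
  have fin: "finite Ap" using assms(1) by (simp add: Ap_def)
  have "(\<Sum>x\<in>W. max (pmf p x - pmf q x) 0) = (\<Sum>x\<in>Ap. pmf p x - pmf q x)"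
    unfolding Ap_def by (rule sum.mono_neutral_cong_right) (use assms(1) in auto)
  also have "\<dots> = measure_pmf.prob p Ap - measure_pmf.prob q Ap"
    using fin by (simp add: measure_measure_pmf_finite sum_subtractf)
  also have "\<dots> \<le> tv_dist p q" using tv_ge[of p Ap q] by linarith
  finally show ?thesis .
qed

lemma sum_pmf_diff_zero:
  assumes "finite W" "set_pmf p \<subseteq> W" "set_pmf q \<subseteq> W"
  shows "(\<Sum>x\<in>W. pmf p x - pmf q x) = 0"
  using sum_pmf_eq_1[OF assms(1,2)] sum_pmf_eq_1[OF assms(1,3)] by (simp add: sum_subtractf)

lemma tv_scalar:
  assumes "finite W" "set_pmf p \<subseteq> W" "set_pmf q \<subseteq> W" "\<And>x. x \<in> W \<Longrightarrow> \<bar>h x\<bar> \<le> H"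
  shows "(\<Sum>x\<in>W. (pmf p x - pmf q x) * h x) \<le> 2 * H * tv_dist p q"
proof -
  have "(\<Sum>x\<in>W. (pmf p x - pmf q x) * h x) = (\<Sum>x\<in>W. (pmf p x - pmf q x) * (h x + H))"
    using sum_pmf_diff_zero[OF assms(1-3)] by (simp add: distrib_left sum.distrib sum_distrib_right[symmetric])
  also have "\<dots> \<le> (\<Sum>x\<in>W. max (pmf p x - pmf q x) 0 * (2 * H))"
  proof (rule sum_mono)
    fix x assume x: "x \<in> W"
    have h: "0 \<le> h x + H" "h x + H \<le> 2 * H" using assms(4)[OF x] by linarith+
    have "(pmf p x - pmf q x) * (h x + H) \<le> max (pmf p x - pmf q x) 0 * (h x + H)"
      using h by (intro mult_right_mono) auto
    also have "\<dots> \<le> max (pmf p x - pmf q x) 0 * (2 * H)"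
      using h by (intro mult_left_mono) auto
    finally show "(pmf p x - pmf q x) * (h x + H) \<le> max (pmf p x - pmf q x) 0 * (2 * H)" .
  qed
  also have "\<dots> = 2 * H * (\<Sum>x\<in>W. max (pmf p x - pmf q x) 0)"
    by (simp add: sum_distrib_left mult.commute)
  also have "\<dots> \<le> 2 * H * tv_dist p q"
  proof -
    obtain x where "x \<in> set_pmf p" using set_pmf_not_empty[of p] by blast
    then have "x \<in> W" using assms(2) by auto
    then have "0 \<le> H" using assms(4)[of x] by linarith
    then show ?thesis using tv_posdiff[OF assms(1-3)] by (intro mult_left_mono) auto
  qed
  finally show ?thesis .
qed

lemma dobrushin_sum:
  fixes w k :: "'a \<Rightarrow> real"
  assumes "finite W" "(\<Sum>x\<in>W. w x) = 0" "0 \<le> \<delta>"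
    "\<And>x y. x \<in> W \<Longrightarrow> y \<in> W \<Longrightarrow> k x - k y \<le> \<delta>"
  shows "(\<Sum>x\<in>W. w x * k x) \<le> \<delta> * (\<Sum>x\<in>W. max (w x) 0)"
proof -
  define u where "u x = max (w x) 0" for x
  define v where "v x = max (- w x) 0" for x
  define t where "t = (\<Sum>x\<in>W. u x)"
  have wuv: "w x = u x - v x" for x unfolding u_def v_def by auto
  have u0: "0 \<le> u x" and v0: "0 \<le> v x" for x unfolding u_def v_def by auto
  have sv: "(\<Sum>x\<in>W. v x) = t"
    using assms(2) unfolding t_def by (simp add: wuv sum_subtractf)
  have t0: "0 \<le> t" unfolding t_def by (simp add: sum_nonneg u0)
  have key: "t * (\<Sum>x\<in>W. w x * k x) \<le> \<delta> * t * t"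
  proof -
    have "t * (\<Sum>x\<in>W. w x * k x) = t * (\<Sum>x\<in>W. u x * k x) - t * (\<Sum>y\<in>W. v y * k y)"
      by (simp add: wuv left_diff_distrib sum_subtractf right_diff_distrib)
    also have "\<dots> = (\<Sum>y\<in>W. v y) * (\<Sum>x\<in>W. u x * k x) - (\<Sum>x\<in>W. u x) * (\<Sum>y\<in>W. v y * k y)"
      by (simp add: sv t_def)
    also have "\<dots> = (\<Sum>x\<in>W. \<Sum>y\<in>W. u x * v y * (k x - k y))"
    proof -
      have "(\<Sum>x\<in>W. \<Sum>y\<in>W. u x * v y * (k x - k y)) =
            (\<Sum>x\<in>W. \<Sum>y\<in>W. (u x * k x) * v y) - (\<Sum>x\<in>W. \<Sum>y\<in>W. u x * (v y * k y))"
        by (simp add: sum_subtractf[symmetric] algebra_simps)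
      also have "\<dots> = (\<Sum>x\<in>W. u x * k x) * (\<Sum>y\<in>W. v y) - (\<Sum>x\<in>W. u x) * (\<Sum>y\<in>W. v y * k y)"
        by (simp only: sum_product)
      finally show ?thesis by (simp add: mult.commute)
    qed
    also have "\<dots> \<le> (\<Sum>x\<in>W. \<Sum>y\<in>W. u x * v y * \<delta>)"
      by (intro sum_mono mult_left_mono assms(4)) (auto intro: mult_nonneg_nonneg u0 v0)
    also have "\<dots> = (\<Sum>x\<in>W. u x * ((\<Sum>y\<in>W. v y) * \<delta>))"
      by (simp add: sum_distrib_left sum_distrib_right mult.assoc)
    also have "\<dots> = (\<Sum>x\<in>W. u x) * (\<Sum>y\<in>W. v y) * \<delta>"
      by (simp add: sum_distrib_right mult.assoc)
    also have "\<dots> = \<delta> * t * t"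
      by (simp add: t_def[symmetric] sv)
    finally show ?thesis .
  qed
  show ?thesis
  proof (cases "t = 0")
    case True
    have "\<forall>x\<in>W. u x = 0" using True assms(1) unfolding t_def by (subst (asm) sum_nonneg_eq_0_iff) (auto intro: u0)
    moreover have "\<forall>x\<in>W. v x = 0"
    proof -
      have "(\<Sum>x\<in>W. v x) = 0" using True sv by simp
      then show ?thesis using assms(1) by (subst (asm) sum_nonneg_eq_0_iff) (auto intro: v0)
    qed
    ultimately have "\<forall>x\<in>W. w x = 0" by (simp add: wuv)
    then show ?thesis using assms(3) by (simp add: sum_nonneg)
  next
    case False
    then have "t > 0" using t0 by simp
    then have "(\<Sum>x\<in>W. w x * k x) \<le> \<delta> * t" using key
      by (metis mult.commute mult.left_commute mult_le_cancel_left_pos)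
    then show ?thesis by (simp add: t_def u_def)
  qed
qed

lemma prob_bind_pmf_finite:
  assumes "finite W" "set_pmf p \<subseteq> W"
  shows "measure_pmf.prob (bind_pmf p K) A = (\<Sum>x\<in>W. pmf p x * measure_pmf.prob (K x) A)"
proof -
  have "measure_pmf.prob (bind_pmf p K) A = measure_pmf.expectation (bind_pmf p K) (indicator A)"
    by simp
  also have "\<dots> = measure_pmf.expectation p (\<lambda>x. measure_pmf.expectation (K x) (indicator A))"
    by (rule integral_bind_pmf_bounded[where B=1]) (auto simp: indicator_def)
  also have "\<dots> = measure_pmf.expectation p (\<lambda>x. measure_pmf.prob (K x) A)" by simp
  also have "\<dots> = (\<Sum>x\<in>W. pmf p x * measure_pmf.prob (K x) A)"
    by (rule integral_finite_support[OF assms])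
  finally show ?thesis .
qed

lemma dobrushin:
  assumes "finite W" "set_pmf p \<subseteq> W" "set_pmf q \<subseteq> W" "0 \<le> \<delta>"
    "\<And>x y. x \<in> W \<Longrightarrow> y \<in> W \<Longrightarrow> tv_dist (K x) (K y) \<le> \<delta>"
  shows "tv_dist (bind_pmf p K) (bind_pmf q K) \<le> \<delta> * tv_dist p q"
proof (rule tv_le)
  fix A
  define k where "k x = measure_pmf.prob (K x) A" for x
  have kd: "k x - k y \<le> \<delta>" if "x \<in> W" "y \<in> W" for x y
    using tv_ge[of "K x" A "K y"] assms(5)[OF that] unfolding k_def by linarith
  have diff: "measure_pmf.prob (bind_pmf p K) A - measure_pmf.prob (bind_pmf q K) A =
              (\<Sum>x\<in>W. (pmf p x - pmf q x) * k x)"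
    by (simp add: prob_bind_pmf_finite[OF assms(1,2)] prob_bind_pmf_finite[OF assms(1,3)]
        k_def sum_subtractf left_diff_distrib)
  have 1: "(\<Sum>x\<in>W. (pmf p x - pmf q x) * k x) \<le> \<delta> * tv_dist p q"
  proof -
    have "(\<Sum>x\<in>W. (pmf p x - pmf q x) * k x) \<le> \<delta> * (\<Sum>x\<in>W. max (pmf p x - pmf q x) 0)"
      by (rule dobrushin_sum[OF assms(1) sum_pmf_diff_zero[OF assms(1-3)] assms(4) kd])
    also have "\<dots> \<le> \<delta> * tv_dist p q"
      by (rule mult_left_mono[OF tv_posdiff[OF assms(1-3)] assms(4)])
    finally show ?thesis .
  qed
  have 2: "(\<Sum>x\<in>W. (pmf q x - pmf p x) * k x) \<le> \<delta> * tv_dist p q"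
  proof -
    have "(\<Sum>x\<in>W. (pmf q x - pmf p x) * k x) \<le> \<delta> * (\<Sum>x\<in>W. max (pmf q x - pmf p x) 0)"
      by (rule dobrushin_sum[OF assms(1) sum_pmf_diff_zero[OF assms(1,3,2)] assms(4) kd])
    also have "\<dots> \<le> \<delta> * tv_dist p q"
      using mult_left_mono[OF tv_posdiff[OF assms(1,3,2)] assms(4)] by (simp add: tv_sym)
    finally show ?thesis by (simp add: tv_sym)
  qed
  have "(\<Sum>x\<in>W. (pmf q x - pmf p x) * k x) = - (\<Sum>x\<in>W. (pmf p x - pmf q x) * k x)"
    by (simp add: sum_negf[symmetric] algebra_simps)
  then show "\<bar>measure_pmf.prob (bind_pmf p K) A - measure_pmf.prob (bind_pmf q K) A\<bar> \<le> \<delta> * tv_dist p q"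
    using 1 2 diff by linarith
qed

lemma tv_le_overlap:
  assumes "pmf p w0 \<ge> \<epsilon>" "pmf q w0 \<ge> \<epsilon>"
  shows "tv_dist p q \<le> 1 - \<epsilon>"
proof (rule tv_le)
  fix A
  have pw: "measure_pmf.prob p {w0} = pmf p w0" "measure_pmf.prob q {w0} = pmf q w0"
    by (simp_all add: measure_pmf_single)
  have one: "measure_pmf.prob p A - measure_pmf.prob q A \<le> 1 - \<epsilon>"
    if "pmf p w0 \<ge> \<epsilon>" "pmf q w0 \<ge> \<epsilon>" for p q :: "'a pmf"
  proof (cases "w0 \<in> A")
    case True
    have "measure_pmf.prob q {w0} \<le> measure_pmf.prob q A"
      using True by (intro measure_pmf.finite_measure_mono) auto
    then have "pmf q w0 \<le> measure_pmf.prob q A" by (simp add: measure_pmf_single)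
    moreover have "measure_pmf.prob p A \<le> 1" by (rule measure_pmf.prob_le_1)
    ultimately show ?thesis using that by linarith
  next
    case False
    have "measure_pmf.prob p (A \<union> {w0}) = measure_pmf.prob p A + measure_pmf.prob p {w0}"
      using False by (intro measure_pmf.finite_measure_Union) auto
    moreover have "measure_pmf.prob p (A \<union> {w0}) \<le> 1" by simp
    ultimately have "measure_pmf.prob p A + pmf p w0 \<le> 1" by (simp add: measure_pmf_single)
    moreover have "0 \<le> measure_pmf.prob q A" by (rule measure_nonneg)
    ultimately show ?thesis using that by linarith
  qed
  show "\<bar>measure_pmf.prob p A - measure_pmf.prob q A\<bar> \<le> 1 - \<epsilon>"
    using one[of p q] one[of q p] assms by linarith
qed


section \<open>Numerical semigroups and primitivity\<close>

lemma numsemigroup: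
  fixes A :: "nat set"
  assumes add: "\<And>a b. a \<in> A \<Longrightarrow> b \<in> A \<Longrightarrow> a + b \<in> A"
    and pos: "0 \<notin> A" and g: "Gcd A = 1"
  shows "\<exists>N. \<forall>n\<ge>N. n \<in> A"
proof -
  have mult: "k * a \<in> A" if "a \<in> A" "k \<ge> 1" for a k
    using that(2)
  proof (induction k)
    case 0 then show ?case by simp
  next
    case (Suc k)
    then show ?case using that(1) add by (cases "k = 0") auto
  qed
  have comb: "i * a + j * b \<in> A" if "a \<in> A" "b \<in> A" "i + j \<ge> 1" for a b i j
  proof (cases "i = 0")
    case True then show ?thesis using that mult[of b j] by simp
  next
    case False
    show ?thesis
    proof (cases "j = 0")
      case True then show ?thesis using that mult[of a i] False by simp
    next
      case False
      then show ?thesis using \<open>i \<noteq> 0\<close> that add mult by simp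
    qed
  qed
  have "A \<noteq> {}" using g by auto
  then obtain a0 where a0: "a0 \<in> A" by blast
  have a0pos: "a0 > 0" using a0 pos by (cases a0) auto
  define Ds where "Ds = {b - a | a b. a \<in> A \<and> b \<in> A \<and> a < b}"
  have "2 * a0 \<in> A" using mult[OF a0, of 2] by simp
  moreover have "a0 = 2 * a0 - a0" "a0 < 2 * a0" using a0pos by auto
  ultimately have "a0 \<in> Ds" unfolding Ds_def using a0 by blast
  define dd where "dd = (LEAST x. x \<in> Ds)"
  have "dd \<in> Ds" unfolding dd_def by (rule LeastI[of _ a0]) fact
  then obtain a b where ab: "a \<in> A" "b \<in> A" "a < b" "dd = b - a" unfolding Ds_def by blast
  have ddmin: "dd \<le> x" if "x \<in> Ds" for x unfolding dd_def using that by (rule Least_le)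
  have dvd: "dd dvd x" if x: "x \<in> A" for x
  proof -
    define q where "q = x div dd"
    define r where "r = x mod dd"
    have xqr: "x = q * dd + r" unfolding q_def r_def by simp
    have ddpos: "dd > 0" using ab by simp
    have rlt: "r < dd" unfolding r_def using ddpos by simp
    define n where "n = q + 1"
    have e1: "x + n * a \<in> A" using add[OF x mult[OF ab(1), of n]] n_def by simp
    have e2: "1 * a + q * b \<in> A" using comb[OF ab(1,2), of 1 q] by simp
    have e2eq: "1 * a + q * b = n * a + q * dd"
      using ab(3,4) unfolding n_def by (simp add: algebra_simps)
    show ?thesis
    proof (rule ccontr)
      assume "\<not> dd dvd x"
      then have "r > 0" unfolding r_def by (simp add: dvd_eq_mod_eq_0)
      have lt: "n * a + q * dd < x + n * a" using xqr \<open>r > 0\<close> by simp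
      have "(x + n * a) - (n * a + q * dd) \<in> Ds"
        unfolding Ds_def using e1 e2 e2eq lt by (metis (mono_tags, lifting) mem_Collect_eq)
      moreover have "(x + n * a) - (n * a + q * dd) = r" using xqr by simp
      ultimately have "dd \<le> r" using ddmin by simp
      then show False using rlt by simp
    qed
  qed
  have "dd dvd Gcd A" by (rule Gcd_greatest) (use dvd in blast)
  then have "dd = 1" using g by simp
  then have b: "b = a + 1" using ab by simp
  have apos: "a \<ge> 1" using ab(1) pos by (cases a) auto
  show ?thesis
  proof (intro exI[of _ "a * a"] allI impI)
    fix n assume n: "a * a \<le> n"
    define q where "q = n div a"
    define r where "r = n mod a"
    have rlt: "r < a" unfolding r_def using apos by simp
    have "a \<le> q" unfolding q_def using n apos
      by (metis div_le_mono nonzero_mult_div_cancel_right not_one_le_zero)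
    then have rq: "r \<le> q" using rlt by simp
    have "n = (q - r) * a + r * b"
      unfolding b using rq q_def r_def
      by (simp add: algebra_simps diff_mult_distrib)
    moreover have "(q - r) * a + r * b \<in> A"
      using comb[OF ab(1,2), of "q - r" r] rq \<open>a \<le> q\<close> apos by simp
    ultimately show "n \<in> A" by simp
  qed
qed

lemma primitive:
  assumes fin: "finite S" and cl: "\<forall>s\<in>S. set_pmf (P s) \<subseteq> S"
    and irr: "irreducible_on S P" and ap: "aperiodic_on S P"
  shows "\<exists>N. \<forall>x\<in>S. \<forall>y\<in>S. y \<in> set_pmf (stepn P N x)"
proof -
  have "\<exists>Ny. \<forall>n\<ge>Ny. n \<in> {n. 0 < n \<and> y \<in> set_pmf (stepn P n y)}" if y: "y \<in> S" for y
  proof (rule numsemigroup)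
    fix a b assume "a \<in> {n. 0 < n \<and> y \<in> set_pmf (stepn P n y)}" "b \<in> {n. 0 < n \<and> y \<in> set_pmf (stepn P n y)}"
    then show "a + b \<in> {n. 0 < n \<and> y \<in> set_pmf (stepn P n y)}"
      by (auto simp: stepn_add)
  next
    show "0 \<notin> {n. 0 < n \<and> y \<in> set_pmf (stepn P n y)}" by simp
  next
    show "Gcd {n. 0 < n \<and> y \<in> set_pmf (stepn P n y)} = 1" using ap y unfolding aperiodic_on_def by blast
  qed
  then obtain Ny where Ny: "\<And>y n. y \<in> S \<Longrightarrow> n \<ge> Ny y \<Longrightarrow> y \<in> set_pmf (stepn P n y)"
    by (metis (mono_tags, lifting) mem_Collect_eq)
  obtain m where m: "\<And>x y. x \<in> S \<Longrightarrow> y \<in> S \<Longrightarrow> y \<in> set_pmf (stepn P (m x y) x)"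
    using irr unfolding irreducible_on_def by metis
  define N where "N = Max ((\<lambda>(x,y). m x y) ` (S \<times> S)) + Max (Ny ` S)"
  show ?thesis
  proof (intro exI[of _ N] ballI)
    fix x y assume xy: "x \<in> S" "y \<in> S"
    have m1: "m x y \<le> Max ((\<lambda>(x,y). m x y) ` (S \<times> S))"
      using fin xy by (intro Max_ge) auto
    have m2: "Ny y \<le> Max (Ny ` S)" using fin xy by (intro Max_ge) auto
    define k where "k = N - m x y"
    have Nk: "N = m x y + k" using m1 unfolding k_def N_def by simp
    have "k \<ge> Ny y" using m1 m2 unfolding k_def N_def by simp
    then have "y \<in> set_pmf (stepn P k y)" using Ny xy by simp
    then show "y \<in> set_pmf (stepn P N x)"
      unfolding Nk stepn_add using m[OF xy] by auto
  qed
qed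

locale tdl =
  fixes S P Rw rmax \<gamma> \<mu> d \<phi> R \<theta>s
  assumes td: "td_setting S P Rw rmax \<gamma> \<mu> d \<phi> R \<theta>s"
begin

lemma finS: "finite S" and Sne: "S \<noteq> {}" and closed: "\<forall>s\<in>S. set_pmf (P s) \<subseteq> S"
  and rbound: "\<And>s s'. s \<in> S \<Longrightarrow> s' \<in> S \<Longrightarrow> \<bar>Rw s s'\<bar> \<le> rmax"
  and gam: "0 \<le> \<gamma>" "\<gamma> < 1" and erg: "ergodic_on S P"
  and musub: "set_pmf \<mu> \<subseteq> S" and mustat: "bind_pmf \<mu> P = \<mu>"
  and phi: "\<And>s. s \<in> S \<Longrightarrow> inRd d (\<phi> s)" "\<And>s. s \<in> S \<Longrightarrow> vnorm d (\<phi> s) \<le> 1"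
  and ths: "inRd d \<theta>s" "gbar S P Rw \<mu> d \<phi> \<gamma> \<theta>s = (\<lambda>i. 0)"
  and Rpos: "0 < R" and thsR: "vnorm d \<theta>s \<le> R"
  using td unfolding td_setting_def stationary_on_def by auto

abbreviation "Z \<equiv> zset S Rw"
abbreviation "Z' \<equiv> S \<times> (UNIV :: real set) \<times> S"
abbreviation "D \<equiv> dmix S P Rw \<mu>"
abbreviation "zs \<equiv> zstat P Rw \<mu>"

lemma finZ: "finite Z" using finS by (rule finite_zset)

lemma Z_sub: "Z \<subseteq> Z'" unfolding zset_def by auto

lemma Z'ne: "Z' \<noteq> {}" using Sne by auto

lemma set_zs: "set_pmf zs \<subseteq> Z" using set_zstat[OF closed musub] .

lemma D_bdd: "bdd_above ((\<lambda>z. tv_dist (zstepn P Rw n z) zs) ` Z')"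
  by (rule bdd_aboveI[where M=1]) (auto simp: tv_le_1)

lemma D_ge: "z \<in> Z' \<Longrightarrow> tv_dist (zstepn P Rw n z) zs \<le> D n"
  unfolding dmix_def by (rule cSUP_upper[OF _ D_bdd])

lemma D_le: "(\<And>z. z \<in> Z' \<Longrightarrow> tv_dist (zstepn P Rw n z) zs \<le> c) \<Longrightarrow> D n \<le> c"
  unfolding dmix_def using Z'ne by (intro cSUP_least) auto

lemma D_nonneg: "0 \<le> D n"
proof -
  obtain z where "z \<in> Z'" using Z'ne by blast
  then show ?thesis using D_ge[of z n] tv_nonneg[of "zstepn P Rw n z" zs] by linarith
qed

lemma D_le_1: "D n \<le> 1" by (rule D_le) (rule tv_le_1)

lemma D_comp:
  assumes "0 \<le> \<delta>" "\<And>x y. x \<in> Z' \<Longrightarrow> y \<in> Z' \<Longrightarrow> tv_dist (zstepn P Rw b x) (zstepn P Rw b y) \<le> \<delta>"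
  shows "D (a + b) \<le> \<delta> * D a"
proof (rule D_le)
  fix z assume z: "z \<in> Z'"
  define W where "W = insert z Z"
  have W: "finite W" "W \<subseteq> Z'" using finZ Z_sub z unfolding W_def by auto
  have s1: "set_pmf (zstepn P Rw a z) \<subseteq> W" unfolding W_def
    by (rule set_zstepn[OF closed]) (use z in auto)
  have s2: "set_pmf zs \<subseteq> W" using set_zs unfolding W_def by auto
  have "tv_dist (zstepn P Rw (a + b) z) zs =
        tv_dist (bind_pmf (zstepn P Rw a z) (zstepn P Rw b)) (bind_pmf zs (zstepn P Rw b))"
    by (simp add: zstepn_add zstat_stationary_n[OF mustat])
  also have "\<dots> \<le> \<delta> * tv_dist (zstepn P Rw a z) zs"
    using W(2) assms(2) by (intro dobrushin[OF W(1) s1 s2 assms(1)]) blast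
  also have "\<dots> \<le> \<delta> * D a" using D_ge[OF z] assms(1) by (intro mult_left_mono)
  finally show "tv_dist (zstepn P Rw (a + b) z) zs \<le> \<delta> * D a" .
qed

lemma D_mult: "D (a + b) \<le> 2 * D b * D a"
proof -
  have "D (a + b) \<le> (2 * D b) * D a"
  proof (rule D_comp)
    show "0 \<le> 2 * D b" using D_nonneg by simp
    fix x y assume "x \<in> Z'" "y \<in> Z'"
    then show "tv_dist (zstepn P Rw b x) (zstepn P Rw b y) \<le> 2 * D b"
      using tv_triangle[where p="zstepn P Rw b x" and q=zs and r="zstepn P Rw b y"] D_ge[of x b] D_ge[of y b]
      by (simp add: tv_sym[of zs])
  qed
  then show ?thesis by simp
qed

lemma D_Suc: "D (Suc n) \<le> D n"
  using D_comp[of 1 1 n] by (simp add: tv_le_1)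

lemma D_antimono: "m \<le> n \<Longrightarrow> D n \<le> D m"
proof (induction n)
  case 0 then show ?case by simp
next
  case (Suc n)
  then show ?case using D_Suc[of n] by (cases "m = Suc n") auto
qed

lemma D_0: "D 0 \<ge> 1"
proof -
  obtain s0 where s0: "s0 \<in> S" using Sne by blast
  have "finite ((\<lambda>(a,b). Rw a b) ` (S \<times> S))" using finS by simp
  then obtain r where r: "r \<notin> (\<lambda>(a,b). Rw a b) ` (S \<times> S)"
    using ex_new_if_finite[of "(\<lambda>(a,b). Rw a b) ` (S \<times> S)"] infinite_UNIV_char_0 by auto
  define z where "z = (s0, r, s0)"
  have zZ': "z \<in> Z'" using s0 unfolding z_def by auto
  have "z \<notin> Z" using r s0 unfolding z_def zset_def by auto
  then have "z \<notin> set_pmf zs" using set_zs by auto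
  then have "measure_pmf.prob zs {z} = 0" by (simp add: measure_pmf_single set_pmf_iff)
  then have "1 \<le> tv_dist (return_pmf z) zs"
    using tv_ge[of "return_pmf z" "{z}" zs] by simp
  also have "\<dots> \<le> D 0" using D_ge[OF zZ', of 0] by simp
  finally show ?thesis .
qed

lemma D_exists: "\<exists>n. D n \<le> 1/4"
proof -
  obtain N where N: "\<And>x y. x \<in> S \<Longrightarrow> y \<in> S \<Longrightarrow> y \<in> set_pmf (stepn P N x)"
    using primitive[OF finS closed] erg unfolding ergodic_on_def by blast
  obtain y0 where y0: "y0 \<in> S" using Sne by blast
  obtain y1 where y1: "y1 \<in> set_pmf (P y0)" using set_pmf_not_empty[of "P y0"] by blast
  define w0 where "w0 = (y0, Rw y0 y1, y1)"
  define f where "f s' = pmf (bind_pmf (stepn P N s') (zfirst P Rw)) w0" for s'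
  have fpos: "f s' > 0" if "s' \<in> S" for s'
  proof -
    have "w0 \<in> set_pmf (zfirst P Rw y0)" unfolding zfirst_def w0_def using y1 by auto
    then have "w0 \<in> set_pmf (bind_pmf (stepn P N s') (zfirst P Rw))" using N[OF that y0] by auto
    then show ?thesis unfolding f_def by (simp add: pmf_positive)
  qed
  define \<epsilon> where "\<epsilon> = Min (f ` S)"
  have eps_pos: "\<epsilon> > 0" unfolding \<epsilon>_def using finS Sne fpos by (subst Min_gr_iff) auto
  have eps_le: "\<epsilon> \<le> f s" if "s \<in> S" for s unfolding \<epsilon>_def using finS that by (intro Min_le) auto
  have eps1: "\<epsilon> \<le> 1" using eps_le[OF y0] pmf_le_1 unfolding f_def by (meson order_trans)
  have tvN: "tv_dist (zstepn P Rw (Suc N) x) (zstepn P Rw (Suc N) y) \<le> 1 - \<epsilon>" if "x \<in> Z'" "y \<in> Z'" for x y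
  proof (rule tv_le_overlap)
    show "\<epsilon> \<le> pmf (zstepn P Rw (Suc N) x) w0"
      using eps_le[of "snd (snd x)"] that(1) unfolding zstepn_Suc_stepn f_def by auto
    show "\<epsilon> \<le> pmf (zstepn P Rw (Suc N) y) w0"
      using eps_le[of "snd (snd y)"] that(2) unfolding zstepn_Suc_stepn f_def by auto
  qed
  have dec: "D (k * Suc N) \<le> (1 - \<epsilon>)^k" for k
  proof (induction k)
    case 0 then show ?case using D_le_1 by simp
  next
    case (Suc k)
    have "D (k * Suc N + Suc N) \<le> (1 - \<epsilon>) * D (k * Suc N)"
      by (rule D_comp) (use eps1 tvN in auto)
    also have "\<dots> \<le> (1 - \<epsilon>) * (1 - \<epsilon>)^k" using Suc eps1 by (intro mult_left_mono) auto
    finally have "D (k * Suc N + Suc N) \<le> (1 - \<epsilon>) ^ Suc k" by simp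
    moreover have "Suc k * Suc N = k * Suc N + Suc N" by simp
    ultimately show ?case by metis
  qed
  obtain k where "(1 - \<epsilon>)^k < 1/4" using real_arch_pow_inv[of "1/4" "1 - \<epsilon>"] eps_pos by auto
  then show ?thesis using dec[of k] by (intro exI[of _ "k * Suc N"]) simp
qed

definition tau where "tau = tau_mix S P Rw \<mu>"

lemma tau_prop: "D tau \<le> 1/4" and tau_pos: "tau \<ge> 1"
proof -
  have ne: "{n. D n \<le> 1/4} \<noteq> {}" using D_exists by auto
  have "tau \<in> {n. D n \<le> 1/4}" unfolding tau_def tau_mix_def by (rule Inf_nat_def1[OF ne])
  then show 1: "D tau \<le> 1/4" by simp
  show "tau \<ge> 1"
  proof (rule ccontr)
    assume "\<not> tau \<ge> 1"
    then have "tau = 0" by simp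
    then show False using 1 D_0 by simp
  qed
qed

lemma D_tau_pow: "D (k * tau) \<le> (1/2)^k"
proof (induction k)
  case 0 then show ?case using D_le_1 by simp
next
  case (Suc k)
  have "D (k * tau + tau) \<le> 2 * D tau * D (k * tau)" by (rule D_mult)
  also have "\<dots> \<le> 2 * (1/4) * (1/2)^k"
    using tau_prop Suc D_nonneg by (intro mult_mono) auto
  finally show ?case by (simp add: add.commute)
qed

definition cdec :: "nat \<Rightarrow> real" where "cdec n = (1/2) ^ (n div tau)"

lemma D_cdec: "D n \<le> cdec n"
proof -
  have "D n \<le> D ((n div tau) * tau)" by (rule D_antimono) simp
  also have "\<dots> \<le> cdec n" unfolding cdec_def by (rule D_tau_pow)
  finally show ?thesis .
qed

lemma cdec_nonneg: "0 \<le> cdec n" unfolding cdec_def by simp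

lemma cdec_le_1: "cdec n \<le> 1" unfolding cdec_def by (simp add: power_le_one)

lemma geo_half: "(\<Sum>m<n. (1/2::real)^m) \<le> 2"
proof -
  have "(\<Sum>m<n. (1/2::real)^m) = 2 - 2 * (1/2)^n" by (induction n) auto
  then show ?thesis by simp
qed

lemma sum_cdec: "(\<Sum>k<n. cdec k) \<le> 2 * tau"
proof -
  have "(\<Sum>k<n. cdec k) \<le> (\<Sum>k<n * tau. cdec k)"
    using tau_pos by (intro sum_mono2) (auto simp: cdec_nonneg)
  also have "\<dots> = (\<Sum>m<n. sum cdec {m * tau..<m * tau + tau})"
    by (rule sum.nat_group[symmetric])
  also have "\<dots> = (\<Sum>m<n. real tau * (1/2)^m)"
  proof (rule sum.cong[OF refl])
    fix m
    have "sum cdec {m * tau..<m * tau + tau} = sum (\<lambda>_. (1/2::real)^m) {m * tau..<m * tau + tau}"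
    proof (rule sum.cong[OF refl])
      fix k assume k: "k \<in> {m * tau..<m * tau + tau}"
      have "k div tau = m"
      proof -
        have "m * tau \<le> k" "k < (m + 1) * tau" using k by auto
        then show ?thesis using tau_pos
          by (metis add.commute div_nat_eqI mult.commute mult_Suc_right Suc_eq_plus1 less_eq_Suc_le)
      qed
      then show "cdec k = (1/2)^m" unfolding cdec_def by simp
    qed
    then show "sum cdec {m * tau..<m * tau + tau} = real tau * (1/2)^m" by simp
  qed
  also have "\<dots> = real tau * (\<Sum>m<n. (1/2)^m)" by (simp add: sum_distrib_left)
  also have "\<dots> \<le> real tau * 2" by (intro mult_left_mono geo_half) auto
  finally show ?thesis by simp
qed

end


section \<open>Markov concentration\<close>

definition avgv :: "nat \<Rightarrow> (sample \<Rightarrow> nat \<Rightarrow> real) \<Rightarrow> sample list \<Rightarrow> nat \<Rightarrow> real" where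
  "avgv N f zl = (\<lambda>i. (1 / real N) * (\<Sum>k<N. f (zl ! k) i))"

context tdl
begin

context
  fixes f :: "sample \<Rightarrow> nat \<Rightarrow> real" and m :: "nat \<Rightarrow> real" and G :: real
  assumes fb: "\<And>z. z \<in> Z \<Longrightarrow> vnorm d (f z) \<le> G"
    and hm: "\<And>b. measure_pmf.expectation zs (\<lambda>z. vinner d b (f z)) = vinner d b m"
begin

lemma G_nonneg: "0 \<le> G"
proof -
  obtain z where "z \<in> set_pmf zs" using set_pmf_not_empty[of zs] by blast
  then have "z \<in> Z" using set_zs by auto
  then show ?thesis using fb[of z] vnorm_nonneg[of d "f z"] by linarith
qed

lemma inner_f_bound: "z \<in> Z \<Longrightarrow> \<bar>vinner d b (f z)\<bar> \<le> vnorm d b * G"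
  using vinner_cs[of d b "f z"] fb[of z] vnorm_nonneg[of d b]
  by (meson mult_left_mono order_trans)

lemma m_bound: "vnorm d m \<le> G"
proof (rule vnorm_bound_by_inner[OF _ G_nonneg])
  fix b
  have "vinner d b m = measure_pmf.expectation zs (\<lambda>z. vinner d b (f z))" using hm by simp
  also have "\<dots> \<le> measure_pmf.expectation zs (\<lambda>z. vnorm d b * G)"
  proof (rule integral_mono_pmf)
    show "integrable (measure_pmf zs) (\<lambda>z. vinner d b (f z))"
      using set_zs inner_f_bound by (intro integrable_pmf_bounded[where B="vnorm d b * G"]) blast
    show "integrable (measure_pmf zs) (\<lambda>z. vnorm d b * G)" by simp
    fix z assume "z \<in> set_pmf zs"
    then have "z \<in> Z" using set_zs by blast
    then show "vinner d b (f z) \<le> vnorm d b * G" using inner_f_bound[of z b] by linarith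
  qed
  finally show "vinner d b m \<le> vnorm d b * G" by simp
qed

lemma fm_bound: "z \<in> Z \<Longrightarrow> vnorm d (\<lambda>i. f z i - m i) \<le> 2 * G"
  using vnorm_diff_triangle[of d "f z" m] fb[of z] m_bound by linarith

lemma core:
  assumes "set_pmf p \<subseteq> Z"
  shows "measure_pmf.expectation p (\<lambda>z. vinner d b (f z) - vinner d b m) \<le> vnorm d b * 2 * G * tv_dist p zs"
proof -
  let ?h = "\<lambda>z. vinner d b (f z)"
  have int: "integrable (measure_pmf p) ?h"
    using assms inner_f_bound by (intro integrable_pmf_bounded[where B="vnorm d b * G"]) auto
  have "measure_pmf.expectation p (\<lambda>z. ?h z - vinner d b m) = measure_pmf.expectation p ?h - vinner d b m"
    using int by (simp add: prob_space.prob_space measure_pmf.prob_space)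
  also have "\<dots> = measure_pmf.expectation p ?h - measure_pmf.expectation zs ?h" using hm by simp
  also have "\<dots> = (\<Sum>z\<in>Z. (pmf p z - pmf zs z) * ?h z)"
    by (simp add: integral_finite_support[OF finZ assms] integral_finite_support[OF finZ set_zs]
        sum_subtractf left_diff_distrib)
  also have "\<dots> \<le> 2 * (vnorm d b * G) * tv_dist p zs"
    by (rule tv_scalar[OF finZ assms set_zs inner_f_bound])
  finally show ?thesis by (simp add: mult_ac)
qed

lemma core_step:
  assumes "x \<in> Z"
  shows "measure_pmf.expectation (zstepn P Rw k x) (\<lambda>z. vinner d b (f z) - vinner d b m) \<le> vnorm d b * 2 * G * cdec k"
proof -
  have "measure_pmf.expectation (zstepn P Rw k x) (\<lambda>z. vinner d b (f z) - vinner d b m)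
        \<le> vnorm d b * 2 * G * tv_dist (zstepn P Rw k x) zs"
    by (rule core[OF set_zstepn_zset[OF closed assms]])
  also have "\<dots> \<le> vnorm d b * 2 * G * cdec k"
  proof (rule mult_left_mono)
    have "x \<in> Z'" using assms Z_sub by auto
    then show "tv_dist (zstepn P Rw k x) zs \<le> cdec k" using D_ge D_cdec order_trans by blast
    show "0 \<le> vnorm d b * 2 * G" using G_nonneg vnorm_nonneg by simp
  qed
  finally show ?thesis .
qed

lemma samples_Z:
  assumes "s \<in> S" "p \<in> set_pmf (samples P Rw N s)" "k < N"
  shows "fst p ! k \<in> Z"
  using set_samples[OF closed assms(1,2)] assms(3) by auto

lemma nth_bound:
  assumes "s \<in> S" "k < N"
  shows "measure_pmf.expectation (samples P Rw N s) (\<lambda>p. vinner d b (f (fst p ! k)) - vinner d b m)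
         \<le> vnorm d b * 2 * G * cdec k"
proof -
  let ?F = "\<lambda>z. vinner d b (f z) - vinner d b m"
  have bndF: "\<bar>?F z\<bar> \<le> vnorm d b * G + vnorm d b * G" if "z \<in> Z" for z
    using inner_f_bound[OF that, of b] vinner_cs[of d b m] m_bound vnorm_nonneg[of d b]
    by (smt (verit, best) mult_left_mono)
  have "measure_pmf.expectation (samples P Rw N s) (\<lambda>p. ?F (fst p ! k)) =
        measure_pmf.expectation (map_pmf (\<lambda>p. fst p ! k) (samples P Rw N s)) ?F" by simp
  also have "\<dots> = measure_pmf.expectation (bind_pmf (zfirst P Rw s) (zstepn P Rw k)) ?F"
    using samples_nth[OF assms(2)] by simp
  also have "\<dots> = measure_pmf.expectation (zfirst P Rw s) (\<lambda>x. measure_pmf.expectation (zstepn P Rw k x) ?F)"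
  proof (rule integral_bind_pmf_bounded[where B="vnorm d b * G + vnorm d b * G"])
    fix z assume "z \<in> set_pmf (bind_pmf (zfirst P Rw s) (zstepn P Rw k))"
    then have "z \<in> Z" using set_zfirst[OF closed assms(1)] set_zstepn_zset[OF closed] by fastforce
    then show "\<bar>?F z\<bar> \<le> vnorm d b * G + vnorm d b * G" by (rule bndF)
  qed
  also have "\<dots> \<le> measure_pmf.expectation (zfirst P Rw s) (\<lambda>x. vnorm d b * 2 * G * cdec k)"
  proof (rule integral_mono_pmf)
    show "integrable (measure_pmf (zfirst P Rw s)) (\<lambda>x. measure_pmf.expectation (zstepn P Rw k x) ?F)"
    proof (rule integrable_pmf_bounded[where B="vnorm d b * G + vnorm d b * G"])
      fix x assume x: "x \<in> set_pmf (zfirst P Rw s)"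
      then have xZ: "x \<in> Z" using set_zfirst[OF closed assms(1)] by auto
      have "\<bar>measure_pmf.expectation (zstepn P Rw k x) ?F\<bar> \<le> measure_pmf.expectation (zstepn P Rw k x) (\<lambda>z. \<bar>?F z\<bar>)"
        by (rule integral_abs_bound)
      also have "\<dots> \<le> measure_pmf.expectation (zstepn P Rw k x) (\<lambda>z. vnorm d b * G + vnorm d b * G)"
        using bndF set_zstepn_zset[OF closed xZ]
        by (intro integral_mono_pmf integrable_pmf_bounded[where B="vnorm d b * G + vnorm d b * G"]) force+
      finally show "\<bar>measure_pmf.expectation (zstepn P Rw k x) ?F\<bar> \<le> vnorm d b * G + vnorm d b * G" by simp
    qed
    show "integrable (measure_pmf (zfirst P Rw s)) (\<lambda>x. vnorm d b * 2 * G * cdec k)" by simp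
    fix x assume "x \<in> set_pmf (zfirst P Rw s)"
    then have "x \<in> Z" using set_zfirst[OF closed assms(1)] by auto
    then show "measure_pmf.expectation (zstepn P Rw k x) ?F \<le> vnorm d b * 2 * G * cdec k"
      by (rule core_step)
  qed
  also have "\<dots> = vnorm d b * 2 * G * cdec k" by simp
  finally show ?thesis .
qed

lemma pair_bound:
  assumes "s \<in> S" "i < j" "j < N"
  shows "measure_pmf.expectation (samples P Rw N s)
           (\<lambda>p. vinner d (\<lambda>l. f (fst p ! i) l - m l) (\<lambda>l. f (fst p ! j) l - m l))
         \<le> 2 * G * (2 * G) * cdec (j - i)"
proof -
  define H where "H = (\<lambda>(a, w). vinner d (\<lambda>l. f a l - m l) (\<lambda>l. f w l - m l))"
  define \<rho> where "\<rho> = map_pmf (\<lambda>p. fst p ! i) (samples P Rw N s)"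
  have rhoZ: "set_pmf \<rho> \<subseteq> Z" unfolding \<rho>_def using samples_Z[OF assms(1)] assms by auto
  have Hb: "\<bar>H (a, w)\<bar> \<le> 2 * G * (2 * G)" if "a \<in> Z" "w \<in> Z" for a w
  proof -
    have "\<bar>H (a, w)\<bar> \<le> vnorm d (\<lambda>l. f a l - m l) * vnorm d (\<lambda>l. f w l - m l)"
      unfolding H_def by (simp add: vinner_cs)
    also have "\<dots> \<le> 2 * G * (2 * G)"
      using fm_bound[OF that(1)] fm_bound[OF that(2)] G_nonneg by (intro mult_mono) (auto simp: vnorm_nonneg)
    finally show ?thesis .
  qed
  have "measure_pmf.expectation (samples P Rw N s)
           (\<lambda>p. vinner d (\<lambda>l. f (fst p ! i) l - m l) (\<lambda>l. f (fst p ! j) l - m l)) =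
        measure_pmf.expectation (map_pmf (\<lambda>p. (fst p ! i, fst p ! j)) (samples P Rw N s)) H"
    by (simp add: H_def)
  also have "\<dots> = measure_pmf.expectation (bind_pmf \<rho> (\<lambda>a. map_pmf (Pair a) (zstepn P Rw (j - i) a))) H"
    unfolding \<rho>_def using samples_pair[OF assms(2,3)] by simp
  also have "\<dots> = measure_pmf.expectation \<rho> (\<lambda>a. measure_pmf.expectation (map_pmf (Pair a) (zstepn P Rw (j - i) a)) H)"
  proof (rule integral_bind_pmf_bounded[where B="2 * G * (2 * G)"])
    fix x assume "x \<in> set_pmf (bind_pmf \<rho> (\<lambda>a. map_pmf (Pair a) (zstepn P Rw (j - i) a)))"
    then obtain a w where x: "x = (a, w)" "a \<in> set_pmf \<rho>" "w \<in> set_pmf (zstepn P Rw (j - i) a)" by auto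
    have aZ: "a \<in> Z" using x(2) rhoZ by auto
    have "w \<in> Z" using x(3) set_zstepn_zset[OF closed aZ] by auto
    then show "\<bar>H x\<bar> \<le> 2 * G * (2 * G)" using Hb aZ x(1) by simp
  qed
  also have "\<dots> \<le> measure_pmf.expectation \<rho> (\<lambda>a. 2 * G * (2 * G) * cdec (j - i))"
  proof (rule integral_mono_pmf)
    show "integrable (measure_pmf \<rho>) (\<lambda>a. measure_pmf.expectation (map_pmf (Pair a) (zstepn P Rw (j - i) a)) H)"
    proof (rule integrable_pmf_bounded[where B="2 * G * (2 * G)"])
      fix a assume "a \<in> set_pmf \<rho>"
      then have aZ: "a \<in> Z" using rhoZ by auto
      have "\<bar>measure_pmf.expectation (map_pmf (Pair a) (zstepn P Rw (j - i) a)) H\<bar>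
            \<le> measure_pmf.expectation (zstepn P Rw (j - i) a) (\<lambda>w. \<bar>H (a, w)\<bar>)"
        using integral_abs_bound[of "measure_pmf (zstepn P Rw (j - i) a)" "\<lambda>w. H (a, w)"] by simp
      also have "\<dots> \<le> measure_pmf.expectation (zstepn P Rw (j - i) a) (\<lambda>w. 2 * G * (2 * G))"
      proof (rule integral_mono_pmf)
        show "integrable (measure_pmf (zstepn P Rw (j - i) a)) (\<lambda>w. \<bar>H (a, w)\<bar>)"
        proof (rule integrable_pmf_bounded[where B="2 * G * (2 * G)"])
          fix w assume "w \<in> set_pmf (zstepn P Rw (j - i) a)"
          then have "w \<in> Z" using set_zstepn_zset[OF closed aZ] by blast
          then show "\<bar>\<bar>H (a, w)\<bar>\<bar> \<le> 2 * G * (2 * G)" using Hb aZ by simp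
        qed
      next
        fix w assume "w \<in> set_pmf (zstepn P Rw (j - i) a)"
        then have "w \<in> Z" using set_zstepn_zset[OF closed aZ] by blast
        then show "\<bar>H (a, w)\<bar> \<le> 2 * G * (2 * G)" using Hb aZ by blast
      qed simp
      finally show "\<bar>measure_pmf.expectation (map_pmf (Pair a) (zstepn P Rw (j - i) a)) H\<bar> \<le> 2 * G * (2 * G)"
        by simp
    qed
  next
    fix a assume "a \<in> set_pmf \<rho>"
    then have aZ: "a \<in> Z" using rhoZ by auto
    have "measure_pmf.expectation (map_pmf (Pair a) (zstepn P Rw (j - i) a)) H =
          measure_pmf.expectation (zstepn P Rw (j - i) a)
            (\<lambda>w. vinner d (\<lambda>l. f a l - m l) (f w) - vinner d (\<lambda>l. f a l - m l) m)"
      by (simp add: H_def vinner_diff_right)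
    also have "\<dots> \<le> vnorm d (\<lambda>l. f a l - m l) * 2 * G * cdec (j - i)"
      by (rule core_step[OF aZ])
    also have "\<dots> \<le> 2 * G * 2 * G * cdec (j - i)"
      using fm_bound[OF aZ] G_nonneg cdec_nonneg[of "j - i"]
      by (intro mult_right_mono) auto
    finally show "measure_pmf.expectation (map_pmf (Pair a) (zstepn P Rw (j - i) a)) H
                  \<le> 2 * G * (2 * G) * cdec (j - i)" by (simp add: mult_ac)
  qed simp
  also have "\<dots> = 2 * G * (2 * G) * cdec (j - i)" by simp
  finally show ?thesis .
qed

lemma sum_cdec_abs:
  assumes "i < N"
  shows "(\<Sum>j<N. cdec (if i \<le> j then j - i else i - j)) \<le> 4 * tau"
proof -
  have A: "(\<Sum>j<N. if i \<le> j then cdec (j - i) else 0) \<le> (\<Sum>k<N. cdec k)"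
  proof -
    have "(\<Sum>j<N. if i \<le> j then cdec (j - i) else 0) = (\<Sum>j\<in>{j\<in>{..<N}. i \<le> j}. cdec (j - i))"
      by (rule sum.inter_filter[symmetric]) simp
    also have "{j\<in>{..<N}. i \<le> j} = {0 + i..<(N - i) + i}" using assms by auto
    also have "(\<Sum>j\<in>{0 + i..<(N - i) + i}. cdec (j - i)) = (\<Sum>k\<in>{0..<N - i}. cdec k)"
      by (subst sum.shift_bounds_nat_ivl) simp
    also have "\<dots> \<le> (\<Sum>k<N. cdec k)"
      by (intro sum_mono2) (auto simp: cdec_nonneg)
    finally show ?thesis .
  qed
  have B: "(\<Sum>j<N. if j \<le> i then cdec (i - j) else 0) \<le> (\<Sum>k<N. cdec k)"
  proof -
    have "(\<Sum>j<N. if j \<le> i then cdec (i - j) else 0) = (\<Sum>j\<in>{j\<in>{..<N}. j \<le> i}. cdec (i - j))"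
      by (rule sum.inter_filter[symmetric]) simp
    also have "{j\<in>{..<N}. j \<le> i} = {..<Suc i}" using assms by auto
    also have "(\<Sum>j\<in>{..<Suc i}. cdec (i - j)) = (\<Sum>k<Suc i. cdec k)"
      using sum.nat_diff_reindex[of "cdec" "Suc i"] by simp
    also have "\<dots> \<le> (\<Sum>k<N. cdec k)"
      using assms by (intro sum_mono2) (auto simp: cdec_nonneg)
    finally show ?thesis .
  qed
  have "(\<Sum>j<N. cdec (if i \<le> j then j - i else i - j)) \<le>
        (\<Sum>j<N. (if i \<le> j then cdec (j - i) else 0) + (if j \<le> i then cdec (i - j) else 0))"
    by (intro sum_mono) (auto simp: cdec_nonneg)
  also have "\<dots> = (\<Sum>j<N. if i \<le> j then cdec (j - i) else 0) + (\<Sum>j<N. if j \<le> i then cdec (i - j) else 0)"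
    by (rule sum.distrib)
  finally show ?thesis using A B sum_cdec[of N] by linarith
qed

lemma avg_sq_expand:
  assumes "N > 0"
  shows "(vnorm d (\<lambda>l. avgv N f zl l - m l))^2 =
         (1 / real N)^2 * (\<Sum>i<N. \<Sum>j<N. vinner d (\<lambda>l. f (zl ! i) l - m l) (\<lambda>l. f (zl ! j) l - m l))"
proof -
  have eq: "(\<lambda>l. avgv N f zl l - m l) = (\<lambda>l. (1 / real N) * (\<Sum>k<N. f (zl ! k) l - m l))"
    using assms by (auto simp: avgv_def sum_subtractf field_simps)
  show ?thesis
    unfolding vnorm_sq eq vinner_scale_left vinner_scale_right vinner_sum_left vinner_sum_right
    by (simp add: power2_eq_square sum_distrib_left)
qed

lemma var_bound:
  assumes s: "s \<in> S" and N: "N > 0"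
  shows "measure_pmf.expectation (samples P Rw N s) (\<lambda>p. (vnorm d (\<lambda>l. avgv N f (fst p) l - m l))^2)
         \<le> 16 * G^2 * tau / N"
proof -
  define E where "E i j = measure_pmf.expectation (samples P Rw N s)
           (\<lambda>p. vinner d (\<lambda>l. f (fst p ! i) l - m l) (\<lambda>l. f (fst p ! j) l - m l))" for i j
  have intg: "integrable (measure_pmf (samples P Rw N s))
           (\<lambda>p. vinner d (\<lambda>l. f (fst p ! i) l - m l) (\<lambda>l. f (fst p ! j) l - m l))" if "i < N" "j < N" for i j
  proof (rule integrable_pmf_bounded[where B="2 * G * (2 * G)"])
    fix p assume p: "p \<in> set_pmf (samples P Rw N s)"
    have "\<bar>vinner d (\<lambda>l. f (fst p ! i) l - m l) (\<lambda>l. f (fst p ! j) l - m l)\<bar>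
          \<le> vnorm d (\<lambda>l. f (fst p ! i) l - m l) * vnorm d (\<lambda>l. f (fst p ! j) l - m l)" by (rule vinner_cs)
    also have "\<dots> \<le> 2 * G * (2 * G)"
      using fm_bound[OF samples_Z[OF s p that(1)]] fm_bound[OF samples_Z[OF s p that(2)]] G_nonneg
      by (intro mult_mono) (auto simp: vnorm_nonneg)
    finally show "\<bar>vinner d (\<lambda>l. f (fst p ! i) l - m l) (\<lambda>l. f (fst p ! j) l - m l)\<bar> \<le> 2 * G * (2 * G)" .
  qed
  have Eb: "E i j \<le> 2 * G * (2 * G) * cdec (if i \<le> j then j - i else i - j)" if "i < N" "j < N" for i j
  proof (cases "i = j")
    case True
    have "E i j \<le> measure_pmf.expectation (samples P Rw N s) (\<lambda>p. 2 * G * (2 * G))"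
      unfolding E_def
    proof (rule integral_mono_pmf[OF intg[OF that]])
      fix p assume p: "p \<in> set_pmf (samples P Rw N s)"
      have "vinner d (\<lambda>l. f (fst p ! i) l - m l) (\<lambda>l. f (fst p ! j) l - m l)
            \<le> vnorm d (\<lambda>l. f (fst p ! i) l - m l) * vnorm d (\<lambda>l. f (fst p ! j) l - m l)" by (rule vinner_le)
      also have "\<dots> \<le> 2 * G * (2 * G)"
        using fm_bound[OF samples_Z[OF s p that(1)]] fm_bound[OF samples_Z[OF s p that(2)]] G_nonneg
        by (intro mult_mono) (auto simp: vnorm_nonneg)
      finally show "vinner d (\<lambda>l. f (fst p ! i) l - m l) (\<lambda>l. f (fst p ! j) l - m l) \<le> 2 * G * (2 * G)" .
    qed simp
    then show ?thesis using True by (simp add: cdec_def)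
  next
    case False
    show ?thesis
    proof (cases "i < j")
      case True
      then show ?thesis using pair_bound[OF s True that(2)] unfolding E_def by simp
    next
      case False
      then have "j < i" using \<open>i \<noteq> j\<close> by simp
      have "E i j = E j i" unfolding E_def by (subst vinner_comm) (rule refl)
      then show ?thesis using pair_bound[OF s \<open>j < i\<close> that(1)] \<open>j < i\<close> unfolding E_def by simp
    qed
  qed
  have "measure_pmf.expectation (samples P Rw N s) (\<lambda>p. (vnorm d (\<lambda>l. avgv N f (fst p) l - m l))^2)
        = measure_pmf.expectation (samples P Rw N s) (\<lambda>p. (1 / real N)^2 *
            (\<Sum>i<N. \<Sum>j<N. vinner d (\<lambda>l. f (fst p ! i) l - m l) (\<lambda>l. f (fst p ! j) l - m l)))"
    using avg_sq_expand[OF N] by simp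
  also have "\<dots> = (1 / real N)^2 * (\<Sum>i<N. \<Sum>j<N. E i j)"
  proof -
    have "measure_pmf.expectation (samples P Rw N s) (\<lambda>p. (1 / real N)^2 *
            (\<Sum>i<N. \<Sum>j<N. vinner d (\<lambda>l. f (fst p ! i) l - m l) (\<lambda>l. f (fst p ! j) l - m l)))
          = (1 / real N)^2 * measure_pmf.expectation (samples P Rw N s) (\<lambda>p.
            (\<Sum>i<N. \<Sum>j<N. vinner d (\<lambda>l. f (fst p ! i) l - m l) (\<lambda>l. f (fst p ! j) l - m l)))"
      by (rule integral_mult_right_zero)
    also have "measure_pmf.expectation (samples P Rw N s) (\<lambda>p.
            (\<Sum>i<N. \<Sum>j<N. vinner d (\<lambda>l. f (fst p ! i) l - m l) (\<lambda>l. f (fst p ! j) l - m l)))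
          = (\<Sum>i<N. measure_pmf.expectation (samples P Rw N s) (\<lambda>p.
             \<Sum>j<N. vinner d (\<lambda>l. f (fst p ! i) l - m l) (\<lambda>l. f (fst p ! j) l - m l)))"
      by (rule Bochner_Integration.integral_sum) (use intg in auto)
    also have "\<dots> = (\<Sum>i<N. \<Sum>j<N. E i j)"
      unfolding E_def by (rule sum.cong[OF refl], rule Bochner_Integration.integral_sum) (use intg in auto)
    finally show ?thesis .
  qed
  also have "\<dots> \<le> (1 / real N)^2 * (\<Sum>i<N. \<Sum>j<N. 2 * G * (2 * G) * cdec (if i \<le> j then j - i else i - j))"
    using Eb by (intro mult_left_mono sum_mono) auto
  also have "\<dots> \<le> (1 / real N)^2 * (\<Sum>i<N. 2 * G * (2 * G) * (4 * tau))"
  proof (intro mult_left_mono sum_mono)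
    fix i assume "i \<in> {..<N}"
    then have "(\<Sum>j<N. cdec (if i \<le> j then j - i else i - j)) \<le> 4 * tau" using sum_cdec_abs by simp
    then show "(\<Sum>j<N. 2 * G * (2 * G) * cdec (if i \<le> j then j - i else i - j)) \<le> 2 * G * (2 * G) * (4 * tau)"
    proof -
      have "(\<Sum>j<N. 2 * G * (2 * G) * cdec (if i \<le> j then j - i else i - j)) =
            2 * G * (2 * G) * (\<Sum>j<N. cdec (if i \<le> j then j - i else i - j))"
        by (simp add: sum_distrib_left)
      also have "\<dots> \<le> 2 * G * (2 * G) * (4 * tau)"
        using G_nonneg \<open>(\<Sum>j<N. cdec (if i \<le> j then j - i else i - j)) \<le> 4 * tau\<close>
        by (intro mult_left_mono) auto
      finally show ?thesis .
    qed
  qed simp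
  also have "\<dots> = (1 / real N)^2 * (real N * (2 * G * (2 * G) * (4 * tau)))" by simp
  also have "\<dots> = 16 * G^2 * tau / N"
    using N by (simp add: power2_eq_square)
  finally show ?thesis .
qed

lemma bias_bound:
  assumes s: "s \<in> S" and N: "N > 0"
  shows "measure_pmf.expectation (samples P Rw N s) (\<lambda>p. vinner d b (avgv N f (fst p)) - vinner d b m)
         \<le> vnorm d b * 2 * G * (2 * tau) / N"
proof -
  have eq: "vinner d b (avgv N f zl) - vinner d b m = (1 / real N) * (\<Sum>k<N. vinner d b (f (zl ! k)) - vinner d b m)" for zl
  proof -
    have "vinner d b (avgv N f zl) = (1 / real N) * (\<Sum>k<N. vinner d b (f (zl ! k)))"
      unfolding avgv_def vinner_scale_right vinner_sum_right by simp
    moreover have "(\<Sum>k<N. vinner d b (f (zl ! k)) - vinner d b m) = (\<Sum>k<N. vinner d b (f (zl ! k))) - real N * vinner d b m"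
      by (simp add: sum_subtractf)
    ultimately show ?thesis using N by (simp add: right_diff_distrib)
  qed
  have intg: "integrable (measure_pmf (samples P Rw N s)) (\<lambda>p. vinner d b (f (fst p ! k)) - vinner d b m)" if "k < N" for k
  proof (rule integrable_pmf_bounded[where B="vnorm d b * G + vnorm d b * G"])
    fix p assume p: "p \<in> set_pmf (samples P Rw N s)"
    show "\<bar>vinner d b (f (fst p ! k)) - vinner d b m\<bar> \<le> vnorm d b * G + vnorm d b * G"
      using inner_f_bound[OF samples_Z[OF s p that], of b] vinner_cs[of d b m] m_bound vnorm_nonneg[of d b]
      by (smt (verit, best) mult_left_mono)
  qed
  have "measure_pmf.expectation (samples P Rw N s) (\<lambda>p. vinner d b (avgv N f (fst p)) - vinner d b m)
        = (1 / real N) * (\<Sum>k<N. measure_pmf.expectation (samples P Rw N s) (\<lambda>p. vinner d b (f (fst p ! k)) - vinner d b m))"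
    unfolding eq using intg by (simp add: Bochner_Integration.integral_sum)
  also have "\<dots> \<le> (1 / real N) * (\<Sum>k<N. vnorm d b * 2 * G * cdec k)"
    using nth_bound[OF s] by (intro mult_left_mono sum_mono) auto
  also have "\<dots> = (1 / real N) * (vnorm d b * 2 * G) * (\<Sum>k<N. cdec k)"
    by (simp add: sum_distrib_left)
  also have "\<dots> \<le> (1 / real N) * (vnorm d b * 2 * G) * (2 * tau)"
    using sum_cdec[of N] G_nonneg vnorm_nonneg[of d b] by (intro mult_left_mono) auto
  finally show ?thesis by simp
qed

end

end


context tdl
begin

abbreviation "G \<equiv> rmax + 2 * R"

lemma rmax_nonneg: "0 \<le> rmax"
  using Sne rbound by (metis abs_ge_zero all_not_in_conv order_trans)

lemma G_pos: "0 < G" using rmax_nonneg Rpos by simp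

lemma sum_P: "s \<in> S \<Longrightarrow> (\<Sum>s'\<in>S. pmf (P s) s') = 1"
  using closed finS by (intro sum_pmf_eq_1) auto

lemma sum_mu: "(\<Sum>s\<in>S. pmf \<mu> s) = 1"
  using musub finS by (intro sum_pmf_eq_1) auto

lemma mu_stat: "s' \<in> S \<Longrightarrow> (\<Sum>s\<in>S. pmf \<mu> s * pmf (P s) s') = pmf \<mu> s'"
proof -
  assume "s' \<in> S"
  have "pmf \<mu> s' = pmf (bind_pmf \<mu> P) s'" using mustat by simp
  also have "\<dots> = measure_pmf.expectation \<mu> (\<lambda>s. pmf (P s) s')" by (rule pmf_bind)
  also have "\<dots> = (\<Sum>s\<in>S. pmf \<mu> s * pmf (P s) s')" by (rule integral_finite_support[OF finS musub])
  finally show ?thesis by simp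
qed

lemma V_bound: "s \<in> S \<Longrightarrow> vnorm d \<theta> \<le> R \<Longrightarrow> \<bar>Vf d \<phi> \<theta> s\<bar> \<le> R"
  unfolding Vf_def using vinner_cs[of d "\<phi> s" \<theta>] phi(2)[of s] vnorm_nonneg[of d \<theta>]
  by (smt (verit, best) mult_right_mono mult_cancel_right1)

lemma sgrad_bound:
  assumes "vnorm d \<theta> \<le> R" "z \<in> Z"
  shows "vnorm d (sgrad d \<phi> \<gamma> \<theta> z) \<le> G"
proof -
  obtain s s' where z: "z = (s, Rw s s', s')" "s \<in> S" "s' \<in> S" using assms(2) unfolding zset_def by auto
  define c where "c = Rw s s' + \<gamma> * Vf d \<phi> \<theta> s' - Vf d \<phi> \<theta> s"
  have "sgrad d \<phi> \<gamma> \<theta> z = (\<lambda>i. c * \<phi> s i)" unfolding sgrad_def c_def z by simp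
  then have "vnorm d (sgrad d \<phi> \<gamma> \<theta> z) = \<bar>c\<bar> * vnorm d (\<phi> s)" by (simp add: vnorm_scale)
  also have "\<dots> \<le> \<bar>c\<bar> * 1" using phi(2)[OF z(2)] by (intro mult_left_mono) auto
  also have "\<bar>c\<bar> \<le> rmax + \<gamma> * R + R"
  proof -
    have "\<bar>\<gamma> * Vf d \<phi> \<theta> s'\<bar> \<le> \<gamma> * R"
      using V_bound[OF z(3) assms(1)] gam by (simp add: abs_mult mult_left_mono)
    then show ?thesis unfolding c_def using rbound[OF z(2,3)] V_bound[OF z(2) assms(1)] by linarith
  qed
  then have "\<bar>c\<bar> * 1 \<le> G" using gam Rpos
    by (smt (verit) mult_left_le_one_le mult_nonneg_nonneg)
  finally show ?thesis .
qed

lemma expect_zs: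
  assumes "\<And>z. z \<in> Z \<Longrightarrow> \<bar>h z\<bar> \<le> B"
  shows "measure_pmf.expectation zs h = (\<Sum>s\<in>S. \<Sum>s'\<in>S. pmf \<mu> s * pmf (P s) s' * h (s, Rw s s', s'))"
proof -
  have "measure_pmf.expectation zs h = measure_pmf.expectation \<mu> (\<lambda>s. measure_pmf.expectation (zfirst P Rw s) h)"
    unfolding zstat_eq
  proof (rule integral_bind_pmf_bounded[where B=B])
    fix z assume "z \<in> set_pmf (bind_pmf \<mu> (zfirst P Rw))"
    then have "z \<in> Z" using set_zs unfolding zstat_eq by auto
    then show "\<bar>h z\<bar> \<le> B" by (rule assms)
  qed
  also have "\<dots> = (\<Sum>s\<in>S. pmf \<mu> s * measure_pmf.expectation (zfirst P Rw s) h)"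
    by (rule integral_finite_support[OF finS musub])
  also have "\<dots> = (\<Sum>s\<in>S. \<Sum>s'\<in>S. pmf \<mu> s * pmf (P s) s' * h (s, Rw s s', s'))"
  proof (rule sum.cong[OF refl])
    fix s assume s: "s \<in> S"
    have "measure_pmf.expectation (zfirst P Rw s) h = measure_pmf.expectation (P s) (\<lambda>s'. h (s, Rw s s', s'))"
      unfolding zfirst_def by simp
    also have "\<dots> = (\<Sum>s'\<in>S. pmf (P s) s' * h (s, Rw s s', s'))"
      using closed s by (intro integral_finite_support[OF finS]) auto
    finally show "pmf \<mu> s * measure_pmf.expectation (zfirst P Rw s) h = (\<Sum>s'\<in>S. pmf \<mu> s * pmf (P s) s' * h (s, Rw s s', s'))"
      by (simp add: sum_distrib_left mult_ac)
  qed
  finally show ?thesis .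
qed

lemma gbar_inner:
  "vinner d b (gbar S P Rw \<mu> d \<phi> \<gamma> \<theta>) = (\<Sum>s\<in>S. \<Sum>s'\<in>S. pmf \<mu> s * pmf (P s) s' *
      ((Rw s s' + \<gamma> * Vf d \<phi> \<theta> s' - Vf d \<phi> \<theta> s) * vinner d b (\<phi> s)))"
  unfolding gbar_def vinner_def
  by (simp add: sum_distrib_left sum_distrib_right mult_ac sum.swap[of _ "{..<d}"])

lemma sgrad_inner: "vinner d b (sgrad d \<phi> \<gamma> \<theta> (s, r, s')) = (r + \<gamma> * Vf d \<phi> \<theta> s' - Vf d \<phi> \<theta> s) * vinner d b (\<phi> s)"
  unfolding sgrad_def by (simp add: vinner_scale_right)

lemma hm_gbar:
  assumes "vnorm d \<theta> \<le> R"
  shows "measure_pmf.expectation zs (\<lambda>z. vinner d b (sgrad d \<phi> \<gamma> \<theta> z)) = vinner d b (gbar S P Rw \<mu> d \<phi> \<gamma> \<theta>)"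
proof -
  have "measure_pmf.expectation zs (\<lambda>z. vinner d b (sgrad d \<phi> \<gamma> \<theta> z)) =
        (\<Sum>s\<in>S. \<Sum>s'\<in>S. pmf \<mu> s * pmf (P s) s' * vinner d b (sgrad d \<phi> \<gamma> \<theta> (s, Rw s s', s')))"
  proof (rule expect_zs)
    fix z assume "z \<in> Z"
    then show "\<bar>vinner d b (sgrad d \<phi> \<gamma> \<theta> z)\<bar> \<le> vnorm d b * G"
      using vinner_cs[of d b] sgrad_bound[OF assms] vnorm_nonneg[of d b]
      by (meson mult_left_mono order_trans)
  qed
  then show ?thesis by (simp add: gbar_inner sgrad_inner)
qed

lemma td_ineq:
  "(1 - \<gamma>) * errM S \<mu> d \<phi> \<theta>s \<theta> \<le> vinner d (\<lambda>i. \<theta>s i - \<theta> i) (gbar S P Rw \<mu> d \<phi> \<gamma> \<theta>)"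
proof -
  define a where "a = (\<lambda>i. \<theta>s i - \<theta> i)"
  define v where "v s = vinner d (\<phi> s) a" for s
  define w where "w s s' = pmf \<mu> s * pmf (P s) s'" for s s'
  have w0: "0 \<le> w s s'" for s s' unfolding w_def by simp
  have vV: "Vf d \<phi> \<theta>s s - Vf d \<phi> \<theta> s = v s" for s
    unfolding Vf_def v_def a_def by (simp add: vinner_diff_right)
  have ainner: "vinner d a (\<phi> s) = v s" for s unfolding v_def by (simp add: vinner_comm)
  have g0: "vinner d a (gbar S P Rw \<mu> d \<phi> \<gamma> \<theta>s) = 0" using ths(2) by simp
  have "vinner d a (gbar S P Rw \<mu> d \<phi> \<gamma> \<theta>) = vinner d a (gbar S P Rw \<mu> d \<phi> \<gamma> \<theta>) - vinner d a (gbar S P Rw \<mu> d \<phi> \<gamma> \<theta>s)"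
    using g0 by simp
  also have "\<dots> = (\<Sum>s\<in>S. \<Sum>s'\<in>S. w s s' * ((v s - \<gamma> * v s') * v s))"
    unfolding gbar_inner ainner w_def
    by (simp add: sum_subtractf[symmetric] vV[symmetric] algebra_simps)
  finally have eq: "vinner d a (gbar S P Rw \<mu> d \<phi> \<gamma> \<theta>) = (\<Sum>s\<in>S. \<Sum>s'\<in>S. w s s' * ((v s - \<gamma> * v s') * v s))" .
  have "(\<Sum>s\<in>S. \<Sum>s'\<in>S. w s s' * ((v s - \<gamma> * v s') * v s)) \<ge>
        (\<Sum>s\<in>S. \<Sum>s'\<in>S. w s s' * ((v s)^2 - \<gamma> * ((v s)^2 + (v s')^2) / 2))"
  proof (intro sum_mono mult_left_mono w0)
    fix s s'
    have id: "(v s - \<gamma> * v s') * v s - ((v s)^2 - \<gamma> * ((v s)^2 + (v s')^2) / 2) = \<gamma> * (v s - v s')^2 / 2"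
      by (simp add: power2_eq_square field_simps)
    have "0 \<le> \<gamma> * (v s - v s')^2 / 2" using gam by simp
    then show "(v s)^2 - \<gamma> * ((v s)^2 + (v s')^2) / 2 \<le> (v s - \<gamma> * v s') * v s"
      using id by linarith
  qed
  also have "(\<Sum>s\<in>S. \<Sum>s'\<in>S. w s s' * ((v s)^2 - \<gamma> * ((v s)^2 + (v s')^2) / 2)) =
     (\<Sum>s\<in>S. \<Sum>s'\<in>S. w s s' * (v s)^2) - \<gamma> / 2 * (\<Sum>s\<in>S. \<Sum>s'\<in>S. w s s' * (v s)^2)
       - \<gamma> / 2 * (\<Sum>s\<in>S. \<Sum>s'\<in>S. w s s' * (v s')^2)"
  proof -
    have "(\<Sum>s\<in>S. \<Sum>s'\<in>S. w s s' * ((v s)^2 - \<gamma> * ((v s)^2 + (v s')^2) / 2)) =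
          (\<Sum>s\<in>S. \<Sum>s'\<in>S. w s s' * (v s)^2 - \<gamma> / 2 * (w s s' * (v s)^2) - \<gamma> / 2 * (w s s' * (v s')^2))"
      by (intro sum.cong refl) (simp add: field_simps)
    also have "\<dots> = (\<Sum>s\<in>S. \<Sum>s'\<in>S. w s s' * (v s)^2) - \<gamma> / 2 * (\<Sum>s\<in>S. \<Sum>s'\<in>S. w s s' * (v s)^2)
       - \<gamma> / 2 * (\<Sum>s\<in>S. \<Sum>s'\<in>S. w s s' * (v s')^2)"
      by (simp add: sum_subtractf sum_distrib_left)
    finally show ?thesis .
  qed
  also have "(\<Sum>s\<in>S. \<Sum>s'\<in>S. w s s' * (v s)^2) = (\<Sum>s\<in>S. pmf \<mu> s * (v s)^2)"
  proof (rule sum.cong[OF refl])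
    fix s assume "s \<in> S"
    then show "(\<Sum>s'\<in>S. w s s' * (v s)^2) = pmf \<mu> s * (v s)^2"
      using sum_P[of s] unfolding w_def by (simp add: sum_distrib_right[symmetric] sum_distrib_left[symmetric])
  qed
  also have "(\<Sum>s\<in>S. \<Sum>s'\<in>S. w s s' * (v s')^2) = (\<Sum>s'\<in>S. pmf \<mu> s' * (v s')^2)"
  proof -
    have "(\<Sum>s\<in>S. \<Sum>s'\<in>S. w s s' * (v s')^2) = (\<Sum>s'\<in>S. \<Sum>s\<in>S. w s s' * (v s')^2)"
      by (rule sum.swap)
    also have "\<dots> = (\<Sum>s'\<in>S. pmf \<mu> s' * (v s')^2)"
    proof (rule sum.cong[OF refl])
      fix s' assume "s' \<in> S"
      then show "(\<Sum>s\<in>S. w s s' * (v s')^2) = pmf \<mu> s' * (v s')^2"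
        using mu_stat[of s'] unfolding w_def by (simp add: sum_distrib_right[symmetric])
    qed
    finally show ?thesis .
  qed
  finally have "vinner d a (gbar S P Rw \<mu> d \<phi> \<gamma> \<theta>) \<ge> (1 - \<gamma>) * (\<Sum>s\<in>S. pmf \<mu> s * (v s)^2)"
    using eq by (simp add: algebra_simps)
  moreover have "errM S \<mu> d \<phi> \<theta>s \<theta> = (\<Sum>s\<in>S. pmf \<mu> s * (v s)^2)"
    unfolding errM_def by (simp add: vV)
  ultimately show ?thesis unfolding a_def by simp
qed

lemma errM_bound:
  assumes "vnorm d \<theta> \<le> R"
  shows "errM S \<mu> d \<phi> \<theta>s \<theta> \<le> 4 * R^2" and "0 \<le> errM S \<mu> d \<phi> \<theta>s \<theta>"
proof -
  have "errM S \<mu> d \<phi> \<theta>s \<theta> \<le> (\<Sum>s\<in>S. pmf \<mu> s * (4 * R^2))"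
    unfolding errM_def
  proof (intro sum_mono mult_left_mono)
    fix s assume s: "s \<in> S"
    have "\<bar>Vf d \<phi> \<theta>s s - Vf d \<phi> \<theta> s\<bar> \<le> 2 * R"
      using V_bound[OF s thsR] V_bound[OF s assms] by linarith
    then have "(Vf d \<phi> \<theta>s s - Vf d \<phi> \<theta> s)^2 \<le> (2 * R)^2"
      by (metis abs_ge_zero power2_abs power_mono)
    then show "(Vf d \<phi> \<theta>s s - Vf d \<phi> \<theta> s)^2 \<le> 4 * R^2" by (simp add: power_mult_distrib)
  qed simp
  also have "\<dots> = 4 * R^2" using sum_mu by (simp add: sum_distrib_right[symmetric])
  finally show "errM S \<mu> d \<phi> \<theta>s \<theta> \<le> 4 * R^2" .
  show "0 \<le> errM S \<mu> d \<phi> \<theta>s \<theta>" unfolding errM_def by (intro sum_nonneg) simp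
qed

lemma errM_convex:
  assumes t: "(t::real) > 0"
  shows "(t + 1) * errM S \<mu> d \<phi> \<theta>s (\<lambda>i. (acc i + \<theta> i) / (t + 1))
         \<le> t * errM S \<mu> d \<phi> \<theta>s (\<lambda>i. acc i / t) + errM S \<mu> d \<phi> \<theta>s \<theta>"
proof -
  have pt: "(t + 1) * (c - (\<alpha> + \<beta>) / (t + 1))^2 \<le> t * (c - \<alpha> / t)^2 + (c - \<beta>)^2" for c \<alpha> \<beta> :: real
  proof -
    define x where "x = c - \<alpha> / t"
    define y where "y = c - \<beta>"
    have tx: "t * x = t * c - \<alpha>" using t by (simp add: x_def field_simps)
    have e1: "c - (\<alpha> + \<beta>) / (t + 1) = (t * x + y) / (t + 1)"
      unfolding tx y_def using t by (simp add: field_simps)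
    have "(t * x + y)^2 \<le> (t + 1) * (t * x^2 + y^2)"
    proof -
      have "0 \<le> t * (x - y)^2" using t by simp
      then show ?thesis by (simp add: power2_eq_square algebra_simps)
    qed
    then have "(t * x + y)^2 / (t + 1) \<le> t * x^2 + y^2" using t by (simp add: field_simps)
    moreover have "(t + 1) * ((t * x + y) / (t + 1))^2 = (t * x + y)^2 / (t + 1)"
      using t by (simp add: power2_eq_square)
    ultimately show ?thesis unfolding e1 x_def[symmetric] y_def[symmetric] by simp
  qed
  have V1: "Vf d \<phi> (\<lambda>i. (acc i + \<theta> i) / (t + 1)) s = (Vf d \<phi> acc s + Vf d \<phi> \<theta> s) / (t + 1)" for s
    unfolding Vf_def vinner_def by (simp add: sum_divide_distrib[symmetric] sum.distrib algebra_simps add_divide_distrib)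
  have V2: "Vf d \<phi> (\<lambda>i. acc i / t) s = Vf d \<phi> acc s / t" for s
    unfolding Vf_def vinner_def by (simp add: sum_divide_distrib[symmetric])
  show ?thesis
    unfolding errM_def V1 V2 sum_distrib_left sum.distrib[symmetric]
  proof (intro sum_mono)
    fix s
    let ?A = "(Vf d \<phi> \<theta>s s - (Vf d \<phi> acc s + Vf d \<phi> \<theta> s) / (t + 1))^2"
    let ?B = "(Vf d \<phi> \<theta>s s - Vf d \<phi> acc s / t)^2"
    let ?C = "(Vf d \<phi> \<theta>s s - Vf d \<phi> \<theta> s)^2"
    have "pmf \<mu> s * ((t + 1) * ?A) \<le> pmf \<mu> s * (t * ?B + ?C)"
      by (intro mult_left_mono pt) simp
    then show "(t + 1) * (pmf \<mu> s * ?A) \<le> t * (pmf \<mu> s * ?B) + pmf \<mu> s * ?C"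
      by (simp add: algebra_simps)
  qed
qed

end


section \<open>Projection\<close>

definition pjx :: "nat \<Rightarrow> real \<Rightarrow> (nat \<Rightarrow> real) \<Rightarrow> (nat \<Rightarrow> real)" where
  "pjx d R x = (if vnorm d x \<le> R then (\<lambda>i. if i < d then x i else 0)
                else (\<lambda>i. (R / vnorm d x) * (if i < d then x i else 0)))"

lemma vnorm_trunc: "vnorm d (\<lambda>i. if i < d then x i else 0) = vnorm d x"
  by (rule vnorm_cong) simp

lemma pjx_in:
  assumes "0 < R" shows "pjx d R x \<in> Kball d R"
proof (cases "vnorm d x \<le> R")
  case True then show ?thesis unfolding pjx_def Kball_def inRd_def by (simp add: vnorm_trunc)
next
  case False
  then have pos: "vnorm d x > 0" using assms by simp
  have "vnorm d (\<lambda>i. (R / vnorm d x) * (if i < d then x i else 0)) = \<bar>R / vnorm d x\<bar> * vnorm d (\<lambda>i. if i < d then x i else 0)"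
    by (rule vnorm_scale)
  also have "\<dots> = R" using pos assms by (simp add: vnorm_trunc)
  finally have "vnorm d (\<lambda>i. (R / vnorm d x) * (if i < d then x i else 0)) = R" .
  then show ?thesis using False unfolding pjx_def Kball_def inRd_def by simp
qed

lemma Kball_diff_trunc: "vnorm d (\<lambda>i. y i - x i) = vnorm d (\<lambda>i. y i - (if i < d then x i else 0))"
  by (rule vnorm_cong) simp

lemma pjx_min:
  assumes "0 < R" "y \<in> Kball d R"
  shows "vnorm d (\<lambda>i. pjx d R x i - x i) \<le> vnorm d (\<lambda>i. y i - x i)"
proof (cases "vnorm d x \<le> R")
  case True
  have "vnorm d (\<lambda>i. pjx d R x i - x i) = 0"
    unfolding pjx_def using True by (simp add: vnorm_zero_iff)
  then show ?thesis using vnorm_nonneg by simp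
next
  case False
  then have pos: "vnorm d x > 0" using assms by simp
  have "vnorm d (\<lambda>i. pjx d R x i - x i) = vnorm d (\<lambda>i. (R / vnorm d x - 1) * x i)"
    unfolding pjx_def using False by (intro vnorm_cong) (simp add: algebra_simps)
  also have "\<dots> = \<bar>R / vnorm d x - 1\<bar> * vnorm d x" by (rule vnorm_scale)
  also have "\<bar>R / vnorm d x - 1\<bar> = 1 - R / vnorm d x" using pos False by (simp add: abs_if field_simps)
  also have "(1 - R / vnorm d x) * vnorm d x = vnorm d x - R" using pos by (simp add: field_simps)
  also have "\<dots> \<le> vnorm d (\<lambda>i. y i - x i)"
  proof -
    have "vnorm d x \<le> vnorm d (\<lambda>i. x i - y i) + vnorm d y"
      using vnorm_triangle[of d "\<lambda>i. x i - y i" y] by simp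
    moreover have "vnorm d y \<le> R" using assms(2) by (simp add: Kball_def)
    ultimately show ?thesis using vnorm_commute[of d x y] by linarith
  qed
  finally show ?thesis .
qed

lemma parallelogram:
  "(vnorm d (\<lambda>i. (a i + b i) / 2))^2 + (vnorm d (\<lambda>i. a i - b i))^2 / 4 =
   ((vnorm d a)^2 + (vnorm d b)^2) / 2"
proof -
  have "vnorm d (\<lambda>i. (a i + b i) / 2) = vnorm d (\<lambda>i. (1/2) * (a i + b i))" by (rule vnorm_cong) simp
  also have "\<dots> = \<bar>1/2\<bar> * vnorm d (\<lambda>i. a i + b i)" by (rule vnorm_scale)
  finally have e: "vnorm d (\<lambda>i. (a i + b i) / 2) = \<bar>1/2\<bar> * vnorm d (\<lambda>i. a i + b i)" .
  have "(vnorm d (\<lambda>i. (a i + b i) / 2))^2 = (1/4) * (vnorm d (\<lambda>i. a i + b i))^2"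
    unfolding e by (simp add: power_mult_distrib power2_eq_square)
  then show ?thesis by (simp add: vnorm_sq_add vnorm_sq_diff field_simps)
qed

lemma lin_help: "(a::real) \<le> X \<Longrightarrow> X + Y / 4 = (a + a) / 2 \<Longrightarrow> Y \<le> 0"
  by (simp add: field_simps)

lemma proj_eq:
  assumes R: "0 < R"
  shows "proj d R x = pjx d R x"
  unfolding proj_def
proof (rule the_equality)
  show "pjx d R x \<in> Kball d R \<and> (\<forall>y'\<in>Kball d R. vnorm d (\<lambda>i. pjx d R x i - x i) \<le> vnorm d (\<lambda>i. y' i - x i))"
    using pjx_in[OF R] pjx_min[OF R] by blast
next
  fix y assume y: "y \<in> Kball d R \<and> (\<forall>y'\<in>Kball d R. vnorm d (\<lambda>i. y i - x i) \<le> vnorm d (\<lambda>i. y' i - x i))"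
  let ?p = "pjx d R x"
  define \<delta> where "\<delta> = vnorm d (\<lambda>i. ?p i - x i)"
  have e1: "vnorm d (\<lambda>i. y i - x i) = \<delta>"
    using y pjx_min[OF R, where y=y and x=x and d=d] pjx_in[OF R, of d x] unfolding \<delta>_def by (meson order_antisym)
  define mid where "mid = (\<lambda>i. (y i + ?p i) / 2)"
  have midK: "mid \<in> Kball d R"
  proof -
    have "vnorm d mid = vnorm d (\<lambda>i. (1/2) * (y i + ?p i))" unfolding mid_def by (rule vnorm_cong) simp
    also have "\<dots> = \<bar>1/2\<bar> * vnorm d (\<lambda>i. y i + ?p i)" by (rule vnorm_scale)
    also have "\<dots> \<le> (1/2) * (vnorm d y + vnorm d ?p)"
      using vnorm_triangle[of d y ?p] by simp
    also have "\<dots> \<le> R" using y pjx_in[OF R, of d x] unfolding Kball_def by simp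
    finally show ?thesis using y pjx_in[OF R, of d x] unfolding Kball_def inRd_def mid_def by simp
  qed
  have "\<delta> \<le> vnorm d (\<lambda>i. mid i - x i)" unfolding \<delta>_def by (rule pjx_min[OF R midK])
  moreover have "mid i - x i = ((y i - x i) + (?p i - x i)) / 2" for i unfolding mid_def by (simp add: field_simps)
  ultimately have "\<delta> \<le> vnorm d (\<lambda>i. ((y i - x i) + (?p i - x i)) / 2)" by simp
  then have "\<delta>^2 \<le> (vnorm d (\<lambda>i. ((y i - x i) + (?p i - x i)) / 2))^2"
    using \<delta>_def vnorm_nonneg by (simp add: power_mono)
  moreover have "(vnorm d (\<lambda>i. ((y i - x i) + (?p i - x i)) / 2))^2 + (vnorm d (\<lambda>i. (y i - x i) - (?p i - x i)))^2 / 4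
      = (\<delta>^2 + \<delta>^2) / 2" using parallelogram[of d "\<lambda>i. y i - x i" "\<lambda>i. ?p i - x i"] e1 \<delta>_def by simp
  ultimately have "(vnorm d (\<lambda>i. (y i - x i) - (?p i - x i)))^2 \<le> 0" by (rule lin_help)
  then have "vnorm d (\<lambda>i. (y i - x i) - (?p i - x i)) = 0" using vnorm_nonneg
    by (metis power2_less_eq_zero_iff zero_eq_power2 order_antisym_conv)
  then have "\<forall>i<d. y i = ?p i" by (simp add: vnorm_zero_iff)
  moreover have "\<forall>i\<ge>d. y i = ?p i" using y pjx_in[OF R, of d x] unfolding Kball_def inRd_def by simp
  ultimately show "y = ?p" by (metis not_le ext)
qed

lemma proj_in: "0 < R \<Longrightarrow> proj d R x \<in> Kball d R"
  using proj_eq pjx_in by simp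

lemma proj_id: "0 < R \<Longrightarrow> x \<in> Kball d R \<Longrightarrow> proj d R x = x"
  unfolding proj_eq pjx_def Kball_def inRd_def by (auto intro!: ext)

lemma nonexp_alg: "(0::real) \<le> (1 - c) * ((1 + c) * X - 2 * I) \<Longrightarrow> c^2 * X - 2 * c * I + Y \<le> X - 2 * I + Y"
  by (simp add: power2_eq_square algebra_simps)

lemma proj_nonexp:
  assumes R: "0 < R" and y: "y \<in> Kball d R"
  shows "vnorm d (\<lambda>i. proj d R x i - y i) \<le> vnorm d (\<lambda>i. x i - y i)"
proof (cases "vnorm d x \<le> R")
  case True
  have "proj d R x = (\<lambda>i. if i < d then x i else 0)" unfolding proj_eq[OF R] pjx_def using True by simp
  moreover have "vnorm d (\<lambda>i. (if i < d then x i else 0) - y i) = vnorm d (\<lambda>i. x i - y i)"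
    by (rule vnorm_cong) simp
  ultimately show ?thesis by simp
next
  case False
  then have pos: "vnorm d x > 0" using R by simp
  define c where "c = R / vnorm d x"
  have c: "0 < c" "c < 1" "c * vnorm d x = R" using pos False R unfolding c_def by auto
  have eq: "vnorm d (\<lambda>i. proj d R x i - y i) = vnorm d (\<lambda>i. c * x i - y i)"
  proof -
    have "proj d R x = (\<lambda>i. c * (if i < d then x i else 0))" unfolding proj_eq[OF R] pjx_def c_def using False by simp
    moreover have "vnorm d (\<lambda>i. c * (if i < d then x i else 0) - y i) = vnorm d (\<lambda>i. c * x i - y i)"
      by (rule vnorm_cong) simp
    ultimately show ?thesis by simp
  qed
  have yR: "vnorm d y \<le> R" using y unfolding Kball_def by simp
  have "(vnorm d (\<lambda>i. c * x i - y i))^2 \<le> (vnorm d (\<lambda>i. x i - y i))^2"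
  proof -
    have A: "(vnorm d (\<lambda>i. c * x i - y i))^2 = c^2 * (vnorm d x)^2 - 2 * c * vinner d x y + (vnorm d y)^2"
    proof -
      have "(vnorm d (\<lambda>i. c * x i))^2 = c^2 * (vnorm d x)^2"
        unfolding vnorm_scale by (simp add: power_mult_distrib)
      then show ?thesis using vnorm_sq_diff[of d "\<lambda>i. c * x i" y] unfolding vinner_scale_left by simp
    qed
    have B: "(vnorm d (\<lambda>i. x i - y i))^2 = (vnorm d x)^2 - 2 * vinner d x y + (vnorm d y)^2"
      by (rule vnorm_sq_diff)
    have xy: "vinner d x y \<le> vnorm d x * R"
      using vinner_le[of d x y] mult_left_mono[OF yR, of "vnorm d x"] vnorm_nonneg[of d x] by linarith
    have "0 \<le> (1 - c) * (vnorm d x * (vnorm d x - R))" using c False pos by (intro mult_nonneg_nonneg) auto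
    also have "\<dots> = (1 - c) * ((1 + c) * (vnorm d x)^2 - 2 * (vnorm d x * R))"
      using c(3) by (simp add: power2_eq_square algebra_simps)
    also have "\<dots> \<le> (1 - c) * ((1 + c) * (vnorm d x)^2 - 2 * vinner d x y)"
      using c xy by (intro mult_left_mono) auto
    finally show ?thesis unfolding A B by (rule nonexp_alg)
  qed
  then have "vnorm d (\<lambda>i. c * x i - y i) \<le> vnorm d (\<lambda>i. x i - y i)"
    using vnorm_nonneg by (meson power2_le_imp_le)
  then show ?thesis using eq by simp
qed


section \<open>The MLMC estimator\<close>

definition Jd :: "nat pmf" where "Jd = map_pmf Suc (geometric_pmf (1/2))"

lemma pmf_Jd: "J \<ge> 1 \<Longrightarrow> pmf Jd J = (1/2)^J"
proof -
  assume "J \<ge> 1"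
  then obtain n where n: "J = Suc n" by (cases J) auto
  have "pmf Jd (Suc n) = pmf (geometric_pmf (1/2)) n" unfolding Jd_def by (rule pmf_map_inj') simp
  also have "\<dots> = (1/2)^Suc n" by simp
  finally show ?thesis using n by simp
qed

lemma set_Jd: "J \<in> set_pmf Jd \<Longrightarrow> J \<ge> 1"
  unfolding Jd_def by auto

lemma E_Jd_finite:
  fixes h :: "nat \<Rightarrow> real"
  assumes "\<And>J. J \<ge> 1 \<Longrightarrow> J \<notin> {1..L} \<Longrightarrow> h J = 0"
  shows "measure_pmf.expectation Jd h = (\<Sum>J\<in>{1..L}. (1/2)^J * h J)"
proof -
  have "measure_pmf.expectation Jd h = (\<Sum>J\<in>{1..L}. h J * pmf Jd J)"
    by (rule integral_measure_pmf_real) (use assms set_Jd in auto)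
  also have "\<dots> = (\<Sum>J\<in>{1..L}. (1/2)^J * h J)"
    by (intro sum.cong refl) (simp add: pmf_Jd mult.commute)
  finally show ?thesis .
qed

lemma integrable_Jd_finite:
  fixes h :: "nat \<Rightarrow> real"
  assumes "\<And>J. J \<ge> 1 \<Longrightarrow> J \<notin> {1..L} \<Longrightarrow> h J = 0"
  shows "integrable (measure_pmf Jd) h"
proof (rule integrable_pmf_bounded[where B="\<Sum>J\<in>{1..L}. \<bar>h J\<bar>"])
  fix J assume "J \<in> set_pmf Jd"
  then have J1: "J \<ge> 1" by (rule set_Jd)
  show "\<bar>h J\<bar> \<le> (\<Sum>J\<in>{1..L}. \<bar>h J\<bar>)"
  proof (cases "J \<in> {1..L}")
    case True then show ?thesis by (intro member_le_sum) auto
  next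
    case False then show ?thesis using assms[OF J1] by (simp add: sum_nonneg)
  qed
qed

lemma telescope_1: "(\<Sum>J\<in>{1..L::nat}. (y J - y (J - 1))) = y L - (y 0 :: real)"
proof (induction L)
  case 0 then show ?case by simp
next
  case (Suc L)
  have "{1..Suc L} = insert (Suc L) {1..L}" by (auto)
  then show ?case using Suc by simp
qed

definition Lg :: "nat \<Rightarrow> nat" where "Lg T = Max {j. j \<le> T \<and> 2^j \<le> T}"

lemma Lg_props:
  assumes "1 \<le> T"
  shows "2^(Lg T) \<le> T" and "\<And>j. 2^j \<le> T \<longleftrightarrow> j \<le> Lg T" and "T < 2 * 2^(Lg T)" and "Lg T \<le> T"
proof -
  let ?A = "{j. j \<le> T \<and> 2^j \<le> T}"
  have fin: "finite ?A" by simp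
  have ne: "0 \<in> ?A" using assms by simp
  have mem: "Lg T \<in> ?A" unfolding Lg_def using fin ne by (intro Max_in) auto
  then show "2^(Lg T) \<le> T" "Lg T \<le> T" by auto
  have ge: "j \<le> Lg T" if "2^j \<le> T" for j
  proof -
    have "j < 2^j" by (rule less_exp)
    then have "j \<le> T" using that by linarith
    then have "j \<in> ?A" using that by simp
    then show ?thesis unfolding Lg_def using fin by (intro Max_ge) auto
  qed
  show "2^j \<le> T \<longleftrightarrow> j \<le> Lg T" for j
  proof
    assume "j \<le> Lg T"
    then have "(2::nat)^j \<le> 2^(Lg T)" by (simp add: power_increasing)
    then show "2^j \<le> T" using \<open>2^(Lg T) \<le> T\<close> by linarith
  qed (rule ge)
  show "T < 2 * 2^(Lg T)"
  proof (rule ccontr)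
    assume "\<not> T < 2 * 2 ^ Lg T"
    then have "2^(Suc (Lg T)) \<le> T" by simp
    then have "Suc (Lg T) \<le> Lg T" by (rule ge)
    then show False by simp
  qed
qed

lemma gavg_avgv: "gavg d \<phi> \<gamma> \<theta> zl j = avgv (2^j) (sgrad d \<phi> \<gamma> \<theta>) zl"
  unfolding gavg_def avgv_def by simp

lemma gavg_take: "gavg d \<phi> \<gamma> \<theta> (take (2^j) zl) j = gavg d \<phi> \<gamma> \<theta> zl j"
  unfolding gavg_def by (intro ext) simp

lemma prefix_exp:
  fixes F :: "(nat \<Rightarrow> real) \<Rightarrow> real"
  assumes "j \<le> J"
  shows "measure_pmf.expectation (samples P Rw (2^J) s) (\<lambda>p. F (gavg d \<phi> \<gamma> \<theta> (fst p) j)) =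
         measure_pmf.expectation (samples P Rw (2^j) s) (\<lambda>p. F (gavg d \<phi> \<gamma> \<theta> (fst p) j))"
proof -
  have le: "(2::nat)^j \<le> 2^J" using assms by (simp add: power_increasing)
  have "measure_pmf.expectation (samples P Rw (2^J) s) (\<lambda>p. F (gavg d \<phi> \<gamma> \<theta> (fst p) j)) =
        measure_pmf.expectation (samples P Rw (2^J) s) (\<lambda>p. F (gavg d \<phi> \<gamma> \<theta> (take (2^j) (fst p)) j))"
    by (simp add: gavg_take)
  also have "\<dots> = measure_pmf.expectation (map_pmf (\<lambda>p. take (2^j) (fst p)) (samples P Rw (2^J) s))
                     (\<lambda>l. F (gavg d \<phi> \<gamma> \<theta> l j))" by simp
  also have "\<dots> = measure_pmf.expectation (map_pmf fst (samples P Rw (2^j) s)) (\<lambda>l. F (gavg d \<phi> \<gamma> \<theta> l j))"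
    by (simp only: samples_take[OF le])
  also have "\<dots> = measure_pmf.expectation (samples P Rw (2^j) s) (\<lambda>p. F (gavg d \<phi> \<gamma> \<theta> (fst p) j))" by simp
  finally show ?thesis .
qed

context tdl
begin

lemma samplesZ:
  assumes "s \<in> S" "p \<in> set_pmf (samples P Rw N s)" "k < N"
  shows "fst p ! k \<in> Z"
  using set_samples[OF closed assms(1,2)] assms(3) by auto

lemma gavg_bound:
  assumes s: "s \<in> S" and p: "p \<in> set_pmf (samples P Rw N s)" and jN: "2^j \<le> N" and th: "vnorm d \<theta> \<le> R"
  shows "vnorm d (gavg d \<phi> \<gamma> \<theta> (fst p) j) \<le> G"
proof (rule vnorm_bound_by_inner)
  show "0 \<le> G" using G_pos by simp
  fix b
  have "vinner d b (gavg d \<phi> \<gamma> \<theta> (fst p) j) = (1 / 2^j) * (\<Sum>k<2^j. vinner d b (sgrad d \<phi> \<gamma> \<theta> (fst p ! k)))"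
    unfolding gavg_def vinner_scale_right vinner_sum_right by simp
  also have "\<dots> \<le> (1 / 2^j) * (\<Sum>k<(2::nat)^j. vnorm d b * G)"
  proof (intro mult_left_mono sum_mono)
    fix k assume "k \<in> {..<(2::nat)^j}"
    then have "k < N" using jN by simp
    then have "fst p ! k \<in> Z" using samplesZ[OF s p] by simp
    then show "vinner d b (sgrad d \<phi> \<gamma> \<theta> (fst p ! k)) \<le> vnorm d b * G"
      using vinner_le[of d b] sgrad_bound[OF th] vnorm_nonneg[of d b]
      by (meson mult_left_mono order_trans)
  qed simp
  also have "\<dots> = vnorm d b * G" by simp
  finally show "vinner d b (gavg d \<phi> \<gamma> \<theta> (fst p) j) \<le> vnorm d b * G" .
qed

lemma gavg_inner_bound:
  assumes "s \<in> S" "p \<in> set_pmf (samples P Rw N s)" "2^j \<le> N" "vnorm d \<theta> \<le> R"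
  shows "\<bar>vinner d b (gavg d \<phi> \<gamma> \<theta> (fst p) j)\<bar> \<le> vnorm d b * G"
  using vinner_cs[of d b] gavg_bound[OF assms] vnorm_nonneg[of d b]
  by (meson mult_left_mono order_trans)

lemma mlmc_eq:
  "mlmc_grad T d \<phi> \<gamma> \<theta> zl J = (if 2^J \<le> T then (\<lambda>i. gavg d \<phi> \<gamma> \<theta> zl 0 i + 2^J * (gavg d \<phi> \<gamma> \<theta> zl J i - gavg d \<phi> \<gamma> \<theta> zl (J - 1) i))
      else gavg d \<phi> \<gamma> \<theta> zl 0)"
  unfolding mlmc_grad_def by simp

lemma mlmc_bound:
  assumes s: "s \<in> S" and p: "p \<in> set_pmf (samples P Rw (2^J) s)" and th: "vnorm d \<theta> \<le> R"
  shows "vnorm d (mlmc_grad T d \<phi> \<gamma> \<theta> (fst p) J) \<le> (1 + 2 * real T) * G"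
proof -
  have g: "vnorm d (gavg d \<phi> \<gamma> \<theta> (fst p) j) \<le> G" if "j \<le> J" for j
    using gavg_bound[OF s p _ th] that by (simp add: power_increasing)
  have G0: "0 \<le> G" using G_pos by simp
  show ?thesis
  proof (cases "2^J \<le> T")
    case True
    let ?g0 = "gavg d \<phi> \<gamma> \<theta> (fst p) 0" and ?gJ = "gavg d \<phi> \<gamma> \<theta> (fst p) J"
      and ?gJ1 = "gavg d \<phi> \<gamma> \<theta> (fst p) (J - 1)"
    have "vnorm d (mlmc_grad T d \<phi> \<gamma> \<theta> (fst p) J) = vnorm d (\<lambda>i. ?g0 i + 2^J * (?gJ i - ?gJ1 i))"
      using True by (simp add: mlmc_eq)
    also have "\<dots> \<le> vnorm d ?g0 + vnorm d (\<lambda>i. 2^J * (?gJ i - ?gJ1 i))" by (rule vnorm_triangle)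
    also have "vnorm d (\<lambda>i. 2^J * (?gJ i - ?gJ1 i)) = 2^J * vnorm d (\<lambda>i. ?gJ i - ?gJ1 i)"
      by (simp add: vnorm_scale)
    finally have A: "vnorm d (mlmc_grad T d \<phi> \<gamma> \<theta> (fst p) J) \<le> vnorm d ?g0 + 2^J * vnorm d (\<lambda>i. ?gJ i - ?gJ1 i)" .
    have B: "vnorm d (\<lambda>i. ?gJ i - ?gJ1 i) \<le> 2 * G"
      using vnorm_diff_triangle[of d ?gJ ?gJ1] g[of J] g[of "J - 1"] by simp
    have C: "(2::real)^J \<le> real T" using True by (metis of_nat_le_iff of_nat_numeral of_nat_power)
    have "2^J * vnorm d (\<lambda>i. ?gJ i - ?gJ1 i) \<le> real T * (2 * G)"
      using B C by (intro mult_mono) (auto simp: vnorm_nonneg)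
    then show ?thesis using A g[of 0] by (simp add: algebra_simps)
  next
    case False
    then have "vnorm d (mlmc_grad T d \<phi> \<gamma> \<theta> (fst p) J) \<le> G" using g[of 0] by (simp add: mlmc_eq)
    also have "G \<le> (1 + 2 * real T) * G" using G0 by (simp add: mult_le_cancel_right1)
    finally show ?thesis .
  qed
qed

lemma step_mean:
  assumes s: "s \<in> S" and th: "vnorm d \<theta> \<le> R" and T1: "1 \<le> T"
  shows "measure_pmf.expectation Jd (\<lambda>J. measure_pmf.expectation (samples P Rw (2^J) s)
            (\<lambda>p. vinner d b (mlmc_grad T d \<phi> \<gamma> \<theta> (fst p) J)))
       = measure_pmf.expectation (samples P Rw (2^Lg T) s) (\<lambda>p. vinner d b (gavg d \<phi> \<gamma> \<theta> (fst p) (Lg T)))"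
proof -
  define y where "y j = measure_pmf.expectation (samples P Rw (2^j) s) (\<lambda>p. vinner d b (gavg d \<phi> \<gamma> \<theta> (fst p) j))" for j
  define h where "h J = (if 2^J \<le> T then 2^J * (y J - y (J - 1)) else (0::real))" for J
  have intg: "integrable (measure_pmf (samples P Rw N s)) (\<lambda>p. vinner d b (gavg d \<phi> \<gamma> \<theta> (fst p) j))"
    if "2^j \<le> N" for j N
    using gavg_inner_bound[OF s _ that th] by (intro integrable_pmf_bounded[where B="vnorm d b * G"]) blast
  have pre: "measure_pmf.expectation (samples P Rw (2^J) s) (\<lambda>p. vinner d b (gavg d \<phi> \<gamma> \<theta> (fst p) j)) = y j"
    if "j \<le> J" for j J
    unfolding y_def by (rule prefix_exp[OF that])
  have inner: "measure_pmf.expectation (samples P Rw (2^J) s) (\<lambda>p. vinner d b (mlmc_grad T d \<phi> \<gamma> \<theta> (fst p) J))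
               = y 0 + h J" for J
  proof (cases "2^J \<le> T")
    case True
    have le: "(2::nat)^j \<le> 2^J" if "j \<le> J" for j using that by (simp add: power_increasing)
    have "measure_pmf.expectation (samples P Rw (2^J) s) (\<lambda>p. vinner d b (mlmc_grad T d \<phi> \<gamma> \<theta> (fst p) J))
        = measure_pmf.expectation (samples P Rw (2^J) s) (\<lambda>p. vinner d b (gavg d \<phi> \<gamma> \<theta> (fst p) 0)
            + 2^J * (vinner d b (gavg d \<phi> \<gamma> \<theta> (fst p) J) - vinner d b (gavg d \<phi> \<gamma> \<theta> (fst p) (J - 1))))"
      using True by (simp add: mlmc_eq vinner_add_right vinner_scale_right vinner_diff_right)
    also have "\<dots> = y 0 + 2^J * (y J - y (J - 1))"
      using intg[OF le[of 0]] intg[OF le[of J]] intg[OF le[of "J - 1"]] pre[of 0 J] pre[of J J] pre[of "J - 1" J]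
      by simp
    finally show ?thesis using True unfolding h_def by simp
  next
    case False
    have "measure_pmf.expectation (samples P Rw (2^J) s) (\<lambda>p. vinner d b (mlmc_grad T d \<phi> \<gamma> \<theta> (fst p) J))
        = measure_pmf.expectation (samples P Rw (2^J) s) (\<lambda>p. vinner d b (gavg d \<phi> \<gamma> \<theta> (fst p) 0))"
      using False by (simp add: mlmc_eq)
    also have "\<dots> = y 0" by (rule pre) simp
    finally show ?thesis using False unfolding h_def by simp
  qed
  have hz: "h J = 0" if "J \<ge> 1" "J \<notin> {1..Lg T}" for J
    using that Lg_props(2)[OF T1, of J] unfolding h_def by auto
  have "measure_pmf.expectation Jd (\<lambda>J. measure_pmf.expectation (samples P Rw (2^J) s)
            (\<lambda>p. vinner d b (mlmc_grad T d \<phi> \<gamma> \<theta> (fst p) J))) = measure_pmf.expectation Jd (\<lambda>J. y 0 + h J)"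
    by (simp add: inner)
  also have "\<dots> = y 0 + measure_pmf.expectation Jd h"
    using integrable_Jd_finite[OF hz] by simp
  also have "measure_pmf.expectation Jd h = (\<Sum>J\<in>{1..Lg T}. (1/2)^J * h J)"
    by (rule E_Jd_finite[OF hz])
  also have "\<dots> = (\<Sum>J\<in>{1..Lg T}. y J - y (J - 1))"
  proof (rule sum.cong[OF refl])
    fix J assume "J \<in> {1..Lg T}"
    then have "2^J \<le> T" using Lg_props(2)[OF T1, of J] by simp
    then show "(1/2)^J * h J = y J - y (J - 1)" unfolding h_def by (simp add: power_one_over)
  qed
  also have "\<dots> = y (Lg T) - y 0" by (rule telescope_1)
  finally show ?thesis unfolding y_def by simp
qed

lemma var_gavg:
  assumes s: "s \<in> S" and th: "vnorm d \<theta> \<le> R"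
  shows "measure_pmf.expectation (samples P Rw (2^j) s)
           (\<lambda>p. (vnorm d (\<lambda>l. gavg d \<phi> \<gamma> \<theta> (fst p) j l - gbar S P Rw \<mu> d \<phi> \<gamma> \<theta> l))^2)
         \<le> 16 * G^2 * tau / 2^j"
  using var_bound[where f="sgrad d \<phi> \<gamma> \<theta>" and m="gbar S P Rw \<mu> d \<phi> \<gamma> \<theta>" and G=G,
      OF sgrad_bound[OF th] hm_gbar[OF th] s, of "2^j"]
  by (simp add: gavg_avgv)

lemma sq_mlmc_pointwise:
  fixes g0 gJ gJ1 m :: "nat \<Rightarrow> real" and c :: real
  assumes "vnorm d g0 \<le> G"
  shows "(vnorm d (\<lambda>i. g0 i + c * (gJ i - gJ1 i)))^2
         \<le> 2 * G^2 + 4 * c^2 * ((vnorm d (\<lambda>l. gJ l - m l))^2 + (vnorm d (\<lambda>l. gJ1 l - m l))^2)"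
proof -
  have G0: "0 \<le> G" using assms vnorm_nonneg[of d g0] by linarith
  let ?A = "(vnorm d (\<lambda>l. gJ l - m l))^2" and ?B = "(vnorm d (\<lambda>l. gJ1 l - m l))^2"
  let ?Y = "(vnorm d (\<lambda>i. gJ i - gJ1 i))^2"
  have a: "(vnorm d (\<lambda>i. g0 i + c * (gJ i - gJ1 i)))^2 \<le> 2 * (vnorm d g0)^2 + 2 * (vnorm d (\<lambda>i. c * (gJ i - gJ1 i)))^2"
    by (rule vnorm_sq_add_le)
  have b: "(vnorm d (\<lambda>i. c * (gJ i - gJ1 i)))^2 = c^2 * ?Y"
    by (simp add: vnorm_scale power_mult_distrib)
  have cc: "?Y \<le> 2 * ?A + 2 * ?B"
  proof -
    have "vnorm d (\<lambda>i. gJ i - gJ1 i) = vnorm d (\<lambda>i. (gJ i - m i) + (m i - gJ1 i))" by (rule vnorm_cong) simp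
    then have "?Y \<le> 2 * ?A + 2 * (vnorm d (\<lambda>l. m l - gJ1 l))^2"
      using vnorm_sq_add_le[of d "\<lambda>l. gJ l - m l" "\<lambda>l. m l - gJ1 l"] by simp
    then show ?thesis using vnorm_commute[of d m gJ1] by simp
  qed
  have dd: "(vnorm d g0)^2 \<le> G^2" using assms vnorm_nonneg[of d g0] by (simp add: power_mono)
  have e: "c^2 * ?Y \<le> c^2 * (2 * ?A + 2 * ?B)" using cc by (intro mult_left_mono) auto
  have f: "c^2 * (2 * ?A + 2 * ?B) = 2 * c^2 * (?A + ?B)" by (simp add: algebra_simps)
  have "(vnorm d (\<lambda>i. g0 i + c * (gJ i - gJ1 i)))^2 \<le> 2 * G^2 + 2 * (2 * c^2 * (?A + ?B))"
    using a b dd e f by linarith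
  then show ?thesis by (simp add: algebra_simps)
qed

lemma step_sq:
  assumes s: "s \<in> S" and th: "vnorm d \<theta> \<le> R" and T1: "1 \<le> T"
  shows "measure_pmf.expectation Jd (\<lambda>J. measure_pmf.expectation (samples P Rw (2^J) s)
            (\<lambda>p. (vnorm d (mlmc_grad T d \<phi> \<gamma> \<theta> (fst p) J))^2))
       \<le> 2 * G^2 + 192 * G^2 * tau * Lg T"
proof -
  let ?m = "gbar S P Rw \<mu> d \<phi> \<gamma> \<theta>"
  define k where "k J = (if 2^J \<le> T then 192 * 2^J * G^2 * tau else (0::real))" for J
  have G0: "0 \<le> G" using G_pos by simp
  have Mbound: "\<bar>(vnorm d (mlmc_grad T d \<phi> \<gamma> \<theta> (fst p) J))^2\<bar> \<le> ((1 + 2 * real T) * G)^2"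
    if "p \<in> set_pmf (samples P Rw (2^J) s)" for p J
    using mlmc_bound[OF s that th] vnorm_nonneg by (simp add: power_mono)
  have sqint: "integrable (measure_pmf (samples P Rw (2^J) s))
                 (\<lambda>p. (vnorm d (\<lambda>l. gavg d \<phi> \<gamma> \<theta> (fst p) j l - ?m l))^2)" if "j \<le> J" for j J
  proof (rule integrable_pmf_bounded[where B="(2 * G)^2"])
    fix p assume p: "p \<in> set_pmf (samples P Rw (2^J) s)"
    have "vnorm d (\<lambda>l. gavg d \<phi> \<gamma> \<theta> (fst p) j l - ?m l) \<le> vnorm d (gavg d \<phi> \<gamma> \<theta> (fst p) j) + vnorm d ?m"
      by (rule vnorm_diff_triangle)
    also have "\<dots> \<le> G + G"
      using gavg_bound[OF s p _ th, of j] that m_bound[OF sgrad_bound[OF th] hm_gbar[OF th]]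
      by (simp add: power_increasing)
    finally show "\<bar>(vnorm d (\<lambda>l. gavg d \<phi> \<gamma> \<theta> (fst p) j l - ?m l))^2\<bar> \<le> (2 * G)^2"
      using vnorm_nonneg by (simp add: power_mono)
  qed
  have inner: "measure_pmf.expectation (samples P Rw (2^J) s) (\<lambda>p. (vnorm d (mlmc_grad T d \<phi> \<gamma> \<theta> (fst p) J))^2)
               \<le> 2 * G^2 + k J" if J1: "J \<ge> 1" for J
  proof (cases "2^J \<le> T")
    case True
    let ?A = "\<lambda>p. (vnorm d (\<lambda>l. gavg d \<phi> \<gamma> \<theta> (fst p) J l - ?m l))^2"
    let ?B = "\<lambda>p. (vnorm d (\<lambda>l. gavg d \<phi> \<gamma> \<theta> (fst p) (J - 1) l - ?m l))^2"
    have "measure_pmf.expectation (samples P Rw (2^J) s) (\<lambda>p. (vnorm d (mlmc_grad T d \<phi> \<gamma> \<theta> (fst p) J))^2)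
          \<le> measure_pmf.expectation (samples P Rw (2^J) s) (\<lambda>p. 2 * G^2 + 4 * (2^J)^2 * (?A p + ?B p))"
    proof (rule integral_mono_pmf)
      show "integrable (measure_pmf (samples P Rw (2^J) s)) (\<lambda>p. (vnorm d (mlmc_grad T d \<phi> \<gamma> \<theta> (fst p) J))^2)"
        using Mbound by (intro integrable_pmf_bounded) blast
      show "integrable (measure_pmf (samples P Rw (2^J) s)) (\<lambda>p. 2 * G^2 + 4 * (2^J)^2 * (?A p + ?B p))"
        using sqint[of J J] sqint[of "J - 1" J] by simp
      fix p assume p: "p \<in> set_pmf (samples P Rw (2^J) s)"
      show "(vnorm d (mlmc_grad T d \<phi> \<gamma> \<theta> (fst p) J))^2 \<le> 2 * G^2 + 4 * (2^J)^2 * (?A p + ?B p)"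
        using True sq_mlmc_pointwise[OF gavg_bound[OF s p _ th, of 0], of "2^J"] by (simp add: mlmc_eq)
    qed
    also have "\<dots> = 2 * G^2 + 4 * (2^J)^2 * (measure_pmf.expectation (samples P Rw (2^J) s) ?A
                  + measure_pmf.expectation (samples P Rw (2^J) s) ?B)"
      using sqint[of J J] sqint[of "J - 1" J] by simp
    also have "measure_pmf.expectation (samples P Rw (2^J) s) ?B
               = measure_pmf.expectation (samples P Rw (2^(J - 1)) s) ?B"
      by (rule prefix_exp[where F="\<lambda>v. (vnorm d (\<lambda>l. v l - ?m l))^2"]) simp
    also have "2 * G^2 + 4 * (2^J)^2 * (measure_pmf.expectation (samples P Rw (2^J) s) ?A
                  + measure_pmf.expectation (samples P Rw (2^(J - 1)) s) ?B)
               \<le> 2 * G^2 + 4 * (2^J)^2 * (16 * G^2 * tau / 2^J + 16 * G^2 * tau / 2^(J - 1))"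
      using var_gavg[OF s th, of J] var_gavg[OF s th, of "J - 1"]
      by (intro add_left_mono mult_left_mono add_mono) auto
    also have "\<dots> = 2 * G^2 + k J"
    proof -
      have e: "(2::real)^J = 2 * 2^(J - 1)" using J1 by (metis Suc_diff_1 less_le_trans power_Suc zero_less_one)
      show ?thesis unfolding k_def using True by (simp add: e power2_eq_square field_simps)
    qed
    finally show ?thesis .
  next
    case False
    have "measure_pmf.expectation (samples P Rw (2^J) s) (\<lambda>p. (vnorm d (mlmc_grad T d \<phi> \<gamma> \<theta> (fst p) J))^2)
          \<le> measure_pmf.expectation (samples P Rw (2^J) s) (\<lambda>p. 2 * G^2)"
    proof (rule integral_mono_pmf)
      show "integrable (measure_pmf (samples P Rw (2^J) s)) (\<lambda>p. (vnorm d (mlmc_grad T d \<phi> \<gamma> \<theta> (fst p) J))^2)"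
        using Mbound by (intro integrable_pmf_bounded) blast
      fix p assume p: "p \<in> set_pmf (samples P Rw (2^J) s)"
      have "vnorm d (mlmc_grad T d \<phi> \<gamma> \<theta> (fst p) J) \<le> G"
        using False gavg_bound[OF s p _ th, of 0] by (simp add: mlmc_eq)
      then have "(vnorm d (mlmc_grad T d \<phi> \<gamma> \<theta> (fst p) J))^2 \<le> G^2" using vnorm_nonneg by (simp add: power_mono)
      then show "(vnorm d (mlmc_grad T d \<phi> \<gamma> \<theta> (fst p) J))^2 \<le> 2 * G^2" using zero_le_power2[of G] by linarith
    qed simp
    then show ?thesis using False unfolding k_def by simp
  qed
  have kz: "k J = 0" if "J \<ge> 1" "J \<notin> {1..Lg T}" for J
    using that Lg_props(2)[OF T1, of J] unfolding k_def by auto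
  have "measure_pmf.expectation Jd (\<lambda>J. measure_pmf.expectation (samples P Rw (2^J) s)
            (\<lambda>p. (vnorm d (mlmc_grad T d \<phi> \<gamma> \<theta> (fst p) J))^2))
        \<le> measure_pmf.expectation Jd (\<lambda>J. 2 * G^2 + k J)"
  proof (rule integral_mono_pmf)
    show "integrable (measure_pmf Jd) (\<lambda>J. measure_pmf.expectation (samples P Rw (2^J) s)
            (\<lambda>p. (vnorm d (mlmc_grad T d \<phi> \<gamma> \<theta> (fst p) J))^2))"
    proof (rule integrable_pmf_bounded[where B="((1 + 2 * real T) * G)^2"])
      fix J assume "J \<in> set_pmf Jd"
      have "\<bar>measure_pmf.expectation (samples P Rw (2^J) s) (\<lambda>p. (vnorm d (mlmc_grad T d \<phi> \<gamma> \<theta> (fst p) J))^2)\<bar>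
            \<le> measure_pmf.expectation (samples P Rw (2^J) s) (\<lambda>p. ((1 + 2 * real T) * G)^2)"
        using Mbound
        by (intro order_trans[OF integral_abs_bound] integral_mono_pmf integrable_pmf_bounded) (auto intro: integrable_pmf_bounded)
      then show "\<bar>measure_pmf.expectation (samples P Rw (2^J) s) (\<lambda>p. (vnorm d (mlmc_grad T d \<phi> \<gamma> \<theta> (fst p) J))^2)\<bar>
            \<le> ((1 + 2 * real T) * G)^2" by simp
    qed
    show "integrable (measure_pmf Jd) (\<lambda>J. 2 * G^2 + k J)" using integrable_Jd_finite[OF kz] by simp
    fix J assume "J \<in> set_pmf Jd"
    then show "measure_pmf.expectation (samples P Rw (2^J) s) (\<lambda>p. (vnorm d (mlmc_grad T d \<phi> \<gamma> \<theta> (fst p) J))^2)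
               \<le> 2 * G^2 + k J" using inner set_Jd by blast
  qed
  also have "\<dots> = 2 * G^2 + measure_pmf.expectation Jd k" using integrable_Jd_finite[OF kz] by simp
  also have "measure_pmf.expectation Jd k = (\<Sum>J\<in>{1..Lg T}. (1/2)^J * k J)" by (rule E_Jd_finite[OF kz])
  also have "\<dots> = (\<Sum>J\<in>{1..Lg T}. 192 * G^2 * tau)"
  proof (rule sum.cong[OF refl])
    fix J assume "J \<in> {1..Lg T}"
    then have "2^J \<le> T" using Lg_props(2)[OF T1, of J] by simp
    then show "(1/2)^J * k J = 192 * G^2 * tau" unfolding k_def by (simp add: power_one_over)
  qed
  also have "\<dots> = 192 * G^2 * tau * Lg T" by simp
  finally show ?thesis .
qed

lemma vinner_neg_left: "vinner d (\<lambda>i. - a i) x = - vinner d a x"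
  unfolding vinner_def by (simp add: sum_negf)

lemma vnorm_neg: "vnorm d (\<lambda>i. - a i) = vnorm d a"
  using vnorm_scale[of d "-1" a] by simp

lemma step_bias:
  assumes s: "s \<in> S" and th: "vnorm d \<theta> \<le> R" and T1: "1 \<le> T"
  shows "vinner d a (gbar S P Rw \<mu> d \<phi> \<gamma> \<theta>) - measure_pmf.expectation Jd (\<lambda>J. measure_pmf.expectation (samples P Rw (2^J) s)
            (\<lambda>p. vinner d a (mlmc_grad T d \<phi> \<gamma> \<theta> (fst p) J)))
         \<le> vnorm d a * 2 * G * (2 * tau) * 2 / T"
proof -
  let ?m = "gbar S P Rw \<mu> d \<phi> \<gamma> \<theta>"
  let ?L = "Lg T"
  have intg: "integrable (measure_pmf (samples P Rw (2^?L) s)) (\<lambda>p. vinner d a (gavg d \<phi> \<gamma> \<theta> (fst p) ?L))"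
    using gavg_inner_bound[OF s _ _ th, of _ "2^?L" ?L a] by (intro integrable_pmf_bounded[where B="vnorm d a * G"]) auto
  have "vinner d a ?m - measure_pmf.expectation Jd (\<lambda>J. measure_pmf.expectation (samples P Rw (2^J) s)
            (\<lambda>p. vinner d a (mlmc_grad T d \<phi> \<gamma> \<theta> (fst p) J)))
        = vinner d a ?m - measure_pmf.expectation (samples P Rw (2^?L) s) (\<lambda>p. vinner d a (gavg d \<phi> \<gamma> \<theta> (fst p) ?L))"
    using step_mean[OF s th T1] by simp
  also have "\<dots> = measure_pmf.expectation (samples P Rw (2^?L) s)
        (\<lambda>p. vinner d (\<lambda>i. - a i) (avgv (2^?L) (sgrad d \<phi> \<gamma> \<theta>) (fst p)) - vinner d (\<lambda>i. - a i) ?m)"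
    using intg by (simp add: vinner_neg_left gavg_avgv)
  also have "\<dots> \<le> vnorm d (\<lambda>i. - a i) * 2 * G * (2 * tau) / 2^?L"
    using bias_bound[where f="sgrad d \<phi> \<gamma> \<theta>" and m="?m" and G=G, OF sgrad_bound[OF th] hm_gbar[OF th] s, of "2^?L" "\<lambda>i. - a i"]
    by simp
  also have "\<dots> \<le> vnorm d a * 2 * G * (2 * tau) * 2 / T"
  proof -
    have "real T < 2 * 2^?L" using Lg_props(3)[OF T1] by (metis of_nat_less_iff of_nat_mult of_nat_numeral of_nat_power)
    then have "1 / 2^?L \<le> 2 / real T" using T1 by (simp add: field_simps)
    moreover have "0 \<le> vnorm d a * 2 * G * (2 * tau)" using G_pos vnorm_nonneg[of d a] by simp
    ultimately have "vnorm d a * 2 * G * (2 * tau) * (1 / 2^?L) \<le> vnorm d a * 2 * G * (2 * tau) * (2 / real T)"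
      by (rule mult_left_mono)
    then show ?thesis by (simp add: vnorm_neg)
  qed
  finally show ?thesis .
qed

end


section \<open>AdaGrad step (real arithmetic)\<close>

lemma adagrad_real:
  fixes R c0 Q Q' N2 D D' \<eta> I Reg :: real
  assumes R: "0 < R" and c0: "c0 = 2 * sqrt 2 * R" and Q: "0 \<le> Q" and Q': "Q' = Q + N2" and N2: "0 \<le> N2"
    and Qp: "0 < Q'" and D: "0 \<le> D" "D^2 \<le> 4 * R^2" and eta: "\<eta> = sqrt 2 * R / sqrt Q'"
    and step: "D'^2 \<le> D^2 - 2 * \<eta> * I + \<eta>^2 * N2"
    and inv: "Reg + D^2 * sqrt Q / c0 \<le> c0 * sqrt Q"
  shows "Reg + I + D'^2 * sqrt Q' / c0 \<le> c0 * sqrt Q'"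
proof -
  define q where "q = sqrt Q"
  define q' where "q' = sqrt Q'"
  define r2 where "r2 = sqrt (2::real)"
  have r2: "r2 > 0" "r2 * r2 = 2" unfolding r2_def by auto
  have q: "0 \<le> q" "q * q = Q" unfolding q_def using Q by auto
  have q': "0 < q'" "q' * q' = Q'" unfolding q'_def using Qp by auto
  have qq: "q \<le> q'" unfolding q_def q'_def using Q' N2 by simp
  have c0p: "0 < c0" using c0 R by simp
  have etap: "0 < \<eta>" using eta R q' unfolding q'_def by simp
  have eta': "\<eta> = r2 * R / q'" using eta unfolding r2_def q'_def by simp
  define k where "k = q' / c0"
  have kp: "0 < k" unfolding k_def using q' c0p by simp
  have k2: "2 * \<eta> * k = 1" unfolding k_def eta' c0 r2_def using q' R by (simp add: field_simps r2_def)
  have s1: "I \<le> k * (D^2 - D'^2) + k * \<eta>^2 * N2"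
  proof -
    have "2 * \<eta> * I \<le> D^2 - D'^2 + \<eta>^2 * N2" using step by simp
    then have "k * (2 * \<eta> * I) \<le> k * (D^2 - D'^2 + \<eta>^2 * N2)" using kp by (intro mult_left_mono) auto
    also have "k * (2 * \<eta> * I) = I" using k2 by (simp add: algebra_simps)
    finally show ?thesis by (simp add: algebra_simps)
  qed
  have c0': "c0 = 2 * r2 * R" using c0 unfolding r2_def by simp
  have ke: "k * \<eta>^2 = c0 / (4 * q')"
    unfolding k_def eta' c0' using q'(1) R r2(1) by (simp add: field_simps power2_eq_square)
  have s2: "k * \<eta>^2 * N2 \<le> c0 / 2 * (q' - q)"
  proof -
    have "N2 = (q' - q) * (q' + q)" using Q' q q' by (simp add: algebra_simps)
    also have "\<dots> \<le> (q' - q) * (2 * q')" using qq by (intro mult_left_mono) auto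
    finally have "N2 \<le> (q' - q) * (2 * q')" .
    then have "c0 / (4 * q') * N2 \<le> c0 / (4 * q') * ((q' - q) * (2 * q'))"
      using c0p q' by (intro mult_left_mono) auto
    also have "\<dots> = c0 / 2 * (q' - q)" using q' by (simp add: field_simps)
    finally show ?thesis using ke by simp
  qed
  have s3: "D^2 * (q' - q) / c0 \<le> c0 / 2 * (q' - q)"
  proof -
    have A: "D^2 * (q' - q) / c0 \<le> 4 * R^2 * (q' - q) / c0"
      using D qq c0p by (intro divide_right_mono mult_right_mono) auto
    have B: "4 * R^2 / c0 = c0 / 2" unfolding c0' using R r2 by (simp add: field_simps power2_eq_square)
    have C: "4 * R^2 * (q' - q) / c0 = (4 * R^2 / c0) * (q' - q)" by simp
    show ?thesis using A B C by simp
  qed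
  have e1: "D'^2 * q' / c0 = k * D'^2" unfolding k_def by simp
  have e2: "D^2 * q / c0 + D^2 * (q' - q) / c0 = k * D^2" unfolding k_def using c0p by (simp add: field_simps)
  have "Reg + I + D'^2 * q' / c0 \<le> Reg + k * D^2 + c0 / 2 * (q' - q)"
  proof -
    have "k * (D^2 - D'^2) = k * D^2 - k * D'^2" by (simp add: algebra_simps)
    then show ?thesis using s1 s2 e1 by linarith
  qed
  also have "\<dots> \<le> c0 * q + c0 / 2 * (q' - q) + c0 / 2 * (q' - q)"
    using inv e2 s3 unfolding q_def[symmetric] by linarith
  also have "\<dots> = c0 * q'" by (simp add: algebra_simps)
  finally show ?thesis unfolding q_def q'_def .
qed

type_synonym ext_state = "alg_state \<times> real \<times> real \<times> real"

context tdl
begin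

definition c0 :: real where "c0 = 2 * sqrt 2 * R"

definition upd :: "nat \<Rightarrow> ext_state \<Rightarrow> nat \<Rightarrow> sample list \<times> nat \<Rightarrow> ext_state" where
  "upd T x J p = (case x of ((s, \<theta>, Q, acc), (Reg, A, Es)) \<Rightarrow> (case p of (zl, s_next) \<Rightarrow>
      let g = mlmc_grad T d \<phi> \<gamma> \<theta> zl J;
          Q' = Q + (vnorm d g)^2;
          \<eta> = sqrt 2 * R / sqrt Q'
      in ((s_next, proj d R (\<lambda>i. \<theta> i + \<eta> * g i), Q', (\<lambda>i. acc i + \<theta> i)),
          (Reg + vinner d (\<lambda>i. \<theta>s i - \<theta> i) g,
           A + vinner d (\<lambda>i. \<theta>s i - \<theta> i) (gbar S P Rw \<mu> d \<phi> \<gamma> \<theta>),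
           Es + errM S \<mu> d \<phi> \<theta>s \<theta>))))"

definition ext_step :: "nat \<Rightarrow> ext_state \<Rightarrow> ext_state pmf" where
  "ext_step T x = bind_pmf Jd (\<lambda>J. map_pmf (upd T x J) (samples P Rw (2^J) (fst (fst x))))"

primrec ext_run :: "nat \<Rightarrow> nat pmf \<Rightarrow> (nat \<Rightarrow> real) \<Rightarrow> nat \<Rightarrow> ext_state pmf" where
  "ext_run T \<xi> \<theta>1 0 = map_pmf (\<lambda>s. ((s, \<theta>1, 0, (\<lambda>i. 0)), (0, 0, 0))) \<xi>"
| "ext_run T \<xi> \<theta>1 (Suc n) = bind_pmf (ext_run T \<xi> \<theta>1 n) (ext_step T)"

lemma fst_ext_step: "map_pmf fst (ext_step T x) = alg_step P Rw d \<phi> \<gamma> R T (fst x)"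
  unfolding ext_step_def alg_step_def Jd_def
  by (cases x) (auto simp: map_bind_pmf map_pmf_comp upd_def Let_def split_beta intro!: bind_pmf_cong map_pmf_cong)

lemma fst_ext_run: "map_pmf fst (ext_run T \<xi> \<theta>1 n) = alg_run P Rw d \<phi> \<gamma> R T \<xi> \<theta>1 n"
proof (induction n)
  case 0 then show ?case by (simp add: map_pmf_comp)
next
  case (Suc n)
  have "map_pmf fst (ext_run T \<xi> \<theta>1 (Suc n)) = bind_pmf (ext_run T \<xi> \<theta>1 n) (\<lambda>x. map_pmf fst (ext_step T x))"
    by (simp add: map_bind_pmf)
  also have "\<dots> = bind_pmf (ext_run T \<xi> \<theta>1 n) (\<lambda>x. alg_step P Rw d \<phi> \<gamma> R T (fst x))"
    by (simp add: fst_ext_step)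
  also have "\<dots> = bind_pmf (map_pmf fst (ext_run T \<xi> \<theta>1 n)) (alg_step P Rw d \<phi> \<gamma> R T)"
    by (simp add: bind_map_pmf)
  finally show ?case using Suc by simp
qed

definition Gm :: "nat \<Rightarrow> real" where "Gm T = (1 + 2 * real T) * G"

definition Inv :: "nat \<Rightarrow> nat \<Rightarrow> ext_state \<Rightarrow> bool" where
  "Inv T t x = (case x of ((s, \<theta>, Q, acc), (Reg, A, Es)) \<Rightarrow>
    s \<in> S \<and> \<theta> \<in> Kball d R \<and> 0 \<le> Q \<and> Q \<le> real t * (Gm T)^2 \<and>
    Reg + (vnorm d (\<lambda>i. \<theta> i - \<theta>s i))^2 * sqrt Q / c0 \<le> c0 * sqrt Q \<and>
    \<bar>Reg\<bar> \<le> real t * (2 * R * Gm T) \<and> \<bar>A\<bar> \<le> real t * (2 * R * G) \<and>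
    (1 - \<gamma>) * Es \<le> A \<and> 0 \<le> Es \<and> Es \<le> real t * (4 * R^2) \<and>
    real t * errM S \<mu> d \<phi> \<theta>s (\<lambda>i. acc i / real t) \<le> Es \<and> (t = 0 \<longrightarrow> acc = (\<lambda>i. 0)))"

lemma Gm_ge: "G \<le> Gm T"
  unfolding Gm_def using G_pos by (simp add: mult_le_cancel_right1)

lemma ths_K: "\<theta>s \<in> Kball d R" using ths(1) thsR unfolding Kball_def by simp

lemma diff_bound: "\<theta> \<in> Kball d R \<Longrightarrow> vnorm d (\<lambda>i. \<theta>s i - \<theta> i) \<le> 2 * R"
  using vnorm_diff_triangle[of d \<theta>s \<theta>] thsR unfolding Kball_def by simp

lemma Inv_init:
  assumes "set_pmf \<xi> \<subseteq> S" "\<theta>1 \<in> Kball d R" "x \<in> set_pmf (ext_run T \<xi> \<theta>1 0)"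
  shows "Inv T 0 x"
  using assms unfolding Inv_def by auto

lemma Inv_step:
  assumes inv: "Inv T t x" and y: "y \<in> set_pmf (ext_step T x)"
  shows "Inv T (Suc t) y"
proof -
  obtain s \<theta> Q acc Reg A Es where x: "x = ((s, \<theta>, Q, acc), (Reg, A, Es))" by (metis prod.collapse)
  have s: "s \<in> S" and thK: "\<theta> \<in> Kball d R" and Q0: "0 \<le> Q" and QB: "Q \<le> real t * (Gm T)^2"
    and RegI: "Reg + (vnorm d (\<lambda>i. \<theta> i - \<theta>s i))^2 * sqrt Q / c0 \<le> c0 * sqrt Q"
    and RegB: "\<bar>Reg\<bar> \<le> real t * (2 * R * Gm T)" and AB: "\<bar>A\<bar> \<le> real t * (2 * R * G)"
    and EsA: "(1 - \<gamma>) * Es \<le> A" and Es0: "0 \<le> Es" and EsB: "Es \<le> real t * (4 * R^2)"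
    and accI: "real t * errM S \<mu> d \<phi> \<theta>s (\<lambda>i. acc i / real t) \<le> Es" and acc0: "t = 0 \<longrightarrow> acc = (\<lambda>i. 0)"
    using inv unfolding Inv_def x by auto
  have thR: "vnorm d \<theta> \<le> R" using thK unfolding Kball_def by simp
  obtain J zl e where J: "J \<in> set_pmf Jd" and p: "(zl, e) \<in> set_pmf (samples P Rw (2^J) s)"
    and yeq: "y = upd T x J (zl, e)"
    using y unfolding ext_step_def x by auto
  define g where "g = mlmc_grad T d \<phi> \<gamma> \<theta> zl J"
  define Q' where "Q' = Q + (vnorm d g)^2"
  define \<eta> where "\<eta> = sqrt 2 * R / sqrt Q'"
  define \<theta>' where "\<theta>' = proj d R (\<lambda>i. \<theta> i + \<eta> * g i)"
  define a where "a = (\<lambda>i. \<theta>s i - \<theta> i)"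
  define m where "m = gbar S P Rw \<mu> d \<phi> \<gamma> \<theta>"
  have yv: "y = ((e, \<theta>', Q', (\<lambda>i. acc i + \<theta> i)), (Reg + vinner d a g, A + vinner d a m, Es + errM S \<mu> d \<phi> \<theta>s \<theta>))"
    unfolding yeq upd_def x g_def Q'_def \<eta>_def \<theta>'_def a_def m_def by (simp add: Let_def)
  have gb: "vnorm d g \<le> Gm T" unfolding g_def Gm_def using mlmc_bound[OF s _ thR] p by fastforce
  have e: "e \<in> S" using set_samples[OF closed s p] by simp
  have aB: "vnorm d a \<le> 2 * R" unfolding a_def by (rule diff_bound[OF thK])
  have mB: "vnorm d m \<le> G" unfolding m_def by (rule m_bound[OF sgrad_bound[OF thR] hm_gbar[OF thR]])
  have G0: "0 \<le> G" using G_pos by simp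
  have Gm0: "0 \<le> Gm T" using Gm_ge[of T] G0 by linarith
  have Ib: "\<bar>vinner d a g\<bar> \<le> 2 * R * Gm T"
    using vinner_cs[of d a g] aB gb vnorm_nonneg[of d a] vnorm_nonneg[of d g]
    by (meson mult_mono order_trans)
  have Mb: "\<bar>vinner d a m\<bar> \<le> 2 * R * G"
    using vinner_cs[of d a m] aB mB vnorm_nonneg[of d a] vnorm_nonneg[of d m]
    by (meson mult_mono order_trans)
  have N2b: "(vnorm d g)^2 \<le> (Gm T)^2" using gb vnorm_nonneg by (simp add: power_mono)
  have Q'0: "0 \<le> Q'" unfolding Q'_def using Q0 by simp
  have td: "(1 - \<gamma>) * errM S \<mu> d \<phi> \<theta>s \<theta> \<le> vinner d a m" unfolding a_def m_def by (rule td_ineq)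
  have eb: "errM S \<mu> d \<phi> \<theta>s \<theta> \<le> 4 * R^2" "0 \<le> errM S \<mu> d \<phi> \<theta>s \<theta>" using errM_bound[OF thR] by auto
  have newReg: "Reg + vinner d a g + (vnorm d (\<lambda>i. \<theta>' i - \<theta>s i))^2 * sqrt Q' / c0 \<le> c0 * sqrt Q'"
  proof (cases "Q' = 0")
    case True
    then have "(vnorm d g)^2 = 0" "Q = 0" using Q0 unfolding Q'_def by (simp_all add: add_nonneg_eq_0_iff)
    then have "vnorm d g = 0" by simp
    then have "vinner d a g = 0" using vinner_cs[of d a g] by simp
    then show ?thesis using RegI True \<open>Q = 0\<close> by simp
  next
    case False
    then have Qp: "0 < Q'" using Q'0 by simp
    have D: "0 \<le> vnorm d (\<lambda>i. \<theta> i - \<theta>s i)" "(vnorm d (\<lambda>i. \<theta> i - \<theta>s i))^2 \<le> 4 * R^2"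
    proof -
      show "0 \<le> vnorm d (\<lambda>i. \<theta> i - \<theta>s i)" by (rule vnorm_nonneg)
      have "vnorm d (\<lambda>i. \<theta> i - \<theta>s i) \<le> 2 * R" using aB vnorm_commute[of d \<theta> \<theta>s] unfolding a_def by simp
      then have "(vnorm d (\<lambda>i. \<theta> i - \<theta>s i))^2 \<le> (2 * R)^2" by (rule power_mono[OF _ vnorm_nonneg])
      then show "(vnorm d (\<lambda>i. \<theta> i - \<theta>s i))^2 \<le> 4 * R^2" by (simp add: power_mult_distrib)
    qed
    have step: "(vnorm d (\<lambda>i. \<theta>' i - \<theta>s i))^2 \<le> (vnorm d (\<lambda>i. \<theta> i - \<theta>s i))^2 - 2 * \<eta> * vinner d a g + \<eta>^2 * (vnorm d g)^2"
    proof -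
      have "vnorm d (\<lambda>i. \<theta>' i - \<theta>s i) \<le> vnorm d (\<lambda>i. (\<theta> i + \<eta> * g i) - \<theta>s i)"
        unfolding \<theta>'_def by (rule proj_nonexp[OF Rpos ths_K])
      then have "(vnorm d (\<lambda>i. \<theta>' i - \<theta>s i))^2 \<le> (vnorm d (\<lambda>i. (\<theta> i + \<eta> * g i) - \<theta>s i))^2"
        using vnorm_nonneg by (simp add: power_mono)
      also have "vnorm d (\<lambda>i. (\<theta> i + \<eta> * g i) - \<theta>s i) = vnorm d (\<lambda>i. (\<theta> i - \<theta>s i) + \<eta> * g i)"
        by (rule vnorm_cong) simp
      also have "(vnorm d (\<lambda>i. (\<theta> i - \<theta>s i) + \<eta> * g i))^2 =
          (vnorm d (\<lambda>i. \<theta> i - \<theta>s i))^2 + 2 * vinner d (\<lambda>i. \<theta> i - \<theta>s i) (\<lambda>i. \<eta> * g i) + (vnorm d (\<lambda>i. \<eta> * g i))^2"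
        by (rule vnorm_sq_add)
      also have "vinner d (\<lambda>i. \<theta> i - \<theta>s i) (\<lambda>i. \<eta> * g i) = - \<eta> * vinner d a g"
        unfolding a_def vinner_scale_right by (simp add: vinner_diff_left vinner_diff_right algebra_simps)
      also have "(vnorm d (\<lambda>i. \<eta> * g i))^2 = \<eta>^2 * (vnorm d g)^2"
        by (simp add: vnorm_scale power_mult_distrib)
      finally show ?thesis by simp
    qed
    show ?thesis
      by (rule adagrad_real[OF Rpos c0_def Q0 Q'_def zero_le_power2 Qp D \<eta>_def step RegI])
  qed
  have accN: "real (Suc t) * errM S \<mu> d \<phi> \<theta>s (\<lambda>i. (acc i + \<theta> i) / real (Suc t)) \<le> Es + errM S \<mu> d \<phi> \<theta>s \<theta>"
  proof (cases "t = 0")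
    case True
    then show ?thesis using acc0 Es0 by simp
  next
    case False
    then have tp: "real t > 0" by simp
    have "real (Suc t) * errM S \<mu> d \<phi> \<theta>s (\<lambda>i. (acc i + \<theta> i) / real (Suc t))
        = (real t + 1) * errM S \<mu> d \<phi> \<theta>s (\<lambda>i. (acc i + \<theta> i) / (real t + 1))" by (simp add: add.commute)
    also have "\<dots> \<le> real t * errM S \<mu> d \<phi> \<theta>s (\<lambda>i. acc i / real t) + errM S \<mu> d \<phi> \<theta>s \<theta>"
      by (rule errM_convex[OF tp])
    finally show ?thesis using accI by simp
  qed
  show ?thesis
    unfolding yv Inv_def
  proof (simp only: prod.case, intro conjI)
    show "e \<in> S" by (rule e)
    show "\<theta>' \<in> Kball d R" unfolding \<theta>'_def by (rule proj_in[OF Rpos])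
    show "0 \<le> Q'" by (rule Q'0)
    show "Q' \<le> real (Suc t) * (Gm T)^2" unfolding Q'_def using QB N2b by (simp add: algebra_simps)
    show "Reg + vinner d a g + (vnorm d (\<lambda>i. \<theta>' i - \<theta>s i))^2 * sqrt Q' / c0 \<le> c0 * sqrt Q'" by (rule newReg)
    show "\<bar>Reg + vinner d a g\<bar> \<le> real (Suc t) * (2 * R * Gm T)" using RegB Ib by (simp add: algebra_simps)
    show "\<bar>A + vinner d a m\<bar> \<le> real (Suc t) * (2 * R * G)" using AB Mb by (simp add: algebra_simps)
    show "(1 - \<gamma>) * (Es + errM S \<mu> d \<phi> \<theta>s \<theta>) \<le> A + vinner d a m" using EsA td by (simp add: algebra_simps)
    show "0 \<le> Es + errM S \<mu> d \<phi> \<theta>s \<theta>" using Es0 eb by simp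
    show "Es + errM S \<mu> d \<phi> \<theta>s \<theta> \<le> real (Suc t) * (4 * R^2)" using EsB eb by (simp add: algebra_simps)
    show "real (Suc t) * errM S \<mu> d \<phi> \<theta>s (\<lambda>i. (acc i + \<theta> i) / real (Suc t)) \<le> Es + errM S \<mu> d \<phi> \<theta>s \<theta>"
      by (rule accN)
    show "Suc t = 0 \<longrightarrow> (\<lambda>i. acc i + \<theta> i) = (\<lambda>i. 0)" by simp
  qed
qed

lemma Inv_run:
  assumes "set_pmf \<xi> \<subseteq> S" "\<theta>1 \<in> Kball d R" "x \<in> set_pmf (ext_run T \<xi> \<theta>1 n)"
  shows "Inv T n x"
  using assms(3)
proof (induction n arbitrary: x)
  case 0 then show ?case using Inv_init[OF assms(1,2)] by simp
next
  case (Suc n)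
  then obtain x0 where "x0 \<in> set_pmf (ext_run T \<xi> \<theta>1 n)" "x \<in> set_pmf (ext_step T x0)" by auto
  then show ?case using Suc.IH Inv_step by blast
qed

end


context tdl
begin

lemma run_induct_bound:
  fixes F :: "ext_state \<Rightarrow> real"
  assumes init: "\<And>x. x \<in> set_pmf (ext_run T \<xi> \<theta>1 0) \<Longrightarrow> F x = 0"
    and bnd: "\<And>n x. x \<in> set_pmf (ext_run T \<xi> \<theta>1 n) \<Longrightarrow> \<bar>F x\<bar> \<le> Bd n"
    and step: "\<And>n x. x \<in> set_pmf (ext_run T \<xi> \<theta>1 n) \<Longrightarrow> measure_pmf.expectation (ext_step T x) F \<le> F x + c"
  shows "measure_pmf.expectation (ext_run T \<xi> \<theta>1 n) F \<le> real n * c"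
proof (induction n)
  case 0
  have "measure_pmf.expectation (ext_run T \<xi> \<theta>1 0) F = measure_pmf.expectation (ext_run T \<xi> \<theta>1 0) (\<lambda>_. 0)"
    by (rule integral_cong_pmf) (rule init)
  then show ?case by simp
next
  case (Suc n)
  have "measure_pmf.expectation (ext_run T \<xi> \<theta>1 (Suc n)) F =
        measure_pmf.expectation (ext_run T \<xi> \<theta>1 n) (\<lambda>x. measure_pmf.expectation (ext_step T x) F)"
    unfolding ext_run.simps by (rule integral_bind_pmf_bounded[where B="Bd (Suc n)"]) (use bnd[of _ "Suc n"] in simp)
  also have "\<dots> \<le> measure_pmf.expectation (ext_run T \<xi> \<theta>1 n) (\<lambda>x. F x + c)"
  proof (rule integral_mono_pmf)
    show "integrable (measure_pmf (ext_run T \<xi> \<theta>1 n)) (\<lambda>x. measure_pmf.expectation (ext_step T x) F)"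
    proof (rule integrable_pmf_bounded[where B="Bd (Suc n)"])
      fix x assume x: "x \<in> set_pmf (ext_run T \<xi> \<theta>1 n)"
      have yb: "\<bar>F y\<bar> \<le> Bd (Suc n)" if "y \<in> set_pmf (ext_step T x)" for y
        using bnd[of y "Suc n"] x that by auto
      have "\<bar>measure_pmf.expectation (ext_step T x) F\<bar> \<le> measure_pmf.expectation (ext_step T x) (\<lambda>y. \<bar>F y\<bar>)"
        by (rule integral_abs_bound)
      also have "\<dots> \<le> measure_pmf.expectation (ext_step T x) (\<lambda>y. Bd (Suc n))"
      proof (rule integral_mono_pmf)
        show "integrable (measure_pmf (ext_step T x)) (\<lambda>y. \<bar>F y\<bar>)"
          using yb by (intro integrable_pmf_bounded[where B="Bd (Suc n)"]) auto
      qed (use yb in auto)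
      finally show "\<bar>measure_pmf.expectation (ext_step T x) F\<bar> \<le> Bd (Suc n)" by simp
    qed
    show "integrable (measure_pmf (ext_run T \<xi> \<theta>1 n)) (\<lambda>x. F x + c)"
      using bnd[of _ n] by (intro integrable_pmf_bounded[where B="Bd n + \<bar>c\<bar>"]) (smt (verit))
    fix x assume "x \<in> set_pmf (ext_run T \<xi> \<theta>1 n)"
    then show "measure_pmf.expectation (ext_step T x) F \<le> F x + c" by (rule step)
  qed
  also have "\<dots> = measure_pmf.expectation (ext_run T \<xi> \<theta>1 n) F + c"
    using bnd[of _ n] by (subst Bochner_Integration.integral_add) (auto intro!: integrable_pmf_bounded)
  also have "\<dots> \<le> real n * c + c" using Suc by simp
  finally show ?case by (simp add: algebra_simps)
qed

lemma E_ext_step: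
  fixes F :: "ext_state \<Rightarrow> real"
  assumes "\<And>y. y \<in> set_pmf (ext_step T x) \<Longrightarrow> \<bar>F y\<bar> \<le> B"
  shows "measure_pmf.expectation (ext_step T x) F =
         measure_pmf.expectation Jd (\<lambda>J. measure_pmf.expectation (samples P Rw (2^J) (fst (fst x))) (\<lambda>p. F (upd T x J p)))"
  using assms unfolding ext_step_def by (subst integral_bind_pmf_bounded[where B=B]) auto

definition xQ :: "ext_state \<Rightarrow> real" where "xQ x = fst (snd (snd (fst x)))"
definition xAR :: "ext_state \<Rightarrow> real" where "xAR x = fst (snd (snd x)) - fst (snd x)"

lemma xAR_upd: "xAR (upd T ((s, \<theta>, Q, acc), (Reg, A, Es)) J p) =
   (A - Reg) + vinner d (\<lambda>i. \<theta>s i - \<theta> i) (gbar S P Rw \<mu> d \<phi> \<gamma> \<theta>) - vinner d (\<lambda>i. \<theta>s i - \<theta> i) (mlmc_grad T d \<phi> \<gamma> \<theta> (fst p) J)"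
  by (simp add: upd_def xAR_def Let_def split_beta)

lemma xQ_upd: "xQ (upd T ((s, \<theta>, Q, acc), (Reg, A, Es)) J p) = Q + (vnorm d (mlmc_grad T d \<phi> \<gamma> \<theta> (fst p) J))^2"
  by (simp add: upd_def xQ_def Let_def split_beta)

lemma Inv_xAR: "Inv T t x \<Longrightarrow> \<bar>xAR x\<bar> \<le> real t * (2 * R * G) + real t * (2 * R * Gm T)"
  unfolding Inv_def xAR_def by (cases x) auto

lemma Inv_xQ: "Inv T t x \<Longrightarrow> \<bar>xQ x\<bar> \<le> real t * (Gm T)^2"
  unfolding Inv_def xQ_def by (cases x) auto

context
  fixes T :: nat and \<xi> \<theta>1
  assumes T1: "1 \<le> T" and xi: "set_pmf \<xi> \<subseteq> S" and th1: "\<theta>1 \<in> Kball d R"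
begin

lemma E_AR_step:
  assumes x: "x \<in> set_pmf (ext_run T \<xi> \<theta>1 n)"
  shows "measure_pmf.expectation (ext_step T x) xAR \<le> xAR x + 2 * R * 2 * G * (2 * tau) * 2 / T"
proof -
  obtain s \<theta> Q acc Reg A Es where xe: "x = ((s, \<theta>, Q, acc), (Reg, A, Es))" by (metis prod.collapse)
  have inv: "Inv T n x" by (rule Inv_run[OF xi th1 x])
  then have s: "s \<in> S" and thK: "\<theta> \<in> Kball d R" unfolding Inv_def xe by auto
  have thR: "vnorm d \<theta> \<le> R" using thK unfolding Kball_def by simp
  let ?a = "\<lambda>i. \<theta>s i - \<theta> i"
  let ?m = "gbar S P Rw \<mu> d \<phi> \<gamma> \<theta>"
  let ?X = "\<lambda>J p. vinner d ?a (mlmc_grad T d \<phi> \<gamma> \<theta> (fst p) J)"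
  have aB: "vnorm d ?a \<le> 2 * R" by (rule diff_bound[OF thK])
  have Xb: "\<bar>?X J p\<bar> \<le> 2 * R * Gm T" if "p \<in> set_pmf (samples P Rw (2^J) s)" for J p
  proof -
    have "\<bar>?X J p\<bar> \<le> vnorm d ?a * vnorm d (mlmc_grad T d \<phi> \<gamma> \<theta> (fst p) J)" by (rule vinner_cs)
    also have "\<dots> \<le> 2 * R * Gm T"
      using aB mlmc_bound[OF s that thR] vnorm_nonneg Rpos unfolding Gm_def by (intro mult_mono) auto
    finally show ?thesis .
  qed
  have Xint: "integrable (measure_pmf (samples P Rw (2^J) s)) (?X J)" for J
    using Xb by (intro integrable_pmf_bounded) blast
  have Yb: "\<bar>measure_pmf.expectation (samples P Rw (2^J) s) (?X J)\<bar> \<le> 2 * R * Gm T" for J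
  proof -
    have "\<bar>measure_pmf.expectation (samples P Rw (2^J) s) (?X J)\<bar> \<le> measure_pmf.expectation (samples P Rw (2^J) s) (\<lambda>p. \<bar>?X J p\<bar>)"
      by (rule integral_abs_bound)
    also have "\<dots> \<le> measure_pmf.expectation (samples P Rw (2^J) s) (\<lambda>p. 2 * R * Gm T)"
    proof (rule integral_mono_pmf)
      show "integrable (measure_pmf (samples P Rw (2^J) s)) (\<lambda>p. \<bar>?X J p\<bar>)" using Xint by simp
    qed (use Xb in auto)
    finally show ?thesis by simp
  qed
  have "measure_pmf.expectation (ext_step T x) xAR =
        measure_pmf.expectation Jd (\<lambda>J. measure_pmf.expectation (samples P Rw (2^J) s) (\<lambda>p. xAR (upd T x J p)))"
  proof -
    have "\<bar>xAR y\<bar> \<le> real (Suc n) * (2 * R * G) + real (Suc n) * (2 * R * Gm T)" if "y \<in> set_pmf (ext_step T x)" for y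
      using Inv_xAR[OF Inv_step[OF inv that]] .
    then have "measure_pmf.expectation (ext_step T x) xAR = measure_pmf.expectation Jd (\<lambda>J.
        measure_pmf.expectation (samples P Rw (2^J) (fst (fst x))) (\<lambda>p. xAR (upd T x J p)))"
      by (rule E_ext_step)
    then show ?thesis using xe by simp
  qed
  also have "\<dots> = measure_pmf.expectation Jd (\<lambda>J. (A - Reg + vinner d ?a ?m) - measure_pmf.expectation (samples P Rw (2^J) s) (?X J))"
  proof (rule integral_cong_pmf)
    fix J
    show "measure_pmf.expectation (samples P Rw (2^J) s) (\<lambda>p. xAR (upd T x J p)) =
          (A - Reg + vinner d ?a ?m) - measure_pmf.expectation (samples P Rw (2^J) s) (?X J)"
      unfolding xe xAR_upd using Xint[of J] by simp
  qed
  also have "\<dots> = (A - Reg + vinner d ?a ?m) - measure_pmf.expectation Jd (\<lambda>J. measure_pmf.expectation (samples P Rw (2^J) s) (?X J))"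
  proof -
    have "integrable (measure_pmf Jd) (\<lambda>J. measure_pmf.expectation (samples P Rw (2^J) s) (?X J))"
      using Yb by (intro integrable_pmf_bounded) blast
    then show ?thesis by simp
  qed
  also have "\<dots> \<le> (A - Reg) + vnorm d ?a * 2 * G * (2 * tau) * 2 / T"
    using step_bias[OF s thR T1, of ?a] by simp
  also have "vnorm d ?a * 2 * G * (2 * tau) * 2 / T \<le> 2 * R * 2 * G * (2 * tau) * 2 / T"
    using aB G_pos by (intro divide_right_mono mult_right_mono) auto
  finally show ?thesis unfolding xe xAR_def by simp
qed

lemma E_Q_step:
  assumes x: "x \<in> set_pmf (ext_run T \<xi> \<theta>1 n)"
  shows "measure_pmf.expectation (ext_step T x) xQ \<le> xQ x + (2 * G^2 + 192 * G^2 * tau * Lg T)"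
proof -
  obtain s \<theta> Q acc Reg A Es where xe: "x = ((s, \<theta>, Q, acc), (Reg, A, Es))" by (metis prod.collapse)
  have inv: "Inv T n x" by (rule Inv_run[OF xi th1 x])
  then have s: "s \<in> S" and thK: "\<theta> \<in> Kball d R" unfolding Inv_def xe by auto
  have thR: "vnorm d \<theta> \<le> R" using thK unfolding Kball_def by simp
  let ?X = "\<lambda>J p. (vnorm d (mlmc_grad T d \<phi> \<gamma> \<theta> (fst p) J))^2"
  have Xb: "\<bar>?X J p\<bar> \<le> (Gm T)^2" if "p \<in> set_pmf (samples P Rw (2^J) s)" for J p
    using mlmc_bound[OF s that thR] vnorm_nonneg unfolding Gm_def by (simp add: power_mono)
  have Xint: "integrable (measure_pmf (samples P Rw (2^J) s)) (?X J)" for J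
    using Xb by (intro integrable_pmf_bounded) blast
  have Yb: "\<bar>measure_pmf.expectation (samples P Rw (2^J) s) (?X J)\<bar> \<le> (Gm T)^2" for J
  proof -
    have "\<bar>measure_pmf.expectation (samples P Rw (2^J) s) (?X J)\<bar> \<le> measure_pmf.expectation (samples P Rw (2^J) s) (\<lambda>p. \<bar>?X J p\<bar>)"
      by (rule integral_abs_bound)
    also have "\<dots> \<le> measure_pmf.expectation (samples P Rw (2^J) s) (\<lambda>p. (Gm T)^2)"
    proof (rule integral_mono_pmf)
      show "integrable (measure_pmf (samples P Rw (2^J) s)) (\<lambda>p. \<bar>?X J p\<bar>)" using Xint by simp
    qed (use Xb in auto)
    finally show ?thesis by simp
  qed
  have "measure_pmf.expectation (ext_step T x) xQ =
        measure_pmf.expectation Jd (\<lambda>J. measure_pmf.expectation (samples P Rw (2^J) s) (\<lambda>p. xQ (upd T x J p)))"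
  proof -
    have "\<bar>xQ y\<bar> \<le> real (Suc n) * (Gm T)^2" if "y \<in> set_pmf (ext_step T x)" for y
      using Inv_xQ[OF Inv_step[OF inv that]] .
    then have "measure_pmf.expectation (ext_step T x) xQ = measure_pmf.expectation Jd (\<lambda>J.
        measure_pmf.expectation (samples P Rw (2^J) (fst (fst x))) (\<lambda>p. xQ (upd T x J p)))"
      by (rule E_ext_step)
    then show ?thesis using xe by simp
  qed
  also have "\<dots> = measure_pmf.expectation Jd (\<lambda>J. Q + measure_pmf.expectation (samples P Rw (2^J) s) (?X J))"
  proof (rule integral_cong_pmf)
    fix J
    show "measure_pmf.expectation (samples P Rw (2^J) s) (\<lambda>p. xQ (upd T x J p)) =
          Q + measure_pmf.expectation (samples P Rw (2^J) s) (?X J)"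
      unfolding xe xQ_upd using Xint[of J] by simp
  qed
  also have "\<dots> = Q + measure_pmf.expectation Jd (\<lambda>J. measure_pmf.expectation (samples P Rw (2^J) s) (?X J))"
  proof -
    have "integrable (measure_pmf Jd) (\<lambda>J. measure_pmf.expectation (samples P Rw (2^J) s) (?X J))"
      using Yb by (intro integrable_pmf_bounded) blast
    then show ?thesis by simp
  qed
  also have "\<dots> \<le> Q + (2 * G^2 + 192 * G^2 * tau * Lg T)"
    using step_sq[OF s thR T1] by simp
  finally show ?thesis unfolding xe xQ_def by simp
qed

lemma E_AR_run: "measure_pmf.expectation (ext_run T \<xi> \<theta>1 n) xAR \<le> real n * (2 * R * 2 * G * (2 * tau) * 2 / T)"
proof (rule run_induct_bound)
  show "xAR x = 0" if "x \<in> set_pmf (ext_run T \<xi> \<theta>1 0)" for x using that by (auto simp: xAR_def)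
  show "\<bar>xAR x\<bar> \<le> real n * (2 * R * G) + real n * (2 * R * Gm T)" if "x \<in> set_pmf (ext_run T \<xi> \<theta>1 n)" for n x
    by (rule Inv_xAR[OF Inv_run[OF xi th1 that]])
  show "measure_pmf.expectation (ext_step T x) xAR \<le> xAR x + 2 * R * 2 * G * (2 * tau) * 2 / T"
    if "x \<in> set_pmf (ext_run T \<xi> \<theta>1 n)" for n x by (rule E_AR_step[OF that])
qed

lemma E_Q_run: "measure_pmf.expectation (ext_run T \<xi> \<theta>1 n) xQ \<le> real n * (2 * G^2 + 192 * G^2 * tau * Lg T)"
proof (rule run_induct_bound)
  show "xQ x = 0" if "x \<in> set_pmf (ext_run T \<xi> \<theta>1 0)" for x using that by (auto simp: xQ_def)
  show "\<bar>xQ x\<bar> \<le> real n * (Gm T)^2" if "x \<in> set_pmf (ext_run T \<xi> \<theta>1 n)" for n x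
    by (rule Inv_xQ[OF Inv_run[OF xi th1 that]])
  show "measure_pmf.expectation (ext_step T x) xQ \<le> xQ x + (2 * G^2 + 192 * G^2 * tau * Lg T)"
    if "x \<in> set_pmf (ext_run T \<xi> \<theta>1 n)" for n x by (rule E_Q_step[OF that])
qed

end

end


lemma final_arith:
  fixes R G \<gamma> T \<tau> L c0 V \<beta> E :: real
  assumes R: "0 < R" and G: "2 * R \<le> G" and gam: "0 \<le> \<gamma>" "\<gamma> < 1" and T: "1 \<le> T" and tau: "1 \<le> \<tau>"
    and L: "0 \<le> L" "L \<le> 2 * ln T" and c0: "c0 = 2 * sqrt 2 * R"
    and V: "V = 2 * G^2 + 192 * G^2 * \<tau> * L" and \<beta>: "\<beta> = 2 * R * 2 * G * (2 * \<tau>) * 2 / T"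
    and E1: "E \<le> 4 * R^2" and E2: "E \<le> (T * \<beta> + c0 * sqrt (T * V)) / (T * (1 - \<gamma>))"
  shows "E \<le> 100 * (1 + ln T + ln \<tau>) ^ 1 * (G * R * sqrt \<tau> / ((1 - \<gamma>) * sqrt T))"
proof -
  define \<omega> where "\<omega> = 1 + ln T + ln \<tau>"
  define K where "K = G * R * sqrt \<tau> / ((1 - \<gamma>) * sqrt T)"
  have lnT: "0 \<le> ln T" using T by simp
  have lntau: "0 \<le> ln \<tau>" using tau by simp
  have om: "1 \<le> \<omega>" unfolding \<omega>_def using lnT lntau by simp
  have Gp: "0 < G" using R G by simp
  have g1: "0 < 1 - \<gamma>" using gam by simp
  have sT: "0 < sqrt T" using T by simp
  have st: "1 \<le> sqrt \<tau>" using tau by simp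
  have Kp: "0 < K" unfolding K_def using Gp R st sT g1 by (simp add: divide_pos_pos)
  have goal: "E \<le> 100 * \<omega> * K" 
  proof (cases "T < \<tau>")
    case True
    have "sqrt T \<le> sqrt \<tau>" using True by simp
    then have r1: "1 \<le> sqrt \<tau> / sqrt T" using sT by simp
    have r2: "1 \<le> 1 / (1 - \<gamma>)" using gam g1 by (simp add: field_simps)
    have "K = G * R * (sqrt \<tau> / sqrt T) * (1 / (1 - \<gamma>))" unfolding K_def by (simp add: field_simps)
    also have "\<dots> \<ge> G * R * 1 * 1"
      using r1 r2 Gp R sT st by (intro mult_mono) (auto simp: mult_nonneg_nonneg)
    finally have KG: "G * R \<le> K" by simp
    have "4 * R^2 \<le> 2 * (G * R)" using G R by (simp add: power2_eq_square mult_right_mono)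
    also have "\<dots> \<le> 100 * (G * R)" using Gp R by simp
    also have "\<dots> \<le> 100 * K" using KG by simp
    also have "\<dots> \<le> 100 * \<omega> * K" using om Kp by simp
    finally have "4 * R^2 \<le> 100 * \<omega> * K" .
    then show ?thesis using E1 by linarith
  next
    case False
    then have tT: "\<tau> \<le> T" by simp
    have q: "sqrt \<tau> / sqrt T \<le> 1" using tT sT by simp
    have q0: "0 \<le> sqrt \<tau> / sqrt T" using tau T by simp
    have tauT: "\<tau> / T \<le> sqrt \<tau> / sqrt T"
    proof -
      have "\<tau> / T = (sqrt \<tau> / sqrt T)^2" using tau T by (simp add: power_divide)
      also have "\<dots> \<le> (sqrt \<tau> / sqrt T) * 1" unfolding power2_eq_square using q q0 by (intro mult_left_mono) auto
      finally show ?thesis by simp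
    qed
    have term1: "\<beta> / (1 - \<gamma>) \<le> 16 * K"
    proof -
      have "\<beta> / (1 - \<gamma>) = 16 * (G * R) * (\<tau> / T) / (1 - \<gamma>)" unfolding \<beta> by (simp add: field_simps)
      also have "\<dots> \<le> 16 * (G * R) * (sqrt \<tau> / sqrt T) / (1 - \<gamma>)"
        using tauT Gp R g1 by (intro divide_right_mono mult_left_mono) auto
      also have "\<dots> = 16 * K" unfolding K_def by (simp add: field_simps)
      finally show ?thesis .
    qed
    have Vb: "V \<le> 400 * G^2 * \<tau> * \<omega>^2"
    proof -
      have LT: "L \<le> 2 * \<omega>" using L lntau unfolding \<omega>_def by simp
      have o2: "\<omega> \<le> \<omega>^2" using om by (simp add: power2_eq_square)
      define X where "X = G^2 * \<tau> * \<omega>^2"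
      have X0: "0 \<le> X" unfolding X_def using tau by simp
      have a: "2 * G^2 \<le> 2 * X"
      proof -
        have "1 \<le> \<tau> * \<omega>^2" using tau om by (metis mult_mono' one_le_power order.trans mult_1_right zero_le_one le_numeral_extra(1) one_le_numeral power_one)
        then have "G^2 * 1 \<le> G^2 * (\<tau> * \<omega>^2)" by (intro mult_left_mono) auto
        then show ?thesis unfolding X_def by (simp add: mult.assoc)
      qed
      have b: "192 * G^2 * \<tau> * L \<le> 384 * X"
      proof -
        have "L \<le> 2 * \<omega>^2" using LT o2 by simp
        then have "(192 * G^2 * \<tau>) * L \<le> (192 * G^2 * \<tau>) * (2 * \<omega>^2)" using tau by (intro mult_left_mono) auto
        then show ?thesis unfolding X_def by (simp add: algebra_simps)
      qed
      have "V \<le> 400 * X" unfolding V using a b X0 by linarith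
      then show ?thesis unfolding X_def by (simp add: algebra_simps)
    qed
    have sV: "sqrt V \<le> 20 * G * sqrt \<tau> * \<omega>"
    proof -
      have "sqrt V \<le> sqrt (400 * G^2 * \<tau> * \<omega>^2)" using Vb by simp
      also have "\<dots> = 20 * G * sqrt \<tau> * \<omega>" using Gp om tau by (simp add: real_sqrt_mult)
      finally show ?thesis .
    qed
    have c0b: "c0 \<le> 3 * R"
    proof -
      have "sqrt 2 \<le> (3/2::real)" by (rule real_le_lsqrt) (auto simp: power2_eq_square)
      then show ?thesis unfolding c0 using R by simp
    qed
    have term2: "c0 * sqrt (T * V) / (T * (1 - \<gamma>)) \<le> 60 * \<omega> * K"
    proof -
      have V0: "0 \<le> V" unfolding V using L tau by simp
      have e1: "sqrt (T * V) = sqrt T * sqrt V" by (simp add: real_sqrt_mult)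
      have e2: "T * (1 - \<gamma>) = sqrt T * (sqrt T * (1 - \<gamma>))" using T by (simp add: mult.assoc[symmetric])
      have "c0 * sqrt (T * V) / (T * (1 - \<gamma>)) = (sqrt T * (c0 * sqrt V)) / (sqrt T * (sqrt T * (1 - \<gamma>)))"
        unfolding e1 by (subst e2) (simp only: mult_ac)
      also have "\<dots> = c0 * sqrt V / (sqrt T * (1 - \<gamma>))"
        using sT by (rule mult_divide_mult_cancel_left[OF less_imp_neq[symmetric]])
      also have "\<dots> \<le> (3 * R) * (20 * G * sqrt \<tau> * \<omega>) / (sqrt T * (1 - \<gamma>))"
        using c0b sV g1 sT R V0 c0 by (intro divide_right_mono mult_mono) auto
      also have "\<dots> = 60 * \<omega> * K" unfolding K_def by (simp add: field_simps)
      finally show ?thesis .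
    qed
    have "E \<le> \<beta> / (1 - \<gamma>) + c0 * sqrt (T * V) / (T * (1 - \<gamma>))"
    proof -
      have "(T * \<beta> + c0 * sqrt (T * V)) / (T * (1 - \<gamma>)) = T * \<beta> / (T * (1 - \<gamma>)) + c0 * sqrt (T * V) / (T * (1 - \<gamma>))"
        by (rule add_divide_distrib)
      moreover have "T * \<beta> / (T * (1 - \<gamma>)) = \<beta> / (1 - \<gamma>)" using T by simp
      ultimately show ?thesis using E2 by simp
    qed
    also have "\<dots> \<le> 16 * K + 60 * \<omega> * K" using term1 term2 by simp
    also have "\<dots> \<le> 100 * \<omega> * K" using om Kp by (simp add: algebra_simps)
    finally show ?thesis .
  qed
  then show ?thesis unfolding \<omega>_def K_def by simp
qed

lemma E_sqrt_le:
  fixes f :: "'a \<Rightarrow> real"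
  assumes f0: "\<And>x. x \<in> set_pmf M \<Longrightarrow> 0 \<le> f x" and fB: "\<And>x. x \<in> set_pmf M \<Longrightarrow> f x \<le> B"
  shows "measure_pmf.expectation M (\<lambda>x. sqrt (f x)) \<le> sqrt (measure_pmf.expectation M f)"
proof -
  define m where "m = measure_pmf.expectation M (\<lambda>x. sqrt (f x))"
  have if1: "integrable (measure_pmf M) f" using f0 fB by (intro integrable_pmf_bounded[where B=B]) fastforce
  have if2: "integrable (measure_pmf M) (\<lambda>x. sqrt (f x))"
    using f0 fB by (intro integrable_pmf_bounded[where B="sqrt B"]) (auto simp: real_sqrt_le_iff)
  have "0 \<le> measure_pmf.expectation M (\<lambda>x. (sqrt (f x) - m)^2)" by simp
  also have "measure_pmf.expectation M (\<lambda>x. (sqrt (f x) - m)^2) =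
             measure_pmf.expectation M (\<lambda>x. f x - 2 * m * sqrt (f x) + m^2)"
    by (rule integral_cong_pmf) (use f0 in \<open>simp add: power2_diff\<close>)
  also have "\<dots> = measure_pmf.expectation M f - 2 * m * m + m^2"
    using if1 if2 unfolding m_def by simp
  finally have "m^2 \<le> measure_pmf.expectation M f" by (simp add: power2_eq_square)
  then show ?thesis unfolding m_def by (rule real_le_rsqrt)
qed

context tdl
begin

context
  fixes T :: nat and \<xi> \<theta>1
  assumes T1: "1 \<le> T" and xi: "set_pmf \<xi> \<subseteq> S" and th1: "\<theta>1 \<in> Kball d R"
begin

lemma c0_pos: "0 < c0" unfolding c0_def using Rpos by simp

lemma main_bounds:
  shows "measure_pmf.expectation (avg_iterate P Rw d \<phi> \<gamma> R T \<xi> \<theta>1) (\<lambda>\<theta>. errM S \<mu> d \<phi> \<theta>s \<theta>) \<le> 4 * R^2"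
    and "measure_pmf.expectation (avg_iterate P Rw d \<phi> \<gamma> R T \<xi> \<theta>1) (\<lambda>\<theta>. errM S \<mu> d \<phi> \<theta>s \<theta>)
         \<le> (real T * (2 * R * 2 * G * (2 * tau) * 2 / T) + c0 * sqrt (real T * (2 * G^2 + 192 * G^2 * tau * Lg T)))
            / (real T * (1 - \<gamma>))"
proof -
  let ?M = "ext_run T \<xi> \<theta>1 T"
  define ef where "ef x = errM S \<mu> d \<phi> \<theta>s (\<lambda>i. snd (snd (snd (fst x))) i / real T)" for x :: ext_state
  have Tp: "0 < real T" using T1 by simp
  have g1: "0 < 1 - \<gamma>" using gam by simp
  have eqE: "measure_pmf.expectation (avg_iterate P Rw d \<phi> \<gamma> R T \<xi> \<theta>1) (\<lambda>\<theta>. errM S \<mu> d \<phi> \<theta>s \<theta>) =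
             measure_pmf.expectation ?M ef"
    unfolding avg_iterate_def fst_ext_run[symmetric] ef_def by (simp add: split_beta)
  have pw: "ef x \<le> 4 * R^2 \<and> 0 \<le> ef x \<and> ef x \<le> (xAR x + c0 * sqrt (xQ x)) / (real T * (1 - \<gamma>))
            \<and> 0 \<le> xQ x \<and> xQ x \<le> real T * (Gm T)^2 \<and> \<bar>xAR x\<bar> \<le> real T * (2 * R * G) + real T * (2 * R * Gm T)"
    if x: "x \<in> set_pmf ?M" for x
  proof -
    obtain s \<theta> Q acc Reg A Es where xe: "x = ((s, \<theta>, Q, acc), (Reg, A, Es))" by (metis prod.collapse)
    have inv: "Inv T T x" by (rule Inv_run[OF xi th1 x])
    then have RegI: "Reg + (vnorm d (\<lambda>i. \<theta> i - \<theta>s i))^2 * sqrt Q / c0 \<le> c0 * sqrt Q"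
      and EsA: "(1 - \<gamma>) * Es \<le> A" and EsB: "Es \<le> real T * (4 * R^2)"
      and accI: "real T * errM S \<mu> d \<phi> \<theta>s (\<lambda>i. acc i / real T) \<le> Es" and Q0: "0 \<le> Q"
      unfolding Inv_def xe by auto
    have efe: "ef x = errM S \<mu> d \<phi> \<theta>s (\<lambda>i. acc i / real T)" unfolding ef_def xe by simp
    have e0: "0 \<le> ef x" unfolding efe errM_def by (intro sum_nonneg) simp
    have "real T * ef x \<le> real T * (4 * R^2)" using accI EsB efe by simp
    then have e1: "ef x \<le> 4 * R^2" using Tp by simp
    have "0 \<le> (vnorm d (\<lambda>i. \<theta> i - \<theta>s i))^2 * sqrt Q / c0" using c0_pos Q0 by simp
    then have Reg: "Reg \<le> c0 * sqrt Q" using RegI by linarith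
    have "(1 - \<gamma>) * (real T * ef x) \<le> (1 - \<gamma>) * Es" using accI efe g1 by (intro mult_left_mono) auto
    then have "real T * (1 - \<gamma>) * ef x \<le> (1 - \<gamma>) * Es" by (simp add: mult_ac)
    also have "\<dots> \<le> A" by (rule EsA)
    also have "A = xAR x + Reg" unfolding xe xAR_def by simp
    also have "\<dots> \<le> xAR x + c0 * sqrt (xQ x)" using Reg unfolding xe xQ_def by simp
    finally have "real T * (1 - \<gamma>) * ef x \<le> xAR x + c0 * sqrt (xQ x)" .
    then have e2: "ef x \<le> (xAR x + c0 * sqrt (xQ x)) / (real T * (1 - \<gamma>))"
      using Tp g1 by (simp add: field_simps)
    show ?thesis using e0 e1 e2 Inv_xQ[OF inv] Inv_xAR[OF inv] Q0 unfolding xe xQ_def by auto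
  qed
  have int_ef: "integrable (measure_pmf ?M) ef"
  proof (rule integrable_pmf_bounded[where B="4 * R^2"])
    fix x assume "x \<in> set_pmf ?M"
    then show "\<bar>ef x\<bar> \<le> 4 * R^2" using pw[of x] by (simp add: abs_le_iff)
  qed
  have p1: "ef x \<le> 4 * R^2" if "x \<in> set_pmf ?M" for x using pw[OF that] by blast
  have p2: "ef x \<le> (xAR x + c0 * sqrt (xQ x)) / (real T * (1 - \<gamma>))" if "x \<in> set_pmf ?M" for x
    using pw[OF that] by blast
  have p3: "0 \<le> xQ x" "xQ x \<le> real T * (Gm T)^2" if "x \<in> set_pmf ?M" for x using pw[OF that] by blast+
  have p4: "\<bar>xAR x\<bar> \<le> real T * (2 * R * G) + real T * (2 * R * Gm T)" if "x \<in> set_pmf ?M" for x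
    using pw[OF that] by blast
  have "measure_pmf.expectation ?M ef \<le> measure_pmf.expectation ?M (\<lambda>_. 4 * R^2)"
    by (rule integral_mono_pmf[OF int_ef]) (use p1 in auto)
  then show "measure_pmf.expectation (avg_iterate P Rw d \<phi> \<gamma> R T \<xi> \<theta>1) (\<lambda>\<theta>. errM S \<mu> d \<phi> \<theta>s \<theta>) \<le> 4 * R^2"
    unfolding eqE by simp
  have intAR: "integrable (measure_pmf ?M) xAR"
    by (rule integrable_pmf_bounded[where B="real T * (2 * R * G) + real T * (2 * R * Gm T)"]) (rule p4)
  have intsQ: "integrable (measure_pmf ?M) (\<lambda>x. sqrt (xQ x))"
  proof (rule integrable_pmf_bounded[where B="sqrt (real T * (Gm T)^2)"])
    fix x assume "x \<in> set_pmf ?M"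
    then show "\<bar>sqrt (xQ x)\<bar> \<le> sqrt (real T * (Gm T)^2)" using p3[of x] by simp
  qed
  have intR: "integrable (measure_pmf ?M) (\<lambda>x. (xAR x + c0 * sqrt (xQ x)) / (real T * (1 - \<gamma>)))"
    using intAR intsQ by simp
  have "measure_pmf.expectation ?M ef \<le> measure_pmf.expectation ?M (\<lambda>x. (xAR x + c0 * sqrt (xQ x)) / (real T * (1 - \<gamma>)))"
    by (rule integral_mono_pmf[OF int_ef intR]) (rule p2)
  also have "\<dots> = (measure_pmf.expectation ?M xAR + c0 * measure_pmf.expectation ?M (\<lambda>x. sqrt (xQ x))) / (real T * (1 - \<gamma>))"
    using intAR intsQ by simp
  also have "\<dots> \<le> (real T * (2 * R * 2 * G * (2 * tau) * 2 / T) + c0 * sqrt (real T * (2 * G^2 + 192 * G^2 * tau * Lg T)))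
            / (real T * (1 - \<gamma>))"
  proof (rule divide_right_mono[OF add_mono])
    show "measure_pmf.expectation ?M xAR \<le> real T * (2 * R * 2 * G * (2 * tau) * 2 / T)"
      by (rule E_AR_run[OF T1 xi th1])
    have "measure_pmf.expectation ?M (\<lambda>x. sqrt (xQ x)) \<le> sqrt (measure_pmf.expectation ?M xQ)"
      by (rule E_sqrt_le[where B="real T * (Gm T)^2"]) (use p3 in auto)
    also have "\<dots> \<le> sqrt (real T * (2 * G^2 + 192 * G^2 * tau * Lg T))"
      using E_Q_run[OF T1 xi th1, of T] by simp
    finally show "c0 * measure_pmf.expectation ?M (\<lambda>x. sqrt (xQ x)) \<le> c0 * sqrt (real T * (2 * G^2 + 192 * G^2 * tau * Lg T))"
      using c0_pos by (intro mult_left_mono) auto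
    show "0 \<le> real T * (1 - \<gamma>)" using Tp g1 by simp
  qed
  finally show "measure_pmf.expectation (avg_iterate P Rw d \<phi> \<gamma> R T \<xi> \<theta>1) (\<lambda>\<theta>. errM S \<mu> d \<phi> \<theta>s \<theta>)
         \<le> (real T * (2 * R * 2 * G * (2 * tau) * 2 / T) + c0 * sqrt (real T * (2 * G^2 + 192 * G^2 * tau * Lg T)))
            / (real T * (1 - \<gamma>))" unfolding eqE .
qed

lemma Lg_ln: "real (Lg T) \<le> 2 * ln (real T)"
proof -
  have "(2::nat)^(Lg T) \<le> T" by (rule Lg_props(1)[OF T1])
  then have "real ((2::nat)^(Lg T)) \<le> real T" by (simp only: of_nat_le_iff)
  then have "(2::real)^(Lg T) \<le> real T" by simp
  then have "ln ((2::real)^(Lg T)) \<le> ln (real T)" using T1 by (subst ln_le_cancel_iff) auto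
  then have a: "real (Lg T) * ln 2 \<le> ln (real T)" by (simp add: ln_realpow)
  have "real (Lg T) * (2/3) \<le> real (Lg T) * ln 2" using ln2_ge_two_thirds by (intro mult_left_mono) auto
  then have "real (Lg T) * (2/3) \<le> ln (real T)" using a by linarith
  moreover have "0 \<le> ln (real T)" using T1 by simp
  ultimately show ?thesis by linarith
qed

lemma final_in_locale:
  "measure_pmf.expectation (avg_iterate P Rw d \<phi> \<gamma> R T \<xi> \<theta>1) (\<lambda>\<theta>. errM S \<mu> d \<phi> \<theta>s \<theta>)
    \<le> 100 * (1 + ln (real T) + ln (real (tau_mix S P Rw \<mu>))) ^ 1 *
       ((rmax + 2 * R) * R * sqrt (real (tau_mix S P Rw \<mu>)) / ((1 - \<gamma>) * sqrt (real T)))"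
proof -
  have T1r: "1 \<le> real T" using T1 by simp
  have taur: "1 \<le> real tau" using tau_pos by simp
  have E2: "measure_pmf.expectation (avg_iterate P Rw d \<phi> \<gamma> R T \<xi> \<theta>1) (\<lambda>\<theta>. errM S \<mu> d \<phi> \<theta>s \<theta>)
         \<le> (real T * (2 * R * 2 * G * (2 * real tau) * 2 / real T) + c0 * sqrt (real T * (2 * G^2 + 192 * G^2 * real tau * real (Lg T))))
            / (real T * (1 - \<gamma>))"
    using main_bounds(2) by simp
  have "measure_pmf.expectation (avg_iterate P Rw d \<phi> \<gamma> R T \<xi> \<theta>1) (\<lambda>\<theta>. errM S \<mu> d \<phi> \<theta>s \<theta>)
    \<le> 100 * (1 + ln (real T) + ln (real tau)) ^ 1 * (G * R * sqrt (real tau) / ((1 - \<gamma>) * sqrt (real T)))"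
    by (rule final_arith[OF Rpos _ gam T1r taur _ Lg_ln c0_def refl refl main_bounds(1) E2])
       (use rmax_nonneg in auto)
  then show ?thesis unfolding tau_def by simp
qed

end

end

theorem theorem5p2:
  shows "\<exists>(c::real) (k::nat). \<forall>S P Rw rmax \<gamma> \<mu> d \<phi> R \<theta>s (\<xi>::nat pmf) \<theta>1 (T::nat).
     td_setting S P Rw rmax \<gamma> \<mu> d \<phi> R \<theta>s \<and> set_pmf \<xi> \<subseteq> S \<and> \<theta>1 \<in> Kball d R \<and> 1 \<le> T \<longrightarrow>
     measure_pmf.expectation (avg_iterate P Rw d \<phi> \<gamma> R T \<xi> \<theta>1) (\<lambda>\<theta>. errM S \<mu> d \<phi> \<theta>s \<theta>)
       \<le> c * (1 + ln (real T) + ln (real (tau_mix S P Rw \<mu>))) ^ k *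
          ((rmax + 2 * R) * R * sqrt (real (tau_mix S P Rw \<mu>)) / ((1 - \<gamma>) * sqrt (real T)))"
proof (intro exI[of _ "100::real"] exI[of _ "1::nat"] allI impI)
  fix S P Rw rmax \<gamma> \<mu> d \<phi> R \<theta>s and \<xi> :: "nat pmf" and \<theta>1 and T :: nat
  assume H: "td_setting S P Rw rmax \<gamma> \<mu> d \<phi> R \<theta>s \<and> set_pmf \<xi> \<subseteq> S \<and> \<theta>1 \<in> Kball d R \<and> 1 \<le> T"
  interpret tdl S P Rw rmax \<gamma> \<mu> d \<phi> R \<theta>s using H by unfold_locales simp
  show "measure_pmf.expectation (avg_iterate P Rw d \<phi> \<gamma> R T \<xi> \<theta>1) (\<lambda>\<theta>. errM S \<mu> d \<phi> \<theta>s \<theta>)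
       \<le> 100 * (1 + ln (real T) + ln (real (tau_mix S P Rw \<mu>))) ^ 1 *
          ((rmax + 2 * R) * R * sqrt (real (tau_mix S P Rw \<mu>)) / ((1 - \<gamma>) * sqrt (real T)))"
    using final_in_locale[of T \<xi> \<theta>1] H by blast
qed


end
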